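(* Let $\mathbb{k}$ be any field and $\mathfrak{h}$ a right Leibniz algebra over $\mathbb{k}$ of finite dimension $n$ with ordered basis $\mathbf{b}=(y_1,\ldots,y_n)$ and structure constants $C^i_{jk}$ given by $[y_j,y_k]=\sum_iC^i_{jk}y_i$. Let $\mathcal{G}^i_j,\bar{\mathcal{G}}^i_j$ be the generators of $\mathcal{O}(\mathrm{Aut}(\mathfrak{h}))$ relative to $\mathbf{b}$, and let $\tilde y$ denote the image of $y\in\mathfrak{h}$ in $\mathfrak{h}_{Lie}$. Then there exists a unique Hopf pairing $\langle-,-\rangle\colon U(\mathfrak{h}_{Lie})\otimes\mathcal{O}(\mathrm{Aut}(\mathfrak{h}))\to\mathbb{k}$ such that $\langle\tilde y_k,\mathcal{G}^i_j\rangle=-C^i_{jk}$ for all $i,j,k\in\{1,\ldots,n\}$. This Hopf pairing does not depend on the choice of basis $\mathbf{b}$.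
   Context: A right Leibniz algebra is a vector space $\mathfrak{h}$ with a bilinear bracket satisfying $[[x,y],z]=[[x,z],y]+[x,[y,z]]$. $\mathfrak{h}_{Lie}$ is the quotient of $\mathfrak{h}$ by the two-sided ideal generated by all $[x,x]$; $U(\mathfrak{h}_{Lie})$ is its universal enveloping algebra with its standard Hopf algebra structure. $\mathcal{O}(\mathrm{Aut}(\mathfrak{h}))$ is the coordinate Hopf algebra of the affine algebraic group of automorphisms of $\mathfrak{h}$; relative to $\mathbf{b}$ it is the commutative algebra generated by $\mathcal{G}^i_j,\bar{\mathcal{G}}^i_j$ ($\mathcal{G}^i_j$ gives the $(i,j)$ matrix entry of an automorphism $\psi$ in basis $\mathbf{b}$, $\psi(y_j)=\sum_i\mathcal{G}^i_j(\psi)y_i$; $\bar{\mathcal{G}}^i_j$ that of $\psi^{-1}$) with relations $\sum_{l,m}C^k_{lm}\mathcal{G}^l_i\mathcal{G}^m_j=\sum_r\mathcal{G}^k_rC^r_{ij}$, $\sum_k\mathcal{G}^i_k\bar{\mathcal{G}}^k_j=\delta^i_j=\sum_k\bar{\mathcal{G}}^i_k\mathcal{G}^k_j$, and Hopf structure $\Delta(\mathcal{G}^i_j)=\sum_k\mathcal{G}^i_k\otimes\mathcal{G}^k_j$, $\Delta(\bar{\mathcal{G}}^i_j)=\sum_k\bar{\mathcal{G}}^k_j\otimes\bar{\mathcal{G}}^i_k$, $\epsilon(\mathcal{G}^i_j)=\epsilon(\bar{\mathcal{G}}^i_j)=\delta^i_j$, $S(\mathcal{G}^i_j)=\bar{\mathcal{G}}^i_j$,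 $S(\bar{\mathcal{G}}^i_j)=\mathcal{G}^i_j$. A Hopf pairing $B\otimes H\to\mathbb{k}$ of bialgebras is a bilinear form (not required nondegenerate) with $\langle\Delta_B(b),h\otimes k\rangle=\langle b,hk\rangle$, $\langle b,1\rangle=\epsilon_B(b)$, $\langle b\otimes c,\Delta_H(h)\rangle=\langle bc,h\rangle$, $\langle 1,h\rangle=\epsilon_H(h)$, with componentwise pairing of tensor products. *)

theory Defs
  imports Main "HOL-Library.Poly_Mapping" "HOL-Library.Product_Plus"
begin

text \<open>The Leibniz algebra h has basis y_0,...,y_(n-1) (indices shifted to start at 0).
  Vectors of h are coordinate functions nat => 'k (only coordinates < n matter).
  C i j k is the structure constant C^i_jk, i.e. [y_j, y_k] = sum_i C i j k y_i.\<close>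

definition brk :: "nat \<Rightarrow> (nat \<Rightarrow> nat \<Rightarrow> nat \<Rightarrow> 'k::field) \<Rightarrow> (nat \<Rightarrow> 'k) \<Rightarrow> (nat \<Rightarrow> 'k) \<Rightarrow> (nat \<Rightarrow> 'k)"
  where "brk n C x y = (\<lambda>i. if i < n then (\<Sum>j<n. \<Sum>k<n. x j * y k * C i j k) else 0)"

definition right_leibniz :: "nat \<Rightarrow> (nat \<Rightarrow> nat \<Rightarrow> nat \<Rightarrow> 'k::field) \<Rightarrow> bool" where
  "right_leibniz n C \<longleftrightarrow>
     (\<forall>x y z i. brk n C (brk n C x y) z i = brk n C (brk n C x z) y i + brk n C x (brk n C y z) i)"

text \<open>The two-sided ideal of h generated by all squares [x,x] (its quotient is h_Lie).\<close>
inductive_set leib_ideal :: "nat \<Rightarrow> (nat \<Rightarrow> nat \<Rightarrow> nat \<Rightarrow> 'k::field) \<Rightarrow> (nat \<Rightarrow> 'k) set"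
  for n C where
  sq: "brk n C x x \<in> leib_ideal n C"
| zero: "(\<lambda>_. 0) \<in> leib_ideal n C"
| add: "v \<in> leib_ideal n C \<Longrightarrow> w \<in> leib_ideal n C \<Longrightarrow> (\<lambda>i. v i + w i) \<in> leib_ideal n C"
| smult: "v \<in> leib_ideal n C \<Longrightarrow> (\<lambda>i. c * v i) \<in> leib_ideal n C"
| brk_left: "v \<in> leib_ideal n C \<Longrightarrow> brk n C x v \<in> leib_ideal n C"
| brk_right: "v \<in> leib_ideal n C \<Longrightarrow> brk n C v x \<in> leib_ideal n C"

text \<open>Elements of the tensor algebra T(h) = free associative algebra on y_0..y_(n-1):
  finitely supported linear combinations of words (letter k stands for y_k).\<close>
type_synonym 'k tens = "nat list \<Rightarrow>\<^sub>0 'k"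

definition tens_carrier :: "nat \<Rightarrow> 'k::field tens set" where
  "tens_carrier n = {u. \<forall>w \<in> Poly_Mapping.keys u. set w \<subseteq> {..<n}}"

definition tword :: "nat list \<Rightarrow> 'k::field tens" where
  "tword w = Poly_Mapping.single w 1"

definition tone :: "'k::field tens" where "tone = tword []"

definition tmul :: "'k::field tens \<Rightarrow> 'k tens \<Rightarrow> 'k tens" where
  "tmul u v = (\<Sum>a\<in>Poly_Mapping.keys u. \<Sum>b\<in>Poly_Mapping.keys v. Poly_Mapping.single (a @ b) (Poly_Mapping.lookup u a * Poly_Mapping.lookup v b))"

definition tsmult :: "'k::field \<Rightarrow> 'k tens \<Rightarrow> 'k tens" where
  "tsmult c u = Poly_Mapping.map (\<lambda>x. c * x) u"

definition tlin :: "nat \<Rightarrow> (nat \<Rightarrow> 'k::field) \<Rightarrow> 'k tens" where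
  "tlin n v = (\<Sum>i<n. Poly_Mapping.single [i] (v i))"

inductive_set tideal :: "nat \<Rightarrow> 'k::field tens set \<Rightarrow> 'k tens set" for n S where
  zero: "0 \<in> tideal n S"
| gen: "s \<in> S \<Longrightarrow> a \<in> tens_carrier n \<Longrightarrow> b \<in> tens_carrier n \<Longrightarrow> tmul (tmul a s) b \<in> tideal n S"
| add: "u \<in> tideal n S \<Longrightarrow> v \<in> tideal n S \<Longrightarrow> u + v \<in> tideal n S"

text \<open>U(h_Lie) = T(h) / IU, where IU is generated by the (images of the) elements of
  the ideal leib_ideal (so that T(h)/(leib_ideal) = T(h_Lie)) and by
  y_a y_b - y_b y_a - [y_a,y_b].\<close>
definition U_rel :: "nat \<Rightarrow> (nat \<Rightarrow> nat \<Rightarrow> nat \<Rightarrow> 'k::field) \<Rightarrow> 'k tens set" where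
  "U_rel n C =
     {tword [a, b] - tword [b, a] - tlin n (\<lambda>i. C i a b) | a b. a < n \<and> b < n}
     \<union> tlin n ` leib_ideal n C"

definition U_ideal :: "nat \<Rightarrow> (nat \<Rightarrow> nat \<Rightarrow> nat \<Rightarrow> 'k::field) \<Rightarrow> 'k tens set" where
  "U_ideal n C = tideal n (U_rel n C)"

definition epsU :: "'k::field tens \<Rightarrow> 'k" where "epsU u = Poly_Mapping.lookup u []"

datatype gvar = Gv nat nat | Gbv nat nat

fun gidx_ok :: "nat \<Rightarrow> gvar \<Rightarrow> bool" where
  "gidx_ok n (Gv i j) = (i < n \<and> j < n)"
| "gidx_ok n (Gbv i j) = (i < n \<and> j < n)"

type_synonym 'k coord = "(gvar \<Rightarrow>\<^sub>0 nat) \<Rightarrow>\<^sub>0 'k"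

definition coord_carrier :: "nat \<Rightarrow> 'k::field coord set" where
  "coord_carrier n = {f. \<forall>m \<in> Poly_Mapping.keys f. \<forall>x \<in> Poly_Mapping.keys m. gidx_ok n x}"

definition cvar :: "gvar \<Rightarrow> 'k::field coord" where
  "cvar x = Poly_Mapping.single (Poly_Mapping.single x 1) 1"

definition cconst :: "'k::field \<Rightarrow> 'k coord" where
  "cconst c = Poly_Mapping.single 0 c"

definition csmult :: "'k::field \<Rightarrow> 'k coord \<Rightarrow> 'k coord" where
  "csmult c f = Poly_Mapping.map (\<lambda>x. c * x) f"

inductive_set cideal :: "nat \<Rightarrow> 'k::field coord set \<Rightarrow> 'k coord set" for n S where
  zero: "0 \<in> cideal n S"
| gen: "s \<in> S \<Longrightarrow> a \<in> coord_carrier n \<Longrightarrow> a * s \<in> cideal n S"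
| add: "f \<in> cideal n S \<Longrightarrow> g \<in> cideal n S \<Longrightarrow> f + g \<in> cideal n S"

definition O_rel :: "nat \<Rightarrow> (nat \<Rightarrow> nat \<Rightarrow> nat \<Rightarrow> 'k::field) \<Rightarrow> 'k coord set" where
  "O_rel n C =
     {(\<Sum>l<n. \<Sum>m<n. cconst (C k l m) * cvar (Gv l i) * cvar (Gv m j))
        - (\<Sum>r<n. cvar (Gv k r) * cconst (C r i j)) | i j k. i < n \<and> j < n \<and> k < n}
   \<union> {(\<Sum>k<n. cvar (Gv i k) * cvar (Gbv k j)) - cconst (if i = j then 1 else 0) | i j. i < n \<and> j < n}
   \<union> {(\<Sum>k<n. cvar (Gbv i k) * cvar (Gv k j)) - cconst (if i = j then 1 else 0) | i j. i < n \<and> j < n}"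

definition O_ideal :: "nat \<Rightarrow> (nat \<Rightarrow> nat \<Rightarrow> nat \<Rightarrow> 'k::field) \<Rightarrow> 'k coord set" where
  "O_ideal n C = cideal n (O_rel n C)"

definition psubst :: "('k \<Rightarrow> 'r::comm_ring_1) \<Rightarrow> ('v \<Rightarrow> 'r) \<Rightarrow> (('v \<Rightarrow>\<^sub>0 nat) \<Rightarrow>\<^sub>0 'k::field) \<Rightarrow> 'r" where
  "psubst emb \<sigma> f = (\<Sum>m\<in>Poly_Mapping.keys f. emb (Poly_Mapping.lookup f m) * (\<Prod>x\<in>Poly_Mapping.keys m. \<sigma> x ^ Poly_Mapping.lookup m x))"

text \<open>O(Aut h) tensor O(Aut h) is represented by polynomials in two copies of the variables;
  a monomial is a pair (left monomial, right monomial).\<close>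
type_synonym 'k coord2 = "((gvar \<Rightarrow>\<^sub>0 nat) \<times> (gvar \<Rightarrow>\<^sub>0 nat)) \<Rightarrow>\<^sub>0 'k"

definition cvarL :: "gvar \<Rightarrow> 'k::field coord2" where
  "cvarL x = Poly_Mapping.single (Poly_Mapping.single x 1, 0) 1"
definition cvarR :: "gvar \<Rightarrow> 'k::field coord2" where
  "cvarR x = Poly_Mapping.single (0, Poly_Mapping.single x 1) 1"

fun DeltaO_var :: "nat \<Rightarrow> gvar \<Rightarrow> 'k::field coord2" where
  "DeltaO_var n (Gv i j) = (\<Sum>k<n. cvarL (Gv i k) * cvarR (Gv k j))"
| "DeltaO_var n (Gbv i j) = (\<Sum>k<n. cvarL (Gbv k j) * cvarR (Gbv i k))"

definition DeltaO :: "nat \<Rightarrow> 'k::field coord \<Rightarrow> 'k coord2" where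
  "DeltaO n f = psubst (\<lambda>c. Poly_Mapping.single 0 c) (DeltaO_var n) f"

fun epsO_var :: "gvar \<Rightarrow> 'k::field" where
  "epsO_var (Gv i j) = (if i = j then 1 else 0)"
| "epsO_var (Gbv i j) = (if i = j then 1 else 0)"

definition epsO :: "'k::field coord \<Rightarrow> 'k" where
  "epsO f = psubst id epsO_var f"

text \<open>Pairing of Delta_U(u) (shuffle coproduct, y |-> y(x)1 + 1(x)y) with f (x) g.\<close>
definition pair_DeltaU :: "('k::field tens \<Rightarrow> 'k coord \<Rightarrow> 'k) \<Rightarrow> 'k tens \<Rightarrow> 'k coord \<Rightarrow> 'k coord \<Rightarrow> 'k" where
  "pair_DeltaU P u f g =
     (\<Sum>w\<in>Poly_Mapping.keys u. Poly_Mapping.lookup u w *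
        (\<Sum>S\<in>Pow {..<length w}. P (tword (nths w S)) f * P (tword (nths w ({..<length w} - S))) g))"

definition pair_tensor :: "('k::field tens \<Rightarrow> 'k coord \<Rightarrow> 'k) \<Rightarrow> 'k tens \<Rightarrow> 'k tens \<Rightarrow> 'k coord2 \<Rightarrow> 'k" where
  "pair_tensor P u v F =
     (\<Sum>m\<in>Poly_Mapping.keys F. Poly_Mapping.lookup F m * P u (Poly_Mapping.single (fst m) 1) * P v (Poly_Mapping.single (snd m) 1))"

text \<open>P is (a representative of) a Hopf pairing U(h_Lie) (x) O(Aut h) -> k:
  P is bilinear, vanishes when either argument lies in the defining ideal (so it descends
  to a bilinear form on the quotient algebras), and satisfies the Hopf pairing axioms.\<close>
definition hopf_pairing :: "nat \<Rightarrow> (nat \<Rightarrow> nat \<Rightarrow> nat \<Rightarrow> 'k::field) \<Rightarrow> ('k tens \<Rightarrow> 'k coord \<Rightarrow> 'k) \<Rightarrow> bool" where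
  "hopf_pairing n C P \<longleftrightarrow>
     (\<forall>u\<in>tens_carrier n. \<forall>v\<in>tens_carrier n. \<forall>f\<in>coord_carrier n. P (u + v) f = P u f + P v f) \<and>
     (\<forall>u\<in>tens_carrier n. \<forall>f\<in>coord_carrier n. \<forall>c. P (tsmult c u) f = c * P u f) \<and>
     (\<forall>u\<in>tens_carrier n. \<forall>f\<in>coord_carrier n. \<forall>g\<in>coord_carrier n. P u (f + g) = P u f + P u g) \<and>
     (\<forall>u\<in>tens_carrier n. \<forall>f\<in>coord_carrier n. \<forall>c. P u (csmult c f) = c * P u f) \<and>
     (\<forall>u\<in>U_ideal n C. \<forall>f\<in>coord_carrier n. P u f = 0) \<and>
     (\<forall>u\<in>tens_carrier n. \<forall>f\<in>O_ideal n C. P u f = 0) \<and>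
     (\<forall>u\<in>tens_carrier n. \<forall>f\<in>coord_carrier n. \<forall>g\<in>coord_carrier n.
         pair_DeltaU P u f g = P u (f * g)) \<and>
     (\<forall>u\<in>tens_carrier n. P u 1 = epsU u) \<and>
     (\<forall>u\<in>tens_carrier n. \<forall>v\<in>tens_carrier n. \<forall>f\<in>coord_carrier n.
         pair_tensor P u v (DeltaO n f) = P (tmul u v) f) \<and>
     (\<forall>f\<in>coord_carrier n. P tone f = epsO f)"

definition pairing_normalized :: "nat \<Rightarrow> (nat \<Rightarrow> nat \<Rightarrow> nat \<Rightarrow> 'k::field) \<Rightarrow> ('k tens \<Rightarrow> 'k coord \<Rightarrow> 'k) \<Rightarrow> bool" where
  "pairing_normalized n C P \<longleftrightarrow>
     (\<forall>i<n. \<forall>j<n. \<forall>k<n. P (tword [k]) (cvar (Gv i j)) = - C i j k)"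

text \<open>New basis y'_j = sum_i Q i j y_i, with Qi the inverse matrix of Q.\<close>
definition inverse_mats :: "nat \<Rightarrow> (nat \<Rightarrow> nat \<Rightarrow> 'k::field) \<Rightarrow> (nat \<Rightarrow> nat \<Rightarrow> 'k) \<Rightarrow> bool" where
  "inverse_mats n Q Qi \<longleftrightarrow>
     (\<forall>i<n. \<forall>j<n. (\<Sum>k<n. Q i k * Qi k j) = (if i = j then 1 else 0)) \<and>
     (\<forall>i<n. \<forall>j<n. (\<Sum>k<n. Qi i k * Q k j) = (if i = j then 1 else 0))"

definition basis_change_C :: "nat \<Rightarrow> (nat \<Rightarrow> nat \<Rightarrow> 'k::field) \<Rightarrow> (nat \<Rightarrow> nat \<Rightarrow> 'k) \<Rightarrow>
    (nat \<Rightarrow> nat \<Rightarrow> nat \<Rightarrow> 'k) \<Rightarrow> (nat \<Rightarrow> nat \<Rightarrow> nat \<Rightarrow> 'k)" where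
  "basis_change_C n Q Qi C = (\<lambda>i j k.
     \<Sum>a<n. \<Sum>c<n. \<Sum>l<n. Qi i a * C a c l * Q c j * Q l k)"

text \<open>The algebra isomorphism T(h) w.r.t. b' -> T(h) w.r.t. b, y'_j |-> sum_i Q i j y_i
  (both are T(h); it is the identity of T(h) in intrinsic terms).\<close>
definition tlist_prod :: "'k::field tens list \<Rightarrow> 'k tens" where
  "tlist_prod xs = foldr tmul xs tone"

definition tens_change :: "nat \<Rightarrow> (nat \<Rightarrow> nat \<Rightarrow> 'k::field) \<Rightarrow> 'k tens \<Rightarrow> 'k tens" where
  "tens_change n Q u =
     (\<Sum>w\<in>Poly_Mapping.keys u. tsmult (Poly_Mapping.lookup u w) (tlist_prod (map (\<lambda>j. tlin n (\<lambda>i. Q i j)) w)))"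

text \<open>The canonical identification O(Aut h) w.r.t. b' -> O(Aut h) w.r.t. b: the matrix
  of psi in basis b' is Q^-1 (matrix in b) Q, likewise for psi^-1.\<close>
fun coord_change_var :: "nat \<Rightarrow> (nat \<Rightarrow> nat \<Rightarrow> 'k::field) \<Rightarrow> (nat \<Rightarrow> nat \<Rightarrow> 'k) \<Rightarrow> gvar \<Rightarrow> 'k coord" where
  "coord_change_var n Q Qi (Gv i j) = (\<Sum>a<n. \<Sum>c<n. cconst (Qi i a * Q c j) * cvar (Gv a c))"
| "coord_change_var n Q Qi (Gbv i j) = (\<Sum>a<n. \<Sum>c<n. cconst (Qi i a * Q c j) * cvar (Gbv a c))"

definition coord_change :: "nat \<Rightarrow> (nat \<Rightarrow> nat \<Rightarrow> 'k::field) \<Rightarrow> (nat \<Rightarrow> nat \<Rightarrow> 'k) \<Rightarrow> 'k coord \<Rightarrow> 'k coord" where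
  "coord_change n Q Qi f = psubst cconst (coord_change_var n Q Qi) f"

end

theory Submission
  imports Defs
begin


lemma poly_sum_single: "(\<Sum>m\<in>Poly_Mapping.keys F. Poly_Mapping.single m (Poly_Mapping.lookup F m)) = F"
proof (rule poly_mapping_eqI)
  fix k
  show "Poly_Mapping.lookup (\<Sum>m\<in>Poly_Mapping.keys F. Poly_Mapping.single m (Poly_Mapping.lookup F m)) k = Poly_Mapping.lookup F k"
    by (simp add: lookup_sum lookup_single when_def in_keys_iff)
qed

definition rhom :: "('a::ring_1 \<Rightarrow> 'b::ring_1) \<Rightarrow> bool" where
  "rhom h \<longleftrightarrow> (\<forall>x y. h (x + y) = h x + h y) \<and> (\<forall>x y. h (x * y) = h x * h y) \<and> h 1 = 1"

lemma rhom_add: "rhom h \<Longrightarrow> h (x + y) = h x + h y" by (simp add: rhom_def)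
lemma rhom_mult: "rhom h \<Longrightarrow> h (x * y) = h x * h y" by (simp add: rhom_def)
lemma rhom_one: "rhom h \<Longrightarrow> h 1 = 1" by (simp add: rhom_def)
lemma rhom_zero: "rhom h \<Longrightarrow> h 0 = 0"
  using rhom_add[of h 0 0] by simp
lemma rhom_uminus: "rhom h \<Longrightarrow> h (- x) = - h x"
  using rhom_add[of h x "- x"] rhom_zero[of h] by (metis add.commute add_left_imp_eq add.right_inverse)
lemma rhom_diff: "rhom h \<Longrightarrow> h (x - y) = h x - h y"
  using rhom_add[of h x "- y"] rhom_uminus[of h y] by simp
lemma rhom_sum: "rhom h \<Longrightarrow> h (sum f A) = (\<Sum>a\<in>A. h (f a))"
  by (induction A rule: infinite_finite_induct) (auto simp: rhom_zero rhom_add)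
lemma rhom_prod: "rhom h \<Longrightarrow> h (prod f A) = (\<Prod>a\<in>A. h (f a))"
  by (induction A rule: infinite_finite_induct) (auto simp: rhom_one rhom_mult)
lemma rhom_power: "rhom h \<Longrightarrow> h (x ^ k) = h x ^ k"
  by (induction k) (auto simp: rhom_one rhom_mult)
lemma rhom_comp: "rhom h \<Longrightarrow> rhom g \<Longrightarrow> rhom (h \<circ> g)"
  by (simp add: rhom_def)
lemma rhom_id: "rhom id" by (simp add: rhom_def)

definition mev :: "('k::comm_ring_1 \<Rightarrow> 'r::comm_ring_1) \<Rightarrow> ('m::comm_monoid_add \<Rightarrow> 'r) \<Rightarrow> ('m \<Rightarrow>\<^sub>0 'k) \<Rightarrow> 'r" where
  "mev emb \<chi> F = (\<Sum>m\<in>Poly_Mapping.keys F. emb (Poly_Mapping.lookup F m) * \<chi> m)"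

definition mhom :: "('m::comm_monoid_add \<Rightarrow> 'r::comm_ring_1) \<Rightarrow> bool" where
  "mhom \<chi> \<longleftrightarrow> (\<forall>a b. \<chi> (a + b) = \<chi> a * \<chi> b) \<and> \<chi> 0 = 1"

lemma mev_superset:
  assumes "rhom emb" "finite A" "Poly_Mapping.keys F \<subseteq> A"
  shows "mev emb \<chi> F = (\<Sum>m\<in>A. emb (Poly_Mapping.lookup F m) * \<chi> m)"
  unfolding mev_def
  by (rule sum.mono_neutral_left) (use assms in \<open>auto simp: rhom_zero in_keys_iff\<close>)

lemma mev_add:
  assumes "rhom emb"
  shows "mev emb \<chi> (F + G) = mev emb \<chi> F + mev emb \<chi> G"
proof -
  let ?A = "Poly_Mapping.keys F \<union> Poly_Mapping.keys G"
  have "mev emb \<chi> (F + G) = (\<Sum>m\<in>?A. emb (Poly_Mapping.lookup (F+G) m) * \<chi> m)"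
    using assms keys_add[of F G] by (intro mev_superset) auto
  also have "\<dots> = (\<Sum>m\<in>?A. emb (Poly_Mapping.lookup F m) * \<chi> m) + (\<Sum>m\<in>?A. emb (Poly_Mapping.lookup G m) * \<chi> m)"
    by (simp add: lookup_add rhom_add[OF assms] distrib_right sum.distrib)
  also have "\<dots> = mev emb \<chi> F + mev emb \<chi> G"
    using assms by (subst (1 2) mev_superset[symmetric]) auto
  finally show ?thesis .
qed

lemma mev_zero: "mev emb \<chi> 0 = 0" by (simp add: mev_def)

lemma mev_sum: "rhom emb \<Longrightarrow> mev emb \<chi> (sum f A) = (\<Sum>a\<in>A. mev emb \<chi> (f a))"
  by (induction A rule: infinite_finite_induct) (auto simp: mev_zero mev_add)

lemma mev_single: "rhom emb \<Longrightarrow> mev emb \<chi> (Poly_Mapping.single m c) = emb c * \<chi> m"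
  by (simp add: mev_def rhom_zero)

lemma mev_mult:
  assumes "rhom emb" "mhom \<chi>"
  shows "mev emb \<chi> (F * G) = mev emb \<chi> F * mev emb \<chi> G"
proof -
  have "F * G = (\<Sum>a\<in>Poly_Mapping.keys F. Poly_Mapping.single a (Poly_Mapping.lookup F a)) *
                (\<Sum>b\<in>Poly_Mapping.keys G. Poly_Mapping.single b (Poly_Mapping.lookup G b))"
    by (simp add: poly_sum_single)
  also have "\<dots> = (\<Sum>a\<in>Poly_Mapping.keys F. \<Sum>b\<in>Poly_Mapping.keys G.
        Poly_Mapping.single (a + b) (Poly_Mapping.lookup F a * Poly_Mapping.lookup G b))"
    by (simp add: sum_distrib_left sum_distrib_right mult_single) (rule sum.swap)
  finally have "mev emb \<chi> (F * G) = (\<Sum>a\<in>Poly_Mapping.keys F. \<Sum>b\<in>Poly_Mapping.keys G.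
        emb (Poly_Mapping.lookup F a) * \<chi> a * (emb (Poly_Mapping.lookup G b) * \<chi> b))"
    using assms by (simp add: mev_sum mev_single rhom_mult mhom_def mult_ac)
  also have "\<dots> = mev emb \<chi> F * mev emb \<chi> G"
    unfolding mev_def sum_distrib_left sum_distrib_right by (subst sum.swap) (simp add: mult_ac)
  finally show ?thesis .
qed

lemma mev_one: "rhom emb \<Longrightarrow> mhom \<chi> \<Longrightarrow> mev emb \<chi> 1 = 1"
  by (simp add: mev_def rhom_one mhom_def)

lemma mev_rhom: "rhom emb \<Longrightarrow> mhom \<chi> \<Longrightarrow> rhom (mev emb \<chi>)"
  by (simp add: rhom_def mev_add mev_mult mev_one)

definition pmono :: "('v \<Rightarrow> 'r::comm_ring_1) \<Rightarrow> ('v \<Rightarrow>\<^sub>0 nat) \<Rightarrow> 'r" where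
  "pmono \<sigma> m = (\<Prod>x\<in>Poly_Mapping.keys m. \<sigma> x ^ Poly_Mapping.lookup m x)"

lemma pmono_superset: "finite A \<Longrightarrow> Poly_Mapping.keys m \<subseteq> A \<Longrightarrow> pmono \<sigma> m = (\<Prod>x\<in>A. \<sigma> x ^ Poly_Mapping.lookup m x)"
  unfolding pmono_def by (rule prod.mono_neutral_left) (auto simp: in_keys_iff)

lemma mhom_mono: "mhom (pmono \<sigma>)"
proof -
  have "pmono \<sigma> (a + b) = pmono \<sigma> a * pmono \<sigma> b" for a b
  proof -
    let ?A = "Poly_Mapping.keys a \<union> Poly_Mapping.keys b"
    have "pmono \<sigma> (a + b) = (\<Prod>x\<in>?A. \<sigma> x ^ Poly_Mapping.lookup (a+b) x)"
      using keys_add[of a b] by (intro pmono_superset) auto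
    also have "\<dots> = (\<Prod>x\<in>?A. \<sigma> x ^ Poly_Mapping.lookup a x) * (\<Prod>x\<in>?A. \<sigma> x ^ Poly_Mapping.lookup b x)"
      by (simp add: lookup_add power_add prod.distrib)
    also have "\<dots> = pmono \<sigma> a * pmono \<sigma> b"
      by (subst (1 2) pmono_superset[symmetric]) auto
    finally show ?thesis .
  qed
  then show ?thesis by (simp add: mhom_def pmono_def)
qed

lemma psubst_mev: "psubst emb \<sigma> f = mev emb (pmono \<sigma>) f"
  by (simp add: psubst_def mev_def pmono_def)

lemma psubst_rhom: "rhom emb \<Longrightarrow> rhom (psubst emb \<sigma>)"
  unfolding psubst_mev[abs_def] by (rule mev_rhom) (auto simp: mhom_mono)

lemma psubst_single: "rhom emb \<Longrightarrow> psubst emb \<sigma> (Poly_Mapping.single m c) = emb c * pmono \<sigma> m"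
  by (simp add: psubst_mev mev_single)

lemma pmono_single: "pmono \<sigma> (Poly_Mapping.single x 1) = \<sigma> x"
  by (simp add: pmono_def)

lemma psubst_var: "rhom emb \<Longrightarrow> psubst emb \<sigma> (Poly_Mapping.single (Poly_Mapping.single x 1) 1) = \<sigma> x"
  by (simp add: psubst_single pmono_def rhom_one)

lemma psubst_const: "rhom emb \<Longrightarrow> psubst emb \<sigma> (Poly_Mapping.single 0 c) = emb c"
  by (simp add: psubst_single pmono_def)

lemma psubst_comp:
  assumes "rhom h" "rhom emb"
  shows "h (psubst emb \<sigma> f) = psubst (h \<circ> emb) (h \<circ> \<sigma>) f"
  using assms by (simp add: psubst_def rhom_sum rhom_mult rhom_prod rhom_power)

lemma psubst_cong:
  assumes "\<And>m x. m \<in> Poly_Mapping.keys f \<Longrightarrow> x \<in> Poly_Mapping.keys m \<Longrightarrow> \<sigma> x = \<tau> x"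
  shows "psubst emb \<sigma> f = psubst emb \<tau> f"
  unfolding psubst_def using assms by (intro sum.cong refl arg_cong2[where f="(*)"] prod.cong) auto

definition subring :: "'r::comm_ring_1 set \<Rightarrow> bool" where
  "subring R \<longleftrightarrow> 0 \<in> R \<and> 1 \<in> R \<and> (\<forall>x\<in>R. \<forall>y\<in>R. x + y \<in> R \<and> x * y \<in> R)"

lemma subring_sum: "subring R \<Longrightarrow> (\<And>a. a \<in> A \<Longrightarrow> f a \<in> R) \<Longrightarrow> sum f A \<in> R"
  by (induction A rule: infinite_finite_induct) (auto simp: subring_def)
lemma subring_prod: "subring R \<Longrightarrow> (\<And>a. a \<in> A \<Longrightarrow> f a \<in> R) \<Longrightarrow> prod f A \<in> R"
  by (induction A rule: infinite_finite_induct) (auto simp: subring_def)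
lemma subring_power: "subring R \<Longrightarrow> x \<in> R \<Longrightarrow> x ^ k \<in> R"
  by (induction k) (auto simp: subring_def)

lemma psubst_subring:
  assumes "subring R" "\<And>c. emb c \<in> R"
    "\<And>m x. m \<in> Poly_Mapping.keys f \<Longrightarrow> x \<in> Poly_Mapping.keys m \<Longrightarrow> \<sigma> x \<in> R"
  shows "psubst emb \<sigma> f \<in> R"
  unfolding psubst_def
proof (intro subring_sum[OF assms(1)])
  fix m assume m: "m \<in> Poly_Mapping.keys f"
  have "(\<Prod>x\<in>Poly_Mapping.keys m. \<sigma> x ^ Poly_Mapping.lookup m x) \<in> R"
    by (intro subring_prod subring_power assms(1)) (use assms m in auto)
  then show "emb (Poly_Mapping.lookup f m) * (\<Prod>x\<in>Poly_Mapping.keys m. \<sigma> x ^ Poly_Mapping.lookup m x) \<in> R"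
    using assms(1,2) unfolding subring_def by blast
qed

lemma psubst_self: "psubst (\<lambda>c. Poly_Mapping.single 0 c) (\<lambda>x. Poly_Mapping.single (Poly_Mapping.single x 1) 1) f = f"
proof -
  have m: "pmono (\<lambda>x. Poly_Mapping.single (Poly_Mapping.single x 1) (1::'k::field)) m = Poly_Mapping.single m 1" for m :: "'v \<Rightarrow>\<^sub>0 nat"
  proof -
    have pw: "(Poly_Mapping.single (Poly_Mapping.single x 1) (1::'k)) ^ e = Poly_Mapping.single (Poly_Mapping.single x e) 1" for x :: 'v and e
      by (induction e) (auto simp: mult_single single_add[symmetric] add.commute)
    have pr: "(\<Prod>x\<in>A. Poly_Mapping.single (g x) (1::'k)) = Poly_Mapping.single (\<Sum>x\<in>A. g x) 1" for A :: "'v set" and g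
      by (induction A rule: infinite_finite_induct) (auto simp: mult_single)
    show ?thesis
      unfolding pmono_def pw pr poly_sum_single ..
  qed
  have "psubst (\<lambda>c. Poly_Mapping.single 0 c) (\<lambda>x. Poly_Mapping.single (Poly_Mapping.single x 1) 1) f
     = (\<Sum>m\<in>Poly_Mapping.keys f. Poly_Mapping.single 0 (Poly_Mapping.lookup f m) * Poly_Mapping.single m 1)"
    unfolding psubst_mev mev_def m ..
  also have "\<dots> = f" by (simp add: mult_single poly_sum_single)
  finally show ?thesis .
qed

lemma rhom_const: "rhom (\<lambda>c::'k::comm_ring_1. Poly_Mapping.single (0::'m::comm_monoid_add) c)"
  by (simp add: rhom_def single_add mult_single)

lemma lookup_const_mult: "Poly_Mapping.lookup (Poly_Mapping.single 0 c * G) m = c * Poly_Mapping.lookup G m"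
  by (simp add: mult_map_scale_conv_mult[symmetric] Poly_Mapping.map.rep_eq when_def)


type_synonym 'k tp = "(nat \<Rightarrow>\<^sub>0 nat) \<Rightarrow>\<^sub>0 'k"

definition Xv :: "nat \<Rightarrow> 'k::field tp" where "Xv p = Poly_Mapping.single (Poly_Mapping.single p 1) 1"
definition Kc :: "'k::field \<Rightarrow> 'k tp" where "Kc c = Poly_Mapping.single 0 c"
definition sqf :: "nat set \<Rightarrow> (nat \<Rightarrow>\<^sub>0 nat)" where "sqf S = (\<Sum>i\<in>S. Poly_Mapping.single i 1)"

lemma rhom_Kc: "rhom Kc" unfolding Kc_def[abs_def] by (rule rhom_const)
lemma Kc_0[simp]: "Kc 0 = 0" by (simp add: Kc_def)
lemma Kc_1[simp]: "Kc 1 = 1" by (simp add: Kc_def)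
lemma Kc_add: "Kc (a + b) = Kc a + Kc b" by (rule rhom_add[OF rhom_Kc])
lemma Kc_mult: "Kc (a * b) = Kc a * Kc b" by (rule rhom_mult[OF rhom_Kc])
lemma Kc_minus: "Kc (- a) = - Kc a" by (rule rhom_uminus[OF rhom_Kc])
lemma Kc_diff: "Kc (a - b) = Kc a - Kc b" by (rule rhom_diff[OF rhom_Kc])
lemma Kc_sum: "Kc (sum f A) = (\<Sum>a\<in>A. Kc (f a))" by (rule rhom_sum[OF rhom_Kc])
lemma lookup_Kc_mult: "Poly_Mapping.lookup (Kc c * G) m = c * Poly_Mapping.lookup G m"
  by (simp add: Kc_def lookup_const_mult)
lemma Xv_nz: "Xv p \<noteq> (0::'k::field tp)"
  by (metis Xv_def lookup_single_eq one_neq_zero lookup_zero)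

lemma lookup_sqf: "finite S \<Longrightarrow> Poly_Mapping.lookup (sqf S) i = (if i \<in> S then 1 else 0)"
  by (simp add: sqf_def lookup_sum lookup_single when_def)

lemma keys_sqf: "finite S \<Longrightarrow> Poly_Mapping.keys (sqf S) = S"
  by (auto simp: in_keys_iff lookup_sqf split: if_splits)

lemma sqf_eq_iff: "finite S \<Longrightarrow> finite S' \<Longrightarrow> sqf S = sqf S' \<longleftrightarrow> S = S'"
  by (metis keys_sqf)

lemma sqf_split: "finite W \<Longrightarrow> S \<subseteq> W \<Longrightarrow> sqf S + sqf (W - S) = sqf W"
  by (rule poly_mapping_eqI) (auto simp: lookup_add lookup_sqf finite_subset)

lemma sqf_decomp:
  assumes W: "finite W" and ab: "a + b = sqf W"
  shows "Poly_Mapping.keys a \<subseteq> W \<and> a = sqf (Poly_Mapping.keys a) \<and> b = sqf (W - Poly_Mapping.keys a)"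
proof -
  have l: "Poly_Mapping.lookup a i + Poly_Mapping.lookup b i = (if i \<in> W then 1 else 0)" for i
    using arg_cong[OF ab, of "\<lambda>f. Poly_Mapping.lookup f i"] W by (simp add: lookup_add lookup_sqf)
  have k: "Poly_Mapping.keys a \<subseteq> W"
  proof
    fix i assume "i \<in> Poly_Mapping.keys a"
    then have "Poly_Mapping.lookup a i \<noteq> 0" by (simp add: in_keys_iff)
    with l[of i] show "i \<in> W" by (auto split: if_splits)
  qed
  moreover have "a = sqf (Poly_Mapping.keys a)"
  proof (rule poly_mapping_eqI)
    fix i show "Poly_Mapping.lookup a i = Poly_Mapping.lookup (sqf (Poly_Mapping.keys a)) i"
      using l[of i] by (simp add: lookup_sqf in_keys_iff split: if_splits)
  qed
  moreover have "b = sqf (W - Poly_Mapping.keys a)"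
  proof (rule poly_mapping_eqI)
    fix i show "Poly_Mapping.lookup b i = Poly_Mapping.lookup (sqf (W - Poly_Mapping.keys a)) i"
      using l[of i] W by (auto simp: lookup_sqf in_keys_iff split: if_splits)
  qed
  ultimately show ?thesis by blast
qed

lemma count_split:
  assumes W: "finite W"
  shows "(\<Sum>S\<in>Pow W. (if a = sqf S \<and> b = sqf (W - S) then 1 else 0::'k::field)) = (if a + b = sqf W then 1 else 0)"
proof (cases "a + b = sqf W")
  case True
  note d = sqf_decomp[OF W True]
  have "(\<Sum>S\<in>Pow W. (if a = sqf S \<and> b = sqf (W - S) then 1 else 0::'k)) = (\<Sum>S\<in>Pow W. (if S = Poly_Mapping.keys a then 1 else 0))"
  proof (rule sum.cong[OF refl])
    fix S assume S: "S \<in> Pow W"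
    have fS: "finite S" using S W finite_subset by auto
    show "(if a = sqf S \<and> b = sqf (W - S) then 1 else 0::'k) = (if S = Poly_Mapping.keys a then 1 else 0)"
      using d fS keys_sqf[OF fS] by auto
  qed
  also have "\<dots> = 1" using d W by (simp add: sum.delta')
  finally show ?thesis using True by simp
next
  case False
  have "(if a = sqf S \<and> b = sqf (W - S) then 1 else 0::'k) = 0" if "S \<in> Pow W" for S
    using False sqf_split[OF W, of S] that by auto
  then show ?thesis using False by simp
qed

lemma lookup_sum_delta: "(\<Sum>a\<in>Poly_Mapping.keys (F::'k::field tp). Poly_Mapping.lookup F a * (if a = m then 1 else 0)) = Poly_Mapping.lookup F m"
  by (simp add: sum.delta in_keys_iff if_distrib cong: if_cong)

lemma lookup_sum_single_eq: "(\<Sum>a\<in>Poly_Mapping.keys (F::'k::field tp). if a = m then Poly_Mapping.lookup F a * c else 0) = Poly_Mapping.lookup F m * c"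
  by (simp add: sum.delta in_keys_iff)

lemma coef_mult:
  fixes F G :: "'k::field tp"
  assumes W: "finite W"
  shows "Poly_Mapping.lookup (F * G) (sqf W) = (\<Sum>S\<in>Pow W. Poly_Mapping.lookup F (sqf S) * Poly_Mapping.lookup G (sqf (W - S)))"
proof -
  let ?F = "Poly_Mapping.lookup F" and ?G = "Poly_Mapping.lookup G"
  have "F * G = (\<Sum>a\<in>Poly_Mapping.keys F. Poly_Mapping.single a (?F a)) *
                (\<Sum>b\<in>Poly_Mapping.keys G. Poly_Mapping.single b (?G b))"
    by (simp add: poly_sum_single)
  also have "\<dots> = (\<Sum>a\<in>Poly_Mapping.keys F. \<Sum>b\<in>Poly_Mapping.keys G. Poly_Mapping.single (a + b) (?F a * ?G b))"
    by (simp add: sum_distrib_left sum_distrib_right mult_single) (rule sum.swap)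
  finally have "Poly_Mapping.lookup (F * G) (sqf W) =
      (\<Sum>a\<in>Poly_Mapping.keys F. \<Sum>b\<in>Poly_Mapping.keys G. ?F a * ?G b * (if a + b = sqf W then 1 else 0))"
    by (simp add: lookup_sum lookup_single when_def) (intro sum.cong refl, simp)
  also have "\<dots> = (\<Sum>a\<in>Poly_Mapping.keys F. \<Sum>b\<in>Poly_Mapping.keys G. \<Sum>S\<in>Pow W.
         ?F a * ?G b * (if a = sqf S \<and> b = sqf (W - S) then 1 else 0))"
    by (simp only: sum_distrib_left[symmetric] count_split[OF W])
  also have "\<dots> = (\<Sum>S\<in>Pow W. \<Sum>a\<in>Poly_Mapping.keys F. \<Sum>b\<in>Poly_Mapping.keys G.
         ?F a * ?G b * (if a = sqf S \<and> b = sqf (W - S) then 1 else 0))"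
    by (subst sum.swap) (simp add: sum.swap[of _ "Pow W"])
  also have "\<dots> = (\<Sum>S\<in>Pow W. ?F (sqf S) * ?G (sqf (W - S)))"
  proof (rule sum.cong[OF refl])
    fix S
    have "(\<Sum>a\<in>Poly_Mapping.keys F. \<Sum>b\<in>Poly_Mapping.keys G. ?F a * ?G b * (if a = sqf S \<and> b = sqf (W - S) then 1 else 0))
       = (\<Sum>a\<in>Poly_Mapping.keys F. ?F a * (if a = sqf S then 1 else 0)) * (\<Sum>b\<in>Poly_Mapping.keys G. ?G b * (if b = sqf (W - S) then 1 else 0))"
      by (simp add: sum_product) (intro sum.cong refl, simp)
    also have "\<dots> = ?F (sqf S) * ?G (sqf (W - S))"
      by (simp only: lookup_sum_delta)
    finally show "(\<Sum>a\<in>Poly_Mapping.keys F. \<Sum>b\<in>Poly_Mapping.keys G. ?F a * ?G b * (if a = sqf S \<and> b = sqf (W - S) then 1 else 0))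
       = ?F (sqf S) * ?G (sqf (W - S))" .
  qed
  finally show ?thesis .
qed

lemma single_pow: "(Poly_Mapping.single (Poly_Mapping.single x (1::nat)) (1::'k::field)) ^ e = Poly_Mapping.single (Poly_Mapping.single x e) 1"
  by (induction e) (auto simp: mult_single single_add[symmetric] add.commute)

lemma single_pow': "(Poly_Mapping.single (Poly_Mapping.single x (Suc 0)) (1::'k::field)) ^ e = Poly_Mapping.single (Poly_Mapping.single x e) 1"
  using single_pow[of x e] by simp

lemma prod_single1: "(\<Prod>x\<in>A. Poly_Mapping.single (g x) (1::'k::field)) = Poly_Mapping.single (\<Sum>x\<in>A. g x) 1"
  by (induction A rule: infinite_finite_induct) (auto simp: mult_single)

definition tsub :: "nat set \<Rightarrow> (nat \<Rightarrow> nat) \<Rightarrow> nat \<Rightarrow> 'k::field tp" where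
  "tsub S g p = (if p \<in> S then Xv (g p) else 0)"

lemma tau_mono:
  assumes S: "finite S" and g: "inj_on g S"
  shows "Poly_Mapping.lookup (pmono (tsub S g :: nat \<Rightarrow> 'k::field tp) m) (sqf (g ` S)) = (if m = sqf S then 1 else 0)"
proof (cases "Poly_Mapping.keys m \<subseteq> S")
  case True
  let ?Y = "\<Sum>x\<in>Poly_Mapping.keys m. Poly_Mapping.single (g x) (Poly_Mapping.lookup m x)"
  have "pmono (tsub S g :: nat \<Rightarrow> 'k tp) m = (\<Prod>x\<in>Poly_Mapping.keys m. Poly_Mapping.single (Poly_Mapping.single (g x) (Poly_Mapping.lookup m x)) 1)"
    unfolding pmono_def using True by (intro prod.cong refl) (auto simp: tsub_def Xv_def single_pow')
  also have "\<dots> = Poly_Mapping.single ?Y 1" by (rule prod_single1)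
  finally have e: "pmono (tsub S g :: nat \<Rightarrow> 'k tp) m = Poly_Mapping.single ?Y 1" .
  have lY: "Poly_Mapping.lookup ?Y (g z) = Poly_Mapping.lookup m z" if "z \<in> S" for z
  proof -
    have "Poly_Mapping.lookup ?Y (g z) = (\<Sum>x\<in>Poly_Mapping.keys m. if x = z then Poly_Mapping.lookup m x else 0)"
      unfolding lookup_sum
      by (intro sum.cong refl) (use True g that in \<open>auto simp: lookup_single when_def inj_on_def\<close>)
    also have "\<dots> = Poly_Mapping.lookup m z" by (simp add: sum.delta in_keys_iff)
    finally show ?thesis .
  qed
  have lY2: "Poly_Mapping.lookup ?Y y = 0" if "y \<notin> g ` S" for y
    unfolding lookup_sum by (intro sum.neutral) (use True that in \<open>auto simp: lookup_single when_def\<close>)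
  have "?Y = sqf (g ` S) \<longleftrightarrow> m = sqf S"
  proof
    assume Y: "?Y = sqf (g ` S)"
    show "m = sqf S"
    proof (rule poly_mapping_eqI)
      fix z show "Poly_Mapping.lookup m z = Poly_Mapping.lookup (sqf S) z"
      proof (cases "z \<in> S")
        case True then show ?thesis using lY[of z] Y S by (simp add: lookup_sqf)
      next
        case False then show ?thesis using \<open>Poly_Mapping.keys m \<subseteq> S\<close> S by (auto simp: lookup_sqf in_keys_iff)
      qed
    qed
  next
    assume m: "m = sqf S"
    show "?Y = sqf (g ` S)"
    proof (rule poly_mapping_eqI)
      fix y show "Poly_Mapping.lookup ?Y y = Poly_Mapping.lookup (sqf (g ` S)) y"
      proof (cases "y \<in> g ` S")
        case True then obtain z where z: "z \<in> S" "y = g z" by auto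
        then show ?thesis using lY[of z] m S by (simp add: lookup_sqf)
      next
        case False then show ?thesis using lY2[of y] S by (simp add: lookup_sqf)
      qed
    qed
  qed
  then show ?thesis by (simp add: e lookup_single when_def)
next
  case False
  then obtain x where x: "x \<in> Poly_Mapping.keys m" "x \<notin> S" by auto
  have "pmono (tsub S g :: nat \<Rightarrow> 'k tp) m = 0"
    unfolding pmono_def using x by (intro prod_zero) (auto simp: tsub_def in_keys_iff zero_power)
  moreover have "m \<noteq> sqf S" using x keys_sqf[OF S] by auto
  ultimately show ?thesis by simp
qed

lemma tau_coef:
  assumes S: "finite S" and g: "inj_on g S"
  shows "Poly_Mapping.lookup (psubst Kc (tsub S g) F) (sqf (g ` S)) = Poly_Mapping.lookup (F::'k::field tp) (sqf S)"
proof -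
  have "Poly_Mapping.lookup (psubst Kc (tsub S g) F) (sqf (g ` S))
      = (\<Sum>m\<in>Poly_Mapping.keys F. Poly_Mapping.lookup F m * (if m = sqf S then 1 else 0))"
    by (simp add: psubst_mev mev_def lookup_sum lookup_Kc_mult tau_mono[OF S g])
  also have "\<dots> = Poly_Mapping.lookup F (sqf S)"
    by (simp add: sum.delta in_keys_iff if_distrib cong: if_cong)
  finally show ?thesis .
qed

definition vsupp :: "nat set \<Rightarrow> 'k::field tp \<Rightarrow> bool" where
  "vsupp V F \<longleftrightarrow> (\<forall>m\<in>Poly_Mapping.keys F. Poly_Mapping.keys m \<subseteq> V)"

lemma subring_vsupp: "subring {F. vsupp V F}"
  unfolding subring_def
proof (intro conjI ballI)
  show "0 \<in> {F. vsupp V F}" by (simp add: vsupp_def)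
  show "1 \<in> {F. vsupp V F}" by (simp add: vsupp_def)
  fix x y :: "'a tp"
  assume "x \<in> {F. vsupp V F}" "y \<in> {F. vsupp V F}"
  then have x: "\<forall>m\<in>Poly_Mapping.keys x. Poly_Mapping.keys m \<subseteq> V" and y: "\<forall>m\<in>Poly_Mapping.keys y. Poly_Mapping.keys m \<subseteq> V"
    by (auto simp: vsupp_def)
  show "x + y \<in> {F. vsupp V F}"
    using x y keys_add[of x y] by (auto simp: vsupp_def)
  have "Poly_Mapping.keys m \<subseteq> V" if mk: "m \<in> Poly_Mapping.keys (x * y)" for m
  proof -
    obtain a b where "m = a + b" "a \<in> Poly_Mapping.keys x" "b \<in> Poly_Mapping.keys y"
      using keys_mult[of x y] mk by blast
    then show "Poly_Mapping.keys m \<subseteq> V" using x y keys_add[of a b] by blast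
  qed
  then show "x * y \<in> {F. vsupp V F}" by (auto simp: vsupp_def)
qed

lemma vsupp_Kc: "vsupp V (Kc c)" by (simp add: vsupp_def Kc_def)
lemma vsupp_Xv: "p \<in> V \<Longrightarrow> vsupp V (Xv p)" by (simp add: vsupp_def Xv_def)

lemma vsupp_coef: "vsupp V F \<Longrightarrow> finite S \<Longrightarrow> \<not> S \<subseteq> V \<Longrightarrow> Poly_Mapping.lookup F (sqf S) = 0"
  by (metis in_keys_iff keys_sqf vsupp_def)

subsection \<open>The ideal J of polynomials without square-free terms\<close>

definition Jset :: "'k::field tp set" where
  "Jset = {F. \<forall>S. finite S \<longrightarrow> Poly_Mapping.lookup F (sqf S) = 0}"

lemma J_zero[simp]: "0 \<in> Jset" by (simp add: Jset_def)
lemma J_add: "F \<in> Jset \<Longrightarrow> G \<in> Jset \<Longrightarrow> F + G \<in> Jset" by (simp add: Jset_def lookup_add)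
lemma J_uminus: "F \<in> Jset \<Longrightarrow> - F \<in> Jset" by (simp add: Jset_def)
lemma J_diff: "F \<in> Jset \<Longrightarrow> G \<in> Jset \<Longrightarrow> F - G \<in> Jset" by (simp add: Jset_def lookup_minus)
lemma J_sum: "(\<And>a. a \<in> A \<Longrightarrow> f a \<in> Jset) \<Longrightarrow> sum f A \<in> Jset"
  by (induction A rule: infinite_finite_induct) (auto simp: J_add)
lemma J_multL: "F \<in> Jset \<Longrightarrow> G * F \<in> Jset"
proof -
  assume F: "F \<in> Jset"
  have "Poly_Mapping.lookup (G * F) (sqf S) = 0" if "finite S" for S
  proof -
    have "\<And>T. T \<in> Pow S \<Longrightarrow> finite (S - T)" using that by auto
    then show ?thesis using F by (simp add: coef_mult[OF that] Jset_def)
  qed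
  then show ?thesis by (simp add: Jset_def)
qed
lemma J_multR: "F \<in> Jset \<Longrightarrow> F * G \<in> Jset" using J_multL[of F G] by (simp add: mult.commute)

lemma XX_J: "Xv p * Xv p \<in> (Jset :: 'k::field tp set)"
proof -
  have "Xv p * Xv p = (Poly_Mapping.single (Poly_Mapping.single p 2) 1 :: 'k tp)"
    by (simp add: Xv_def mult_single single_add[symmetric] numeral_2_eq_2)
  moreover have "Poly_Mapping.single p 2 \<noteq> sqf S" if "finite S" for S
  proof
    assume "Poly_Mapping.single p 2 = sqf S"
    then have "Poly_Mapping.lookup (Poly_Mapping.single p (2::nat)) p = Poly_Mapping.lookup (sqf S) p" by simp
    then show False using that by (simp add: lookup_sqf split: if_splits)
  qed
  ultimately show ?thesis by (simp add: Jset_def lookup_single when_def)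
qed


definition mmul :: "nat \<Rightarrow> (nat \<Rightarrow> nat \<Rightarrow> 'a::comm_ring_1) \<Rightarrow> (nat \<Rightarrow> nat \<Rightarrow> 'a) \<Rightarrow> (nat \<Rightarrow> nat \<Rightarrow> 'a)" where
  "mmul n A B = (\<lambda>i j. \<Sum>k<n. A i k * B k j)"

definition mid :: "nat \<Rightarrow> nat \<Rightarrow> 'a::comm_ring_1" where
  "mid = (\<lambda>i j. if i = j then 1 else 0)"

lemma mmul_assoc: "mmul n (mmul n A B) C = mmul n A (mmul n B C)"
  unfolding mmul_def fun_eq_iff sum_distrib_left sum_distrib_right
  by (intro allI, subst sum.swap, simp add: mult.assoc)

lemma mmul_mid_left: "i < n \<Longrightarrow> mmul n mid A i j = A i j"
proof -
  assume i: "i < n"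
  have "mmul n mid A i j = (\<Sum>k<n. if i = k then A k j else 0)" unfolding mmul_def mid_def by (intro sum.cong) auto
  then show ?thesis using i by simp
qed

lemma mmul_mid_right: "j < n \<Longrightarrow> mmul n A mid i j = A i j"
proof -
  assume j: "j < n"
  have "mmul n A mid i j = (\<Sum>k<n. if k = j then A i k else 0)" unfolding mmul_def mid_def by (intro sum.cong) auto
  then show ?thesis using j by simp
qed

lemma mmul_cong: "(\<And>k. k < n \<Longrightarrow> A i k = A' i k) \<Longrightarrow> (\<And>k. k < n \<Longrightarrow> B k j = B' k j) \<Longrightarrow> mmul n A B i j = mmul n A' B' i j"
  by (simp add: mmul_def)

lemma rhom_mmul: "rhom h \<Longrightarrow> h (mmul n A B i j) = mmul n (\<lambda>i j. h (A i j)) (\<lambda>i j. h (B i j)) i j"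
  by (simp add: mmul_def rhom_sum rhom_mult)

lemma rhom_mid: "rhom h \<Longrightarrow> h (mid i j) = mid i j"
  by (simp add: mid_def rhom_one rhom_zero)

definition Lf :: "'k::field tp \<Rightarrow> (nat \<Rightarrow> nat \<Rightarrow> 'k) \<Rightarrow> nat \<Rightarrow> nat \<Rightarrow> 'k tp" where
  "Lf c A = (\<lambda>i j. mid i j + c * Kc (A i j))"
definition Lg :: "'k::field tp \<Rightarrow> (nat \<Rightarrow> nat \<Rightarrow> 'k) \<Rightarrow> nat \<Rightarrow> nat \<Rightarrow> 'k tp" where
  "Lg c A = (\<lambda>i j. mid i j - c * Kc (A i j))"

fun Mq :: "nat \<Rightarrow> ('k::field tp \<times> (nat \<Rightarrow> nat \<Rightarrow> 'k)) list \<Rightarrow> nat \<Rightarrow> nat \<Rightarrow> 'k tp" where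
  "Mq n [] = mid"
| "Mq n ((c, A) # L) = mmul n (Lf c A) (Mq n L)"

fun Nq :: "nat \<Rightarrow> ('k::field tp \<times> (nat \<Rightarrow> nat \<Rightarrow> 'k)) list \<Rightarrow> nat \<Rightarrow> nat \<Rightarrow> 'k tp" where
  "Nq n [] = mid"
| "Nq n ((c, A) # L) = mmul n (Nq n L) (Lg c A)"

fun sig :: "nat \<Rightarrow> ('k::field tp \<times> (nat \<Rightarrow> nat \<Rightarrow> 'k)) list \<Rightarrow> gvar \<Rightarrow> 'k tp" where
  "sig n L (Gv i j) = (if i < n \<and> j < n then Mq n L i j else 0)"
| "sig n L (Gbv i j) = (if i < n \<and> j < n then Nq n L i j else 0)"

definition evq :: "nat \<Rightarrow> ('k::field tp \<times> (nat \<Rightarrow> nat \<Rightarrow> 'k)) list \<Rightarrow> 'k coord \<Rightarrow> 'k tp" where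
  "evq n L = psubst Kc (sig n L)"

definition stdL :: "(nat \<Rightarrow> nat \<Rightarrow> 'k) list \<Rightarrow> ('k::field tp \<times> (nat \<Rightarrow> nat \<Rightarrow> 'k)) list" where
  "stdL As = zip (map Xv [0..<length As]) As"

definition Ev :: "nat \<Rightarrow> (nat \<Rightarrow> nat \<Rightarrow> 'k::field) list \<Rightarrow> 'k coord \<Rightarrow> 'k" where
  "Ev n As f = Poly_Mapping.lookup (evq n (stdL As) f) (sqf {..<length As})"

lemma rhom_evq: "rhom (evq n L)"
  unfolding evq_def by (rule psubst_rhom[OF rhom_Kc])

lemma evq_cvar: "evq n L (cvar x) = sig n L x"
  unfolding evq_def cvar_def by (rule psubst_var[OF rhom_Kc])

lemma evq_cconst: "evq n L (cconst c) = Kc c"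
  unfolding evq_def cconst_def by (rule psubst_const[OF rhom_Kc])

lemma Mq_append: "i < n \<Longrightarrow> Mq n (L1 @ L2) i j = mmul n (Mq n L1) (Mq n L2) i j"
proof (induction L1 arbitrary: i j)
  case Nil then show ?case by (simp add: mmul_mid_left)
next
  case (Cons x L1)
  obtain c A where x: "x = (c, A)" by (cases x)
  have "Mq n ((x # L1) @ L2) i j = mmul n (Lf c A) (mmul n (Mq n L1) (Mq n L2)) i j"
    using Cons.IH by (simp add: x) (intro mmul_cong, auto)
  then show ?case by (simp add: x mmul_assoc)
qed

lemma Nq_append: "j < n \<Longrightarrow> Nq n (L1 @ L2) i j = mmul n (Nq n L2) (Nq n L1) i j"
proof (induction L1 arbitrary: i j)
  case Nil then show ?case by (simp add: mmul_mid_right)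
next
  case (Cons x L1)
  obtain c A where x: "x = (c, A)" by (cases x)
  have "Nq n ((x # L1) @ L2) i j = mmul n (mmul n (Nq n L2) (Nq n L1)) (Lg c A) i j"
    using Cons.IH by (simp add: x) (intro mmul_cong, auto)
  then show ?case by (simp add: x mmul_assoc)
qed

lemma Mq_map:
  assumes h: "rhom h" and hK: "\<And>c. h (Kc c) = Kc c"
  shows "h (Mq n L i j) = Mq n (map (\<lambda>(c, A). (h c, A)) L) i j"
proof (induction L arbitrary: i j)
  case Nil then show ?case by (simp add: rhom_mid[OF h])
next
  case (Cons x L)
  obtain c A where x: "x = (c, A)" by (cases x)
  have "h (Mq n (x # L) i j) = mmul n (\<lambda>i j. h (Lf c A i j)) (\<lambda>i j. h (Mq n L i j)) i j"
    by (simp add: x rhom_mmul[OF h])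
  also have "\<dots> = mmul n (Lf (h c) A) (Mq n (map (\<lambda>(c, A). (h c, A)) L)) i j"
    unfolding Lf_def rhom_add[OF h] rhom_mult[OF h] rhom_mid[OF h] hK Cons.IH ..
  finally show ?case by (simp add: x)
qed

lemma Nq_map:
  assumes h: "rhom h" and hK: "\<And>c. h (Kc c) = Kc c"
  shows "h (Nq n L i j) = Nq n (map (\<lambda>(c, A). (h c, A)) L) i j"
proof (induction L arbitrary: i j)
  case Nil then show ?case by (simp add: rhom_mid[OF h])
next
  case (Cons x L)
  obtain c A where x: "x = (c, A)" by (cases x)
  have "h (Nq n (x # L) i j) = mmul n (\<lambda>i j. h (Nq n L i j)) (\<lambda>i j. h (Lg c A i j)) i j"
    by (simp add: x rhom_mmul[OF h])
  also have "\<dots> = mmul n (Nq n (map (\<lambda>(c, A). (h c, A)) L)) (Lg (h c) A) i j"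
    unfolding Lg_def rhom_diff[OF h] rhom_mult[OF h] rhom_mid[OF h] hK Cons.IH ..
  finally show ?case by (simp add: x)
qed

lemma sig_map:
  assumes h: "rhom h" and hK: "\<And>c. h (Kc c) = Kc c"
  shows "h (sig n L x) = sig n (map (\<lambda>(c, A). (h c, A)) L) x"
  by (cases x) (simp_all add: Mq_map[OF h hK] Nq_map[OF h hK] rhom_zero[OF h] del: Mq.simps Nq.simps)

lemma evq_map:
  assumes "rhom h" "\<And>c. h (Kc c) = Kc c"
  shows "h (evq n L f) = evq n (map (\<lambda>(c, A). (h c, A)) L) f"
  unfolding evq_def
  by (subst psubst_comp[OF assms(1) rhom_Kc]) (simp add: comp_def assms(2) sig_map[OF assms])

lemma Mq_filter: "i < n \<Longrightarrow> j < n \<Longrightarrow> Mq n L i j = Mq n (filter (\<lambda>x. fst x \<noteq> 0) L) i j"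
proof (induction L arbitrary: i j)
  case Nil then show ?case by simp
next
  case (Cons x L)
  obtain c A where x: "x = (c, A)" by (cases x)
  show ?case
  proof (cases "c = 0")
    case True
    have "Mq n (x # L) i j = mmul n mid (Mq n L) i j"
      by (simp add: x True Lf_def) 
    also have "\<dots> = Mq n L i j" using Cons by (simp add: mmul_mid_left)
    finally show ?thesis using Cons True x by simp
  next
    case False
    then show ?thesis using Cons by (simp add: x) (intro mmul_cong, auto)
  qed
qed

lemma Nq_filter: "i < n \<Longrightarrow> j < n \<Longrightarrow> Nq n L i j = Nq n (filter (\<lambda>x. fst x \<noteq> 0) L) i j"
proof (induction L arbitrary: i j)
  case Nil then show ?case by simp
next
  case (Cons x L)
  obtain c A where x: "x = (c, A)" by (cases x)
  show ?case
  proof (cases "c = 0")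
    case True
    have "Nq n (x # L) i j = mmul n (Nq n L) mid i j"
      by (simp add: x True Lg_def) 
    also have "\<dots> = Nq n L i j" using Cons by (simp add: mmul_mid_right)
    finally show ?thesis using Cons True x by simp
  next
    case False
    then show ?thesis using Cons by (simp add: x) (intro mmul_cong, auto)
  qed
qed

lemma evq_filter: "evq n L f = evq n (filter (\<lambda>x. fst x \<noteq> 0) L) f"
proof -
  have "sig n L x = sig n (filter (\<lambda>x. fst x \<noteq> 0) L) x" for x
  proof (cases x)
    case (Gv i j) then show ?thesis using Mq_filter[of i n j L] by simp
  next
    case (Gbv i j) then show ?thesis using Nq_filter[of i n j L] by simp
  qed
  then have "sig n L = sig n (filter (\<lambda>x. fst x \<noteq> 0) L)" by (rule ext)
  then show ?thesis unfolding evq_def by simp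
qed


lemma rhom_tsub: "rhom (psubst Kc (tsub S g))" by (rule psubst_rhom[OF rhom_Kc])
lemma tsub_Kc: "psubst Kc (tsub S g) (Kc c) = Kc c"
  unfolding Kc_def by (rule psubst_const[OF rhom_Kc, unfolded Kc_def])
lemma tsub_Xv: "psubst Kc (tsub S g) (Xv p) = tsub S g p"
  unfolding Xv_def by (rule psubst_var[OF rhom_Kc])

lemma map_apfst_zip: "map (\<lambda>(c, A). (h c, A)) (zip xs ys) = zip (map h xs) ys"
  by (induction xs arbitrary: ys) (auto simp: zip_Cons1 split: list.splits)

lemma filter_zip_tsub:
  "filter (\<lambda>x. fst x \<noteq> 0) (zip (map (\<lambda>p. if p \<in> S then Xv p else (0::'k::field tp)) [k..<k + length As]) As)
   = zip (map Xv (filter (\<lambda>p. p \<in> S) [k..<k + length As])) (nths As {i. i + k \<in> S})"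
proof (induction As arbitrary: k)
  case Nil then show ?case by simp
next
  case (Cons A As)
  have u: "[k..<k + length (A # As)] = k # [Suc k..<Suc k + length As]"
    using upt_conv_Cons[of k "k + Suc (length As)"] by simp
  have s: "{j. Suc j \<in> {i. i + k \<in> S}} = {i. i + Suc k \<in> S}" by auto
  show ?case
    unfolding u using Cons.IH[of "Suc k"]
    by (simp add: nths_Cons s Xv_nz)
qed

lemma inv_nth_facts:
  assumes d: "distinct ps"
  defines "g \<equiv> inv_into {..<length ps} ((!) ps)"
  shows "map g ps = [0..<length ps]" "inj_on g (set ps)" "g ` set ps = {..<length ps}"
proof -
  have inj: "inj_on ((!) ps) {..<length ps}" using d by (simp add: inj_on_nth)
  have gi: "g (ps ! i) = i" if "i < length ps" for i
    unfolding g_def using inj that by (simp add: inv_into_f_f)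
  show m: "map g ps = [0..<length ps]"
    by (rule nth_equalityI) (auto simp: gi)
  have "set ps = (!) ps ` {..<length ps}" by (auto simp: in_set_conv_nth)
  then show "inj_on g (set ps)" unfolding g_def by (simp add: inj_on_inv_into)
  show "g ` set ps = {..<length ps}"
    using arg_cong[OF m, of set] by (simp add: atLeast0LessThan)
qed

lemma evq_positions:
  assumes d: "distinct ps" and l: "length ps = length Bs"
  shows "Poly_Mapping.lookup (evq n (zip (map Xv ps) Bs) f) (sqf (set ps)) = Ev n Bs f"
proof -
  define g where "g = inv_into {..<length ps} ((!) ps)"
  note gf = inv_nth_facts[OF d, folded g_def]
  let ?h = "psubst Kc (tsub (set ps) g) :: 'a tp \<Rightarrow> 'a tp"
  have "Poly_Mapping.lookup (evq n (zip (map Xv ps) Bs) f) (sqf (set ps))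
      = Poly_Mapping.lookup (?h (evq n (zip (map Xv ps) Bs) f)) (sqf (g ` set ps))"
    by (rule tau_coef[symmetric]) (auto simp: gf)
  also have "?h (evq n (zip (map Xv ps) Bs) f) = evq n (zip (map (\<lambda>p. ?h (Xv p)) ps) Bs) f"
    by (simp add: evq_map[OF rhom_tsub tsub_Kc] map_apfst_zip comp_def)
  also have "map (\<lambda>p. ?h (Xv p)) ps = map Xv (map g ps)"
    by (simp add: tsub_Xv tsub_def)
  also have "\<dots> = map Xv [0..<length Bs]" using gf l by simp
  finally show ?thesis using gf l by (simp add: Ev_def stdL_def)
qed

lemma evq_restrict:
  assumes S: "S \<subseteq> {..<length As}"
  shows "Poly_Mapping.lookup (evq n (stdL As) f) (sqf S) = Ev n (nths As S) f"
proof -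
  have fS: "finite S" using S finite_subset by blast
  let ?h = "psubst Kc (tsub S id) :: 'a tp \<Rightarrow> 'a tp"
  let ?ps = "filter (\<lambda>p. p \<in> S) [0..<length As]"
  have "Poly_Mapping.lookup (evq n (stdL As) f) (sqf S)
      = Poly_Mapping.lookup (?h (evq n (stdL As) f)) (sqf (id ` S))"
    by (rule tau_coef[symmetric]) (auto simp: fS)
  also have "?h (evq n (stdL As) f) = evq n (zip (map (\<lambda>p. ?h (Xv p)) [0..<length As]) As) f"
    by (simp add: evq_map[OF rhom_tsub tsub_Kc] map_apfst_zip stdL_def comp_def id_def)
  also have "\<dots> = evq n (filter (\<lambda>x. fst x \<noteq> 0) (zip (map (\<lambda>p. if p \<in> S then Xv p else 0) [0..<0 + length As]) As)) f"
    by (subst evq_filter) (simp add: tsub_Xv tsub_def id_def)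
  also have "\<dots> = evq n (zip (map Xv ?ps) (nths As S)) f"
    by (subst filter_zip_tsub) simp
  finally have e: "Poly_Mapping.lookup (evq n (stdL As) f) (sqf S) = Poly_Mapping.lookup (evq n (zip (map Xv ?ps) (nths As S)) f) (sqf S)"
    by simp
  have sp: "set ?ps = S" using S by auto
  have dp: "distinct ?ps" by simp
  have "length ?ps = card S" using distinct_card[OF dp] sp by simp
  moreover have "length (nths As S) = card S"
    using S by (simp add: length_nths) (metis (no_types, lifting) Collect_cong Collect_mem_eq lessThan_iff subset_eq)
  ultimately have "length ?ps = length (nths As S)" by simp
  then show ?thesis using e evq_positions[OF dp, of "nths As S" n f] sp by simp
qed

lemma Ev_mult:
  "Ev n As (f * g) = (\<Sum>S\<in>Pow {..<length As}. Ev n (nths As S) f * Ev n (nths As ({..<length As} - S)) g)"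
proof -
  have "Ev n As (f * g) = Poly_Mapping.lookup (evq n (stdL As) f * evq n (stdL As) g) (sqf {..<length As})"
    by (simp add: Ev_def rhom_mult[OF rhom_evq])
  also have "\<dots> = (\<Sum>S\<in>Pow {..<length As}. Poly_Mapping.lookup (evq n (stdL As) f) (sqf S) *
        Poly_Mapping.lookup (evq n (stdL As) g) (sqf ({..<length As} - S)))"
    by (rule coef_mult) simp
  also have "\<dots> = (\<Sum>S\<in>Pow {..<length As}. Ev n (nths As S) f * Ev n (nths As ({..<length As} - S)) g)"
    by (intro sum.cong refl) (auto simp: evq_restrict)
  finally show ?thesis .
qed


definition ptens :: "('k::field coord \<Rightarrow> 'k) \<Rightarrow> ('k coord \<Rightarrow> 'k) \<Rightarrow> 'k coord2 \<Rightarrow> 'k" where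
  "ptens \<alpha> \<beta> F = (\<Sum>m\<in>Poly_Mapping.keys F. Poly_Mapping.lookup F m * \<alpha> (Poly_Mapping.single (fst m) 1) * \<beta> (Poly_Mapping.single (snd m) 1))"

lemma vsupp_0[simp]: "vsupp V 0" by (simp add: vsupp_def)
lemma vsupp_add: "vsupp V x \<Longrightarrow> vsupp V y \<Longrightarrow> vsupp V (x + y)"
  using subring_vsupp[of V] unfolding subring_def by blast
lemma vsupp_mult: "vsupp V x \<Longrightarrow> vsupp V y \<Longrightarrow> vsupp V (x * y)"
  using subring_vsupp[of V] unfolding subring_def by blast
lemma vsupp_mid: "vsupp V (mid i j)"
  by (simp add: mid_def vsupp_def)
lemma vsupp_uminus: "vsupp V x \<Longrightarrow> vsupp V (- x)"
  by (simp add: vsupp_def)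
lemma vsupp_diff: "vsupp V x \<Longrightarrow> vsupp V y \<Longrightarrow> vsupp V (x - y)"
  unfolding diff_conv_add_uminus by (intro vsupp_add vsupp_uminus)
lemma vsupp_sum: "(\<And>a. a \<in> A \<Longrightarrow> vsupp V (f a)) \<Longrightarrow> vsupp V (sum f A)"
  using subring_sum[OF subring_vsupp, of A f V] by simp

lemma Mq_vsupp:
  assumes "\<And>c A. (c, A) \<in> set L \<Longrightarrow> vsupp V c"
  shows "vsupp V (Mq n L i j)"
  using assms
proof (induction L arbitrary: i j)
  case Nil then show ?case
    by (simp add: mid_def vsupp_def)
next
  case (Cons x L)
  obtain c A where x: "x = (c, A)" by (cases x)
  have c: "vsupp V c" using Cons.prems x by auto
  have "vsupp V (mmul n (Lf c A) (Mq n L) i j)"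
    unfolding mmul_def Lf_def
    using Cons c by (intro vsupp_sum vsupp_mult vsupp_add vsupp_mid vsupp_Kc) auto
  then show ?case by (simp add: x)
qed

lemma Nq_vsupp:
  assumes "\<And>c A. (c, A) \<in> set L \<Longrightarrow> vsupp V c"
  shows "vsupp V (Nq n L i j)"
  using assms
proof (induction L arbitrary: i j)
  case Nil then show ?case
    by (simp add: mid_def vsupp_def)
next
  case (Cons x L)
  obtain c A where x: "x = (c, A)" by (cases x)
  have c: "vsupp V c" using Cons.prems x by auto
  have "vsupp V (mmul n (Nq n L) (Lg c A) i j)"
    unfolding mmul_def Lg_def
    using Cons c by (intro vsupp_sum vsupp_mult vsupp_diff vsupp_mid vsupp_Kc) auto
  then show ?case by (simp add: x)
qed

lemma evq_vsupp:
  assumes "\<And>c A. (c, A) \<in> set L \<Longrightarrow> vsupp V c"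
  shows "vsupp V (evq n L f)"
proof -
  have "evq n L f \<in> {F. vsupp V F}"
    unfolding evq_def
  proof (rule psubst_subring[OF subring_vsupp])
    show "Kc c \<in> {F. vsupp V F}" for c by (simp add: vsupp_Kc)
    show "sig n L x \<in> {F. vsupp V F}" for x
      by (cases x) (simp_all add: Mq_vsupp[OF assms] Nq_vsupp[OF assms] del: Mq.simps Nq.simps)
  qed
  then show ?thesis by simp
qed

lemma evq_cvar': "evq n L (Poly_Mapping.single (Poly_Mapping.single x (Suc 0)) 1) = sig n L x"
  using evq_cvar[of n L x, unfolded cvar_def] by simp

lemma single_add1: "Poly_Mapping.single (a + b) (1::'k::field) = Poly_Mapping.single a 1 * Poly_Mapping.single b 1"
  by (simp add: mult_single)

lemma Ev_append:
  "Ev n (As @ Bs) f = ptens (Ev n As) (Ev n Bs) (DeltaO n f)"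
proof -
  define a where "a = length As"
  define b where "b = length Bs"
  define L1 where "L1 = (stdL As :: ('a tp \<times> _) list)"
  define L2 where "L2 = (zip (map Xv [a..<a+b]) Bs :: ('a tp \<times> _) list)"
  have L12: "stdL (As @ Bs) = L1 @ L2"
    unfolding L1_def L2_def stdL_def a_def b_def
    by (simp add: upt_add_eq_append[of 0])
  define \<chi> where "\<chi> m = evq n L1 (Poly_Mapping.single (fst m) 1) * evq n L2 (Poly_Mapping.single (snd m) 1)"
    for m :: "(gvar \<Rightarrow>\<^sub>0 nat) \<times> (gvar \<Rightarrow>\<^sub>0 nat)"
  have mh: "mhom \<chi>"
    unfolding mhom_def \<chi>_def
    by (simp add: single_add1 rhom_mult[OF rhom_evq] rhom_one[OF rhom_evq] mult_ac)
  define \<Phi> where "\<Phi> = mev Kc \<chi>"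
  have rP: "rhom \<Phi>" unfolding \<Phi>_def by (rule mev_rhom[OF rhom_Kc mh])
  have P0: "\<Phi> (Poly_Mapping.single 0 c) = Kc c" for c
    unfolding \<Phi>_def using mh by (simp add: mev_single[OF rhom_Kc] mhom_def)
  have PL: "\<Phi> (cvarL x) = sig n L1 x" for x
    unfolding \<Phi>_def cvarL_def
    by (simp add: mev_single[OF rhom_Kc] \<chi>_def evq_cvar' rhom_one[OF rhom_evq])
  have PR: "\<Phi> (cvarR x) = sig n L2 x" for x
    unfolding \<Phi>_def cvarR_def
    by (simp add: mev_single[OF rhom_Kc] \<chi>_def evq_cvar' rhom_one[OF rhom_evq])
  have DV: "\<Phi> (DeltaO_var n x) = sig n (L1 @ L2) x" for x
  proof (cases x)
    case (Gv i j)
    have "\<Phi> (DeltaO_var n x) = (\<Sum>k<n. sig n L1 (Gv i k) * sig n L2 (Gv k j))"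
      by (simp add: Gv rhom_sum[OF rP] rhom_mult[OF rP] PL PR)
    also have "\<dots> = sig n (L1 @ L2) x"
    proof (cases "i < n \<and> j < n")
      case True
      then have "(\<Sum>k<n. sig n L1 (Gv i k) * sig n L2 (Gv k j)) = mmul n (Mq n L1) (Mq n L2) i j"
        by (simp add: mmul_def del: Mq.simps)
      also have "\<dots> = Mq n (L1 @ L2) i j" using True by (simp add: Mq_append del: Mq.simps)
      finally show ?thesis using True Gv by (simp del: Mq.simps)
    next
      case False then show ?thesis using Gv by (auto simp del: Mq.simps)
    qed
    finally show ?thesis .
  next
    case (Gbv i j)
    have "\<Phi> (DeltaO_var n x) = (\<Sum>k<n. sig n L1 (Gbv k j) * sig n L2 (Gbv i k))"
      by (simp add: Gbv rhom_sum[OF rP] rhom_mult[OF rP] PL PR)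
    also have "\<dots> = sig n (L1 @ L2) x"
    proof (cases "i < n \<and> j < n")
      case True
      then have "(\<Sum>k<n. sig n L1 (Gbv k j) * sig n L2 (Gbv i k)) = mmul n (Nq n L2) (Nq n L1) i j"
        by (simp add: mmul_def mult.commute del: Nq.simps)
      also have "\<dots> = Nq n (L1 @ L2) i j" using True by (simp add: Nq_append del: Nq.simps)
      finally show ?thesis using True Gbv by (simp del: Nq.simps)
    next
      case False then show ?thesis using Gbv by (auto simp del: Nq.simps)
    qed
    finally show ?thesis .
  qed
  have ev: "evq n (stdL (As @ Bs)) f = \<Phi> (DeltaO n f)"
    unfolding DeltaO_def
    by (subst psubst_comp[OF rP rhom_const]) (simp add: comp_def P0 DV evq_def L12 Kc_def[symmetric])
  have chi: "Poly_Mapping.lookup (\<chi> m) (sqf {..<a+b}) = Ev n As (Poly_Mapping.single (fst m) 1) * Ev n Bs (Poly_Mapping.single (snd m) 1)" for m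
  proof -
    define F1 where "F1 = evq n L1 (Poly_Mapping.single (fst m) 1)"
    define F2 where "F2 = evq n L2 (Poly_Mapping.single (snd m) 1)"
    have v1: "vsupp {..<a} F1" unfolding F1_def
      by (rule evq_vsupp) (auto simp: L1_def stdL_def a_def set_zip vsupp_Xv)
    have v2: "vsupp {a..<a+b} F2" unfolding F2_def
      by (rule evq_vsupp) (auto simp: L2_def set_zip vsupp_Xv b_def)
    have "Poly_Mapping.lookup (\<chi> m) (sqf {..<a+b}) = (\<Sum>S\<in>Pow {..<a+b}. Poly_Mapping.lookup F1 (sqf S) * Poly_Mapping.lookup F2 (sqf ({..<a+b} - S)))"
      unfolding \<chi>_def F1_def[symmetric] F2_def[symmetric] by (rule coef_mult) simp
    also have "\<dots> = (\<Sum>S\<in>Pow {..<a+b}. if S = {..<a} then Poly_Mapping.lookup F1 (sqf S) * Poly_Mapping.lookup F2 (sqf ({..<a+b} - S)) else 0)"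
    proof (intro sum.cong refl)
      fix S assume S: "S \<in> Pow {..<a+b}"
      have fS: "finite S" "finite ({..<a+b} - S)" using S finite_subset by auto
      show "Poly_Mapping.lookup F1 (sqf S) * Poly_Mapping.lookup F2 (sqf ({..<a+b} - S)) =
          (if S = {..<a} then Poly_Mapping.lookup F1 (sqf S) * Poly_Mapping.lookup F2 (sqf ({..<a+b} - S)) else 0)"
      proof (cases "S = {..<a}")
        case False
        show ?thesis
        proof (cases "S \<subseteq> {..<a}")
          case True
          with False obtain p where "p < a" "p \<notin> S" by auto
          then have "p \<in> {..<a+b} - S" "p \<notin> {a..<a+b}" by auto
          then have "\<not> ({..<a+b} - S) \<subseteq> {a..<a+b}" by blast
          then show ?thesis using vsupp_coef[OF v2 fS(2)] False by simp
        next
          case False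
          then show ?thesis using vsupp_coef[OF v1 fS(1)] by auto
        qed
      qed simp
    qed
    also have "\<dots> = Poly_Mapping.lookup F1 (sqf {..<a}) * Poly_Mapping.lookup F2 (sqf ({..<a+b} - {..<a}))"
      by (simp add: sum.delta')
    also have "{..<a+b} - {..<a} = set [a..<a+b]" by auto
    also have "Poly_Mapping.lookup F1 (sqf {..<a}) = Ev n As (Poly_Mapping.single (fst m) 1)"
      by (simp add: F1_def L1_def Ev_def a_def)
    also have "Poly_Mapping.lookup F2 (sqf (set [a..<a+b])) = Ev n Bs (Poly_Mapping.single (snd m) 1)"
      unfolding F2_def L2_def by (rule evq_positions) (simp_all add: b_def)
    finally show ?thesis .
  qed
  have "Ev n (As @ Bs) f = Poly_Mapping.lookup (\<Phi> (DeltaO n f)) (sqf {..<a+b})"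
    by (simp add: Ev_def ev a_def b_def)
  also have "\<dots> = (\<Sum>m\<in>Poly_Mapping.keys (DeltaO n f). Poly_Mapping.lookup (DeltaO n f) m * Poly_Mapping.lookup (\<chi> m) (sqf {..<a+b}))"
    by (simp add: \<Phi>_def mev_def lookup_sum lookup_Kc_mult)
  also have "\<dots> = ptens (Ev n As) (Ev n Bs) (DeltaO n f)"
    by (simp add: chi ptens_def mult.assoc)
  finally show ?thesis .
qed


lemma swap_inner: "(\<Sum>a\<in>A. \<Sum>b\<in>B. \<Sum>c\<in>C. f a b c) = (\<Sum>a\<in>A. \<Sum>c\<in>C. \<Sum>b\<in>B. f a b c)"
  by (rule sum.cong[OF refl], rule sum.swap)

lemma swap_outer: "(\<Sum>a\<in>A. \<Sum>b\<in>B. \<Sum>c\<in>C. f a b c) = (\<Sum>c\<in>C. \<Sum>b\<in>B. \<Sum>a\<in>A. f a b c)"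
proof -
  have "(\<Sum>a\<in>A. \<Sum>b\<in>B. \<Sum>c\<in>C. f a b c) = (\<Sum>a\<in>A. \<Sum>c\<in>C. \<Sum>b\<in>B. f a b c)" by (rule swap_inner)
  also have "\<dots> = (\<Sum>c\<in>C. \<Sum>a\<in>A. \<Sum>b\<in>B. f a b c)" by (rule sum.swap)
  also have "\<dots> = (\<Sum>c\<in>C. \<Sum>b\<in>B. \<Sum>a\<in>A. f a b c)" by (rule sum.cong[OF refl], rule sum.swap)
  finally show ?thesis .
qed

lemma swap_first: "(\<Sum>a\<in>A. \<Sum>b\<in>B. \<Sum>c\<in>C. f a b c) = (\<Sum>b\<in>B. \<Sum>c\<in>C. \<Sum>a\<in>A. f a b c)"
proof -
  have "(\<Sum>a\<in>A. \<Sum>b\<in>B. \<Sum>c\<in>C. f a b c) = (\<Sum>b\<in>B. \<Sum>a\<in>A. \<Sum>c\<in>C. f a b c)" by (rule sum.swap)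
  also have "\<dots> = (\<Sum>b\<in>B. \<Sum>c\<in>C. \<Sum>a\<in>A. f a b c)" by (rule sum.cong[OF refl], rule sum.swap)
  finally show ?thesis .
qed

definition derivC :: "nat \<Rightarrow> (nat \<Rightarrow> nat \<Rightarrow> nat \<Rightarrow> 'k::field) \<Rightarrow> (nat \<Rightarrow> nat \<Rightarrow> 'k) \<Rightarrow> bool" where
  "derivC n C A \<longleftrightarrow> (\<forall>k<n. \<forall>l<n. \<forall>m<n.
     (\<Sum>s<n. A k s * C s l m) = (\<Sum>l'<n. C k l' m * A l' l) + (\<Sum>m'<n. C k l m' * A m' m))"

definition LR :: "nat \<Rightarrow> (nat \<Rightarrow> nat \<Rightarrow> nat \<Rightarrow> 'k::field) \<Rightarrow> (nat \<Rightarrow> nat \<Rightarrow> 'k tp) \<Rightarrow> nat \<Rightarrow> nat \<Rightarrow> nat \<Rightarrow> 'k tp" where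
  "LR n C M k i j = (\<Sum>l<n. \<Sum>m<n. Kc (C k l m) * M l i * M m j) - (\<Sum>r<n. M k r * Kc (C r i j))"

lemma sum_mid_left: "i < n \<Longrightarrow> (\<Sum>k<n. mid i k * t k) = t i"
proof -
  assume i: "i < n"
  have "(\<Sum>k<n. mid i k * t k) = (\<Sum>k<n. if i = k then t k else 0)" unfolding mid_def by (intro sum.cong) auto
  then show ?thesis using i by simp
qed

lemma sum_mid_right: "j < n \<Longrightarrow> (\<Sum>k<n. t k * mid k j) = t j"
proof -
  assume j: "j < n"
  have "(\<Sum>k<n. t k * mid k j) = (\<Sum>k<n. if k = j then t k else 0)" unfolding mid_def by (intro sum.cong) auto
  then show ?thesis using j by simp
qed

lemma Lf_mmul: "l < n \<Longrightarrow> mmul n (Lf c A) M l i = M l i + c * mmul n (\<lambda>a b. Kc (A a b)) M l i"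
  by (simp add: mmul_def Lf_def distrib_right sum.distrib sum_mid_left sum_distrib_left mult.assoc)

lemma LR_deriv:
  fixes M :: "nat \<Rightarrow> nat \<Rightarrow> 'k::field tp" and C :: "nat \<Rightarrow> nat \<Rightarrow> nat \<Rightarrow> 'k"
  assumes d: "derivC n C A" and k: "k < n" and i: "i < n" and j: "j < n"
  defines "D \<equiv> mmul n (\<lambda>a b. Kc (A a b)) M"
  shows "(\<Sum>l<n. \<Sum>m<n. Kc (C k l m) * D l i * M m j) + (\<Sum>l<n. \<Sum>m<n. Kc (C k l m) * M l i * D m j)
         - (\<Sum>r<n. D k r * Kc (C r i j)) = (\<Sum>s<n. Kc (A k s) * LR n C M s i j)"
proof -
  have e1: "(\<Sum>s<n. Kc (A k s) * (\<Sum>r<n. M s r * Kc (C r i j))) = (\<Sum>r<n. D k r * Kc (C r i j))"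
  proof -
    have "(\<Sum>r<n. D k r * Kc (C r i j)) = (\<Sum>r<n. \<Sum>s<n. Kc (A k s) * M s r * Kc (C r i j))"
      by (simp add: D_def mmul_def sum_distrib_right)
    also have "\<dots> = (\<Sum>s<n. \<Sum>r<n. Kc (A k s) * M s r * Kc (C r i j))" by (rule sum.swap)
    also have "\<dots> = (\<Sum>s<n. Kc (A k s) * (\<Sum>r<n. M s r * Kc (C r i j)))"
      by (simp add: sum_distrib_left mult.assoc)
    finally show ?thesis by simp
  qed
  have e2: "(\<Sum>s<n. Kc (A k s) * (\<Sum>l<n. \<Sum>m<n. Kc (C s l m) * M l i * M m j)) =
      (\<Sum>l<n. \<Sum>m<n. Kc (C k l m) * D l i * M m j) + (\<Sum>l<n. \<Sum>m<n. Kc (C k l m) * M l i * D m j)"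
  proof -
    have "(\<Sum>s<n. Kc (A k s) * (\<Sum>l<n. \<Sum>m<n. Kc (C s l m) * M l i * M m j))
        = (\<Sum>s<n. \<Sum>l<n. \<Sum>m<n. Kc (A k s) * Kc (C s l m) * M l i * M m j)"
      by (simp add: sum_distrib_left mult.assoc)
    also have "\<dots> = (\<Sum>l<n. \<Sum>m<n. \<Sum>s<n. Kc (A k s) * Kc (C s l m) * M l i * M m j)"
      by (rule swap_first)
    also have "\<dots> = (\<Sum>l<n. \<Sum>m<n. Kc (\<Sum>s<n. A k s * C s l m) * M l i * M m j)"
      by (simp add: Kc_sum Kc_mult sum_distrib_right)
    also have "\<dots> = (\<Sum>l<n. \<Sum>m<n. Kc ((\<Sum>l'<n. C k l' m * A l' l) + (\<Sum>m'<n. C k l m' * A m' m)) * M l i * M m j)"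
      using d k by (intro sum.cong refl) (simp add: derivC_def)
    also have "\<dots> = (\<Sum>l<n. \<Sum>m<n. \<Sum>l'<n. Kc (C k l' m) * Kc (A l' l) * M l i * M m j)
                  + (\<Sum>l<n. \<Sum>m<n. \<Sum>m'<n. Kc (C k l m') * Kc (A m' m) * M l i * M m j)"
      by (simp add: Kc_add Kc_sum Kc_mult distrib_right sum.distrib sum_distrib_right)
    also have "(\<Sum>l<n. \<Sum>m<n. \<Sum>l'<n. Kc (C k l' m) * Kc (A l' l) * M l i * M m j)
        = (\<Sum>l'<n. \<Sum>m<n. \<Sum>l<n. Kc (C k l' m) * Kc (A l' l) * M l i * M m j)"
      by (rule swap_outer)
    also have "\<dots> = (\<Sum>l<n. \<Sum>m<n. Kc (C k l m) * D l i * M m j)"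
      by (simp add: D_def mmul_def sum_distrib_left sum_distrib_right mult.assoc)
    also have "(\<Sum>l<n. \<Sum>m<n. \<Sum>m'<n. Kc (C k l m') * Kc (A m' m) * M l i * M m j)
        = (\<Sum>l<n. \<Sum>m'<n. \<Sum>m<n. Kc (C k l m') * Kc (A m' m) * M l i * M m j)"
      by (rule swap_inner)
    also have "\<dots> = (\<Sum>l<n. \<Sum>m<n. Kc (C k l m) * M l i * D m j)"
      by (simp add: D_def mmul_def sum_distrib_left sum_distrib_right mult_ac)
    finally show ?thesis .
  qed
  show ?thesis
    unfolding LR_def right_diff_distrib sum_subtractf e1 e2 ..
qed


lemma LR_step:
  fixes M :: "nat \<Rightarrow> nat \<Rightarrow> 'k::field tp" and C :: "nat \<Rightarrow> nat \<Rightarrow> nat \<Rightarrow> 'k"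
  assumes d: "derivC n C A" and k: "k < n" and i: "i < n" and j: "j < n"
    and IH: "\<And>s. s < n \<Longrightarrow> LR n C M s i j \<in> Jset" and cc: "c * c \<in> Jset"
  shows "LR n C (mmul n (Lf c A) M) k i j \<in> Jset"
proof -
  define D where "D = mmul n (\<lambda>a b. Kc (A a b)) M"
  let ?M' = "mmul n (Lf c A) M"
  have M': "\<And>l x. l < n \<Longrightarrow> ?M' l x = M l x + c * D l x" unfolding D_def by (rule Lf_mmul)
  have p: "Kc (C k l m) * ?M' l i * ?M' m j = Kc (C k l m) * M l i * M m j + c * (Kc (C k l m) * D l i * M m j)
      + c * (Kc (C k l m) * M l i * D m j) + c * c * (Kc (C k l m) * D l i * D m j)" if "l < n" "m < n" for l m
    using that by (simp add: M' algebra_simps)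
  have q: "?M' k r * Kc (C r i j) = M k r * Kc (C r i j) + c * (D k r * Kc (C r i j))" if "r < n" for r
    using k by (simp add: M' algebra_simps)
  define T1 where "T1 = (\<Sum>l<n. \<Sum>m<n. Kc (C k l m) * D l i * M m j)"
  define T2 where "T2 = (\<Sum>l<n. \<Sum>m<n. Kc (C k l m) * M l i * D m j)"
  define T3 where "T3 = (\<Sum>r<n. D k r * Kc (C r i j))"
  define Q where "Q = (\<Sum>l<n. \<Sum>m<n. Kc (C k l m) * D l i * D m j)"
  have s1: "(\<Sum>l<n. \<Sum>m<n. Kc (C k l m) * ?M' l i * ?M' m j) = (\<Sum>l<n. \<Sum>m<n. Kc (C k l m) * M l i * M m j) + c * T1 + c * T2 + c * c * Q"
  proof -
    have "(\<Sum>l<n. \<Sum>m<n. Kc (C k l m) * ?M' l i * ?M' m j) = (\<Sum>l<n. \<Sum>m<n. Kc (C k l m) * M l i * M m j + c * (Kc (C k l m) * D l i * M m j)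
      + c * (Kc (C k l m) * M l i * D m j) + c * c * (Kc (C k l m) * D l i * D m j))"
      by (intro sum.cong refl) (simp add: p)
    also have "\<dots> = (\<Sum>l<n. \<Sum>m<n. Kc (C k l m) * M l i * M m j) + c * T1 + c * T2 + c * c * Q"
      unfolding T1_def T2_def Q_def by (simp add: sum.distrib sum_distrib_left)
    finally show ?thesis .
  qed
  have s2: "(\<Sum>r<n. ?M' k r * Kc (C r i j)) = (\<Sum>r<n. M k r * Kc (C r i j)) + c * T3"
  proof -
    have "(\<Sum>r<n. ?M' k r * Kc (C r i j)) = (\<Sum>r<n. M k r * Kc (C r i j) + c * (D k r * Kc (C r i j)))"
      by (intro sum.cong refl) (simp add: q)
    also have "\<dots> = (\<Sum>r<n. M k r * Kc (C r i j)) + c * T3"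
      unfolding T3_def by (simp add: sum.distrib sum_distrib_left)
    finally show ?thesis .
  qed
  have "LR n C ?M' k i j = LR n C M k i j + c * (T1 + T2 - T3) + c * c * Q"
    unfolding LR_def s1 s2 by (simp add: algebra_simps)
  also have "T1 + T2 - T3 = (\<Sum>s<n. Kc (A k s) * LR n C M s i j)"
    unfolding T1_def T2_def T3_def D_def by (rule LR_deriv[OF d k i j])
  finally have e: "LR n C ?M' k i j = LR n C M k i j + c * (\<Sum>s<n. Kc (A k s) * LR n C M s i j) + c * c * Q" .
  show ?thesis unfolding e
    by (intro J_add J_multL J_multR J_sum IH k cc) simp
qed

lemma LR_mid:
  assumes "k < n" "i < n" "j < n"
  shows "LR n C mid k i j = 0"
proof -
  have "(\<Sum>l<n. \<Sum>m<n. Kc (C k l m) * mid l i * mid m j) = (\<Sum>l<n. Kc (C k l j) * mid l i)"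
    using assms by (intro sum.cong refl) (simp add: sum_mid_right)
  also have "\<dots> = Kc (C k i j)" using assms by (simp add: sum_mid_right)
  finally show ?thesis using assms by (simp add: LR_def sum_mid_left)
qed

lemma Mq_LR:
  assumes "\<And>c A. (c, A) \<in> set L \<Longrightarrow> derivC n C A \<and> c * c \<in> Jset"
  shows "k < n \<Longrightarrow> i < n \<Longrightarrow> j < n \<Longrightarrow> LR n C (Mq n L) k i j \<in> Jset"
  using assms
proof (induction L arbitrary: k i j)
  case Nil then show ?case by (simp add: LR_mid)
next
  case (Cons x L)
  obtain c A where x: "x = (c, A)" by (cases x)
  have h: "derivC n C A" "c * c \<in> Jset" using Cons.prems(4)[of c A] x by auto
  have "LR n C (mmul n (Lf c A) (Mq n L)) k i j \<in> Jset"
  proof (rule LR_step[OF h(1) Cons.prems(1-3) _ h(2)])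
    fix s assume s: "s < n"
    show "LR n C (Mq n L) s i j \<in> Jset"
      by (rule Cons.IH) (use s Cons.prems in auto)
  qed
  then show ?case by (simp add: x)
qed

lemma mmul_J_mid:
  assumes X: "\<And>a b. a < n \<Longrightarrow> b < n \<Longrightarrow> X a b - Y a b \<in> Jset"
  shows "mmul n P (mmul n X Q) i j - mmul n P (mmul n Y Q) i j \<in> Jset"
proof -
  have "mmul n P (mmul n X Q) i j - mmul n P (mmul n Y Q) i j = (\<Sum>k<n. P i k * (\<Sum>l<n. (X k l - Y k l) * Q l j))"
    unfolding mmul_def by (simp add: left_diff_distrib right_diff_distrib sum_subtractf)
  also have "\<dots> \<in> Jset" using X by (intro J_sum J_multL J_multR) auto
  finally show ?thesis .
qed

lemma LfLg:
  assumes i: "i < n" and j: "j < n"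
  shows "mmul n (Lf c A) (Lg c A) i j = mid i j - c * c * (\<Sum>k<n. Kc (A i k) * Kc (A k j))"
proof -
  have "mmul n (Lf c A) (Lg c A) i j = (\<Sum>k<n. mid i k * (mid k j - c * Kc (A k j))) + (\<Sum>k<n. c * Kc (A i k) * mid k j)
       - (\<Sum>k<n. c * c * (Kc (A i k) * Kc (A k j)))"
    unfolding mmul_def Lf_def Lg_def by (simp add: algebra_simps sum.distrib sum_subtractf)
  also have "\<dots> = mid i j - c * c * (\<Sum>k<n. Kc (A i k) * Kc (A k j))"
    using i j by (simp add: sum_mid_left sum_mid_right sum_distrib_left)
  finally show ?thesis .
qed

lemma LgLf:
  assumes i: "i < n" and j: "j < n"
  shows "mmul n (Lg c A) (Lf c A) i j = mid i j - c * c * (\<Sum>k<n. Kc (A i k) * Kc (A k j))"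
proof -
  have "mmul n (Lg c A) (Lf c A) i j = (\<Sum>k<n. mid i k * (mid k j + c * Kc (A k j))) - (\<Sum>k<n. c * Kc (A i k) * mid k j)
       - (\<Sum>k<n. c * c * (Kc (A i k) * Kc (A k j)))"
    unfolding mmul_def Lf_def Lg_def by (simp add: algebra_simps sum.distrib sum_subtractf)
  also have "\<dots> = mid i j - c * c * (\<Sum>k<n. Kc (A i k) * Kc (A k j))"
    using i j by (simp add: sum_mid_left sum_mid_right sum_distrib_left)
  finally show ?thesis .
qed

lemma MN_J:
  assumes "\<And>c A. (c, A) \<in> set L \<Longrightarrow> c * c \<in> Jset"
  shows "i < n \<Longrightarrow> j < n \<Longrightarrow> mmul n (Mq n L) (Nq n L) i j - mid i j \<in> Jset \<and> mmul n (Nq n L) (Mq n L) i j - mid i j \<in> Jset"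
  using assms
proof (induction L arbitrary: i j)
  case Nil then show ?case by (simp add: mmul_mid_left)
next
  case (Cons x L)
  obtain c A where x: "x = (c, A)" by (cases x)
  have cc: "c * c \<in> Jset" using Cons.prems(3)[of c A] x by auto
  have IH: "\<And>a b. a < n \<Longrightarrow> b < n \<Longrightarrow> mmul n (Mq n L) (Nq n L) a b - mid a b \<in> Jset \<and> mmul n (Nq n L) (Mq n L) a b - mid a b \<in> Jset"
    using Cons by auto
  have "mmul n (mmul n (Lf c A) (Mq n L)) (mmul n (Nq n L) (Lg c A)) i j
       = mmul n (Lf c A) (mmul n (mmul n (Mq n L) (Nq n L)) (Lg c A)) i j"
    by (simp add: mmul_assoc)
  moreover have "mmul n (Lf c A) (mmul n (mmul n (Mq n L) (Nq n L)) (Lg c A)) i j - mmul n (Lf c A) (mmul n mid (Lg c A)) i j \<in> Jset"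
    by (rule mmul_J_mid) (use IH in auto)
  moreover have "mmul n (Lf c A) (mmul n mid (Lg c A)) i j = mmul n (Lf c A) (Lg c A) i j"
    by (intro mmul_cong refl) (simp add: mmul_mid_left)
  moreover have "mmul n (Lf c A) (Lg c A) i j - mid i j \<in> Jset"
    using Cons.prems(1,2) cc by (simp add: LfLg J_uminus J_multR)
  ultimately have 1: "mmul n (Mq n (x # L)) (Nq n (x # L)) i j - mid i j \<in> Jset"
    using J_add by (fastforce simp: x)
  have "mmul n (mmul n (Nq n L) (Lg c A)) (mmul n (Lf c A) (Mq n L)) i j
       = mmul n (Nq n L) (mmul n (mmul n (Lg c A) (Lf c A)) (Mq n L)) i j"
    by (simp add: mmul_assoc)
  moreover have "mmul n (Nq n L) (mmul n (mmul n (Lg c A) (Lf c A)) (Mq n L)) i j - mmul n (Nq n L) (mmul n mid (Mq n L)) i j \<in> Jset"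
    by (rule mmul_J_mid) (use cc in \<open>auto simp: LgLf J_uminus J_multR\<close>)
  moreover have "mmul n (Nq n L) (mmul n mid (Mq n L)) i j = mmul n (Nq n L) (Mq n L) i j"
    by (intro mmul_cong refl) (simp add: mmul_mid_left)
  moreover have "mmul n (Nq n L) (Mq n L) i j - mid i j \<in> Jset"
    using IH Cons.prems(1,2) by auto
  ultimately have 2: "mmul n (Nq n (x # L)) (Mq n (x # L)) i j - mid i j \<in> Jset"
    using J_add by (fastforce simp: x)
  show ?case using 1 2 by simp
qed


definition rho :: "nat \<Rightarrow> (nat \<Rightarrow> nat \<Rightarrow> nat \<Rightarrow> 'k::field) \<Rightarrow> nat \<Rightarrow> nat \<Rightarrow> nat \<Rightarrow> 'k" where
  "rho n C k = (\<lambda>i j. if i < n \<and> j < n \<and> k < n then - C i j k else 0)"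

definition EP :: "nat \<Rightarrow> (nat \<Rightarrow> nat \<Rightarrow> nat \<Rightarrow> 'k::field) \<Rightarrow> 'k tens \<Rightarrow> 'k coord \<Rightarrow> 'k" where
  "EP n C u f = (\<Sum>w\<in>Poly_Mapping.keys u. Poly_Mapping.lookup u w * Ev n (map (rho n C) w) f)"

lemma EP_superset: "finite A \<Longrightarrow> Poly_Mapping.keys u \<subseteq> A \<Longrightarrow> EP n C u f = (\<Sum>w\<in>A. Poly_Mapping.lookup u w * Ev n (map (rho n C) w) f)"
  unfolding EP_def by (rule sum.mono_neutral_left) (auto simp: in_keys_iff)

lemma EP_add: "EP n C (u + v) f = EP n C u f + EP n C v f"
proof -
  let ?A = "Poly_Mapping.keys u \<union> Poly_Mapping.keys v"
  have "EP n C (u + v) f = (\<Sum>w\<in>?A. Poly_Mapping.lookup (u + v) w * Ev n (map (rho n C) w) f)"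
    using keys_add[of u v] by (intro EP_superset) auto
  also have "\<dots> = (\<Sum>w\<in>?A. Poly_Mapping.lookup u w * Ev n (map (rho n C) w) f) + (\<Sum>w\<in>?A. Poly_Mapping.lookup v w * Ev n (map (rho n C) w) f)"
    by (simp add: lookup_add distrib_right sum.distrib)
  also have "\<dots> = EP n C u f + EP n C v f"
    by (subst (1 2) EP_superset[symmetric]) auto
  finally show ?thesis .
qed

lemma EP_zero[simp]: "EP n C 0 f = 0" by (simp add: EP_def)

lemma EP_diff: "EP n C (u - v) f = EP n C u f - EP n C v f"
  using EP_add[of n C "u - v" v f] by simp

lemma EP_sum: "EP n C (sum F A) f = (\<Sum>a\<in>A. EP n C (F a) f)"
  by (induction A rule: infinite_finite_induct) (auto simp: EP_add)

lemma EP_single: "EP n C (Poly_Mapping.single w c) f = c * Ev n (map (rho n C) w) f"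
  by (simp add: EP_def)

lemma EP_tword: "EP n C (tword w) f = Ev n (map (rho n C) w) f"
  by (simp add: tword_def EP_single)

lemma lookup_tsmult: "Poly_Mapping.lookup (tsmult c u) w = c * Poly_Mapping.lookup u w"
  by (simp add: tsmult_def Poly_Mapping.map.rep_eq when_def)

lemma keys_tsmult: "Poly_Mapping.keys (tsmult c u) \<subseteq> Poly_Mapping.keys u"
  by (auto simp: in_keys_iff lookup_tsmult)

lemma EP_tsmult: "EP n C (tsmult c u) f = c * EP n C u f"
proof -
  have "EP n C (tsmult c u) f = (\<Sum>w\<in>Poly_Mapping.keys u. Poly_Mapping.lookup (tsmult c u) w * Ev n (map (rho n C) w) f)"
    by (rule EP_superset) (auto simp: keys_tsmult)
  then show ?thesis by (simp add: lookup_tsmult EP_def sum_distrib_left mult.assoc)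
qed

lemma Ev_add: "Ev n As (f + g) = Ev n As f + Ev n As g"
  by (simp add: Ev_def rhom_add[OF rhom_evq] lookup_add)

lemma EP_fadd: "EP n C u (f + g) = EP n C u f + EP n C u g"
  by (simp add: EP_def Ev_add distrib_left sum.distrib)

lemma csmult_eq: "csmult c f = cconst c * f"
  by (simp add: csmult_def cconst_def mult_map_scale_conv_mult)

lemma Ev_csmult: "Ev n As (csmult c f) = c * Ev n As f"
  by (simp add: Ev_def csmult_eq rhom_mult[OF rhom_evq] evq_cconst lookup_Kc_mult)

lemma EP_csmult: "EP n C u (csmult c f) = c * EP n C u f"
  by (simp add: EP_def Ev_csmult sum_distrib_left mult_ac)

lemma Ev_cconst_mult: "Ev n As (cconst c * f) = c * Ev n As f"
  using Ev_csmult by (simp add: csmult_eq)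

lemma Ev_one: "Ev n As 1 = (if As = [] then 1 else 0)"
proof -
  have "evq n (stdL As) 1 = 1" by (rule rhom_one[OF rhom_evq])
  moreover have "sqf {..<length As} = 0 \<longleftrightarrow> As = []"
  proof (cases As)
    case Nil then show ?thesis by (simp add: sqf_def)
  next
    case (Cons a as)
    then have "Poly_Mapping.lookup (sqf {..<length As}) 0 = 1" by (simp add: lookup_sqf)
    then show ?thesis using Cons by auto
  qed
  ultimately show ?thesis
    by (simp add: Ev_def lookup_one when_def)
qed

lemma EP_one: "EP n C u 1 = epsU u"
proof -
  have "EP n C u 1 = (\<Sum>w\<in>Poly_Mapping.keys u. if w = [] then Poly_Mapping.lookup u w else 0)"
    unfolding EP_def by (intro sum.cong refl) (simp add: Ev_one)
  also have "\<dots> = epsU u" by (simp add: epsU_def in_keys_iff)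
  finally show ?thesis .
qed

lemma EP_fmult: "EP n C u (f * g) = pair_DeltaU (EP n C) u f g"
  unfolding pair_DeltaU_def EP_tword
  by (simp add: EP_def Ev_mult nths_map)

lemma tmul_sum: "tmul u v = (\<Sum>a\<in>Poly_Mapping.keys u. \<Sum>b\<in>Poly_Mapping.keys v. Poly_Mapping.single (a @ b) (Poly_Mapping.lookup u a * Poly_Mapping.lookup v b))"
  by (simp add: tmul_def)

lemma EP_tmul: "EP n C (tmul u v) f = pair_tensor (EP n C) u v (DeltaO n f)"
proof -
  let ?F = "DeltaO n f"
  let ?E = "\<lambda>w g. Ev n (map (rho n C) w) g"
  have "EP n C (tmul u v) f = (\<Sum>a\<in>Poly_Mapping.keys u. \<Sum>b\<in>Poly_Mapping.keys v.
      Poly_Mapping.lookup u a * Poly_Mapping.lookup v b * ?E (a @ b) f)"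
    by (simp add: tmul_sum EP_sum EP_single)
  also have "\<dots> = (\<Sum>a\<in>Poly_Mapping.keys u. \<Sum>b\<in>Poly_Mapping.keys v. \<Sum>m\<in>Poly_Mapping.keys ?F.
      Poly_Mapping.lookup u a * Poly_Mapping.lookup v b * (Poly_Mapping.lookup ?F m *
        ?E a (Poly_Mapping.single (fst m) 1) * ?E b (Poly_Mapping.single (snd m) 1)))"
    by (simp add: Ev_append ptens_def sum_distrib_left)
  also have "\<dots> = (\<Sum>m\<in>Poly_Mapping.keys ?F. \<Sum>a\<in>Poly_Mapping.keys u. \<Sum>b\<in>Poly_Mapping.keys v.
      Poly_Mapping.lookup u a * Poly_Mapping.lookup v b * (Poly_Mapping.lookup ?F m *
        ?E a (Poly_Mapping.single (fst m) 1) * ?E b (Poly_Mapping.single (snd m) 1)))"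
    by (rule swap_outer[THEN trans], rule sum.cong[OF refl], rule sum.swap)
  also have "\<dots> = pair_tensor (EP n C) u v ?F"
    unfolding pair_tensor_def EP_def
    by (intro sum.cong refl) (simp add: sum_distrib_left sum_distrib_right mult_ac)
  finally show ?thesis .
qed


definition ev1 :: "nat \<Rightarrow> nat \<Rightarrow> 'k::field" where "ev1 a = (\<lambda>i. if i = a then 1 else 0)"

lemma sum_ind_left: "(\<Sum>j<(n::nat). (if j = a then 1 else 0) * f j) = (if a < n then f a else (0::'a::comm_ring_1))"
proof -
  have "(\<Sum>j<n. (if j = a then 1 else 0) * f j) = (\<Sum>j<n. if j = a then f j else 0)" by (intro sum.cong) auto
  then show ?thesis by simp
qed

lemma brk_ev1_right: "b < n \<Longrightarrow> brk n C x (ev1 b) i = (if i < n then \<Sum>j<n. x j * C i j b else 0)"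
proof -
  assume b: "b < n"
  have "(\<Sum>k<n. x j * ev1 b k * C i j k) = x j * C i j b" for j
  proof -
    have "(\<Sum>k<n. x j * ev1 b k * C i j k) = (\<Sum>k<n. if k = b then x j * C i j k else 0)"
      by (intro sum.cong) (auto simp: ev1_def)
    then show ?thesis using b by simp
  qed
  then show ?thesis by (simp add: brk_def)
qed

lemma brk_ev1_left: "a < n \<Longrightarrow> brk n C (ev1 a) y i = (if i < n then \<Sum>k<n. y k * C i a k else 0)"
proof -
  assume a: "a < n"
  have "(\<Sum>j<n. \<Sum>k<n. ev1 a j * y k * C i j k) = (\<Sum>j<n. if j = a then (\<Sum>k<n. y k * C i j k) else 0)"
    by (intro sum.cong) (auto simp: ev1_def)
  then show ?thesis using a by (simp add: brk_def)
qed

lemma RLid: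
  assumes RL: "right_leibniz n C" and k: "k < n" and l: "l < n" and m: "m < n" and z: "z < n"
  shows "(\<Sum>s<n. C s l m * C k s z) = (\<Sum>s<n. C s l z * C k s m) + (\<Sum>s<n. C s m z * C k l s)"
proof -
  have e: "brk n C (brk n C (ev1 l) (ev1 m)) (ev1 z) k = brk n C (brk n C (ev1 l) (ev1 z)) (ev1 m) k + brk n C (ev1 l) (brk n C (ev1 m) (ev1 z)) k"
    using RL unfolding right_leibniz_def by blast
  have b: "brk n C (ev1 a) (ev1 b) = (\<lambda>i. if i < n then C i a b else 0)" if a: "a < n" and b: "b < n" for a b
  proof
    fix i
    show "brk n C (ev1 a) (ev1 b) i = (if i < n then C i a b else 0)"
      using brk_ev1_right[OF b, of C "ev1 a" i] sum_ind_left[where n=n and a=a and f="\<lambda>j. C i j b"] a by (simp add: ev1_def)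
  qed
  have s: "(\<Sum>j<n. (if j < n then f j else 0) * g j) = (\<Sum>j<n. f j * g j)" for f g :: "nat \<Rightarrow> 'a"
    by (intro sum.cong) auto
  have 1: "brk n C (brk n C (ev1 l) (ev1 m)) (ev1 z) k = (\<Sum>s<n. C s l m * C k s z)"
    unfolding b[OF l m] brk_ev1_right[OF z] using k s by simp
  have 2: "brk n C (brk n C (ev1 l) (ev1 z)) (ev1 m) k = (\<Sum>s<n. C s l z * C k s m)"
    unfolding b[OF l z] brk_ev1_right[OF m] using k s by simp
  have 3: "brk n C (ev1 l) (brk n C (ev1 m) (ev1 z)) k = (\<Sum>s<n. C s m z * C k l s)"
    unfolding b[OF m z] brk_ev1_left[OF l] using k s by simp
  show ?thesis using e 1 2 3 by simp
qed

lemma RL_deriv: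
  assumes RL: "right_leibniz n C"
  shows "derivC n C (rho n C z)"
proof (cases "z < n")
  case False then show ?thesis by (simp add: derivC_def rho_def)
next
  case True
  show ?thesis unfolding derivC_def
  proof (intro allI impI)
    fix k l m assume k: "k < n" and l: "l < n" and m: "m < n"
    have "(\<Sum>s<n. rho n C z k s * C s l m) = - (\<Sum>s<n. C s l m * C k s z)"
      using k True by (simp add: rho_def sum_negf mult.commute)
    moreover have "(\<Sum>l'<n. C k l' m * rho n C z l' l) = - (\<Sum>s<n. C s l z * C k s m)"
      using l True by (simp add: rho_def sum_negf mult.commute)
    moreover have "(\<Sum>m'<n. C k l m' * rho n C z m' m) = - (\<Sum>s<n. C s m z * C k l s)"
      using m True by (simp add: rho_def sum_negf mult.commute)
    ultimately show "(\<Sum>s<n. rho n C z k s * C s l m) = (\<Sum>l'<n. C k l' m * rho n C z l' l) + (\<Sum>m'<n. C k l m' * rho n C z m' m)"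
      using RLid[OF RL k l m True] by simp
  qed
qed

lemma brk_zero_right: "brk n C w (\<lambda>_. 0) = (\<lambda>_. 0)" by (simp add: brk_def fun_eq_iff)
lemma brk_zero_left: "brk n C (\<lambda>_. 0) w = (\<lambda>_. 0)" by (simp add: brk_def fun_eq_iff)
lemma brk_add_right: "brk n C w (\<lambda>i. v i + v' i) i = brk n C w v i + brk n C w v' i"
  by (simp add: brk_def algebra_simps sum.distrib)
lemma brk_smult_right: "brk n C w (\<lambda>i. c * v i) i = c * brk n C w v i"
  by (simp add: brk_def algebra_simps sum_distrib_left)

lemma leib_kill:
  assumes RL: "right_leibniz n C" and v: "v \<in> leib_ideal n C"
  shows "brk n C w v = (\<lambda>_. 0)"
  using v
proof (induction arbitrary: w)
  case (sq x)
  have "brk n C (brk n C w x) x i = brk n C (brk n C w x) x i + brk n C w (brk n C x x) i" for i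
    using RL unfolding right_leibniz_def by blast
  then show ?case by (simp add: fun_eq_iff)
next
  case zero then show ?case by (rule brk_zero_right)
next
  case (add v v') then show ?case by (simp add: fun_eq_iff brk_add_right)
next
  case (smult v c) then show ?case by (simp add: fun_eq_iff brk_smult_right)
next
  case (brk_left v x)
  have "brk n C (brk n C w x) v i = brk n C (brk n C w v) x i + brk n C w (brk n C x v) i" for i
    using RL unfolding right_leibniz_def by blast
  then show ?case using brk_left.IH by (simp add: fun_eq_iff brk_zero_left)
next
  case (brk_right v x)
  have "brk n C (brk n C w v) x i = brk n C (brk n C w x) v i + brk n C w (brk n C v x) i" for i
    using RL unfolding right_leibniz_def by blast
  then show ?case using brk_right.IH by (simp add: fun_eq_iff brk_zero_left)
qed

lemma leib_sum_zero:
  assumes RL: "right_leibniz n C" and v: "v \<in> leib_ideal n C" and i: "i < n" and j: "j < n"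
  shows "(\<Sum>c<n. v c * C i j c) = 0"
  using fun_cong[OF leib_kill[OF RL v, of "ev1 j"], of i] i j by (simp add: brk_ev1_left)


lemma stdL_1: "stdL [A] = [(Xv 0, A)]" by (simp add: stdL_def)
lemma stdL_0: "stdL [] = []" by (simp add: stdL_def)
lemma sqf_1: "sqf {..<Suc 0} = Poly_Mapping.single 0 1"
  by (simp add: sqf_def lessThan_Suc)
lemma sqf_0: "sqf {} = 0" by (simp add: sqf_def)

lemma Ev_0: "Ev n [] f = Poly_Mapping.lookup (evq n [] f) 0"
  by (simp add: Ev_def stdL_0 sqf_0)

lemma Ev_1: "Ev n [A] f = Poly_Mapping.lookup (evq n [(Xv 0, A)] f) (Poly_Mapping.single 0 1)"
  by (simp add: Ev_def stdL_1 sqf_1)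

lemma lookup_mid_ne: "m \<noteq> 0 \<Longrightarrow> Poly_Mapping.lookup (mid i j :: 'k::field tp) m = 0"
  by (simp add: mid_def lookup_one when_def)

lemma lookup_Xv0_Kc: "Poly_Mapping.lookup (Xv 0 * Kc a :: 'k::field tp) (Poly_Mapping.single 0 1) = a"
proof -
  have "Poly_Mapping.lookup (Kc a * Xv 0 :: 'k tp) (Poly_Mapping.single 0 1) = a"
    by (simp add: lookup_Kc_mult Xv_def)
  then show ?thesis by (simp add: mult.commute)
qed

lemma single_Suc0_nz: "Poly_Mapping.single (0::nat) (Suc 0) \<noteq> 0"
proof
  assume "Poly_Mapping.single (0::nat) (Suc 0) = 0"
  then have "Poly_Mapping.lookup (Poly_Mapping.single (0::nat) (Suc 0)) 0 = Poly_Mapping.lookup 0 0" by simp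
  then show False by simp
qed

lemma lookup_mid_1: "Poly_Mapping.lookup (mid i j :: 'k::field tp) (Poly_Mapping.single 0 (Suc 0)) = 0"
  by (rule lookup_mid_ne) (rule single_Suc0_nz)

lemmas lookup_Xv0_Kc' = lookup_Xv0_Kc[simplified]

lemma Ev1_Gv: "Ev n [A] (cvar (Gv i j)) = (if i < n \<and> j < n then A i j else 0)"
proof -
  have "i < n \<Longrightarrow> j < n \<Longrightarrow> Mq n [(Xv 0, A)] i j = mid i j + Xv 0 * Kc (A i j)"
    by (simp add: mmul_mid_right Lf_def)
  then show ?thesis
    by (simp add: Ev_1 evq_cvar lookup_add lookup_mid_1 lookup_Xv0_Kc' del: Mq.simps)
qed

lemma Ev1_Gbv: "Ev n [A] (cvar (Gbv i j)) = (if i < n \<and> j < n then - A i j else 0)"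
proof -
  have "i < n \<Longrightarrow> j < n \<Longrightarrow> Nq n [(Xv 0, A)] i j = mid i j - Xv 0 * Kc (A i j)"
    by (simp add: mmul_mid_left Lg_def)
  then show ?thesis
    by (simp add: Ev_1 evq_cvar lookup_minus lookup_mid_1 lookup_Xv0_Kc' del: Nq.simps)
qed

lemma Ev0_Gv: "Ev n [] (cvar (Gv i j)) = (if i < n \<and> j < n then (if i = j then 1 else 0) else 0)"
  by (simp add: Ev_0 evq_cvar mid_def)

lemma Ev0_Gbv: "Ev n [] (cvar (Gbv i j)) = (if i < n \<and> j < n then (if i = j then 1 else 0) else 0)"
  by (simp add: Ev_0 evq_cvar mid_def)

lemma ptens_superset: "finite A \<Longrightarrow> Poly_Mapping.keys F \<subseteq> A \<Longrightarrow> ptens \<alpha> \<beta> F = (\<Sum>m\<in>A. Poly_Mapping.lookup F m * \<alpha> (Poly_Mapping.single (fst m) 1) * \<beta> (Poly_Mapping.single (snd m) 1))"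
  unfolding ptens_def by (rule sum.mono_neutral_left) (auto simp: in_keys_iff)

lemma ptens_add: "ptens \<alpha> \<beta> (F + G) = ptens \<alpha> \<beta> F + ptens \<alpha> \<beta> G"
proof -
  let ?A = "Poly_Mapping.keys F \<union> Poly_Mapping.keys G"
  have "ptens \<alpha> \<beta> (F + G) = (\<Sum>m\<in>?A. Poly_Mapping.lookup (F + G) m * \<alpha> (Poly_Mapping.single (fst m) 1) * \<beta> (Poly_Mapping.single (snd m) 1))"
    using keys_add[of F G] by (intro ptens_superset) auto
  also have "\<dots> = (\<Sum>m\<in>?A. Poly_Mapping.lookup F m * \<alpha> (Poly_Mapping.single (fst m) 1) * \<beta> (Poly_Mapping.single (snd m) 1))
     + (\<Sum>m\<in>?A. Poly_Mapping.lookup G m * \<alpha> (Poly_Mapping.single (fst m) 1) * \<beta> (Poly_Mapping.single (snd m) 1))"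
    by (simp add: lookup_add distrib_right sum.distrib)
  also have "\<dots> = ptens \<alpha> \<beta> F + ptens \<alpha> \<beta> G"
    by (subst (1 2) ptens_superset[symmetric]) auto
  finally show ?thesis .
qed

lemma ptens_zero[simp]: "ptens \<alpha> \<beta> 0 = 0" by (simp add: ptens_def)

lemma ptens_sum: "ptens \<alpha> \<beta> (sum F A) = (\<Sum>a\<in>A. ptens \<alpha> \<beta> (F a))"
  by (induction A rule: infinite_finite_induct) (auto simp: ptens_add)

lemma ptens_single: "ptens \<alpha> \<beta> (Poly_Mapping.single m c) = c * \<alpha> (Poly_Mapping.single (fst m) 1) * \<beta> (Poly_Mapping.single (snd m) 1)"
  by (simp add: ptens_def)

lemma cvarLR: "cvarL x * cvarR y = (Poly_Mapping.single (Poly_Mapping.single x 1, Poly_Mapping.single y 1) 1 :: 'k::field coord2)"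
  by (simp add: cvarL_def cvarR_def mult_single)

lemma ptens_LR: "ptens \<alpha> \<beta> (cvarL x * cvarR y) = \<alpha> (cvar x) * \<beta> (cvar y)"
  by (simp only: cvarLR ptens_single cvar_def) simp

lemma DeltaO_cvar: "DeltaO n (cvar x) = DeltaO_var n x"
  unfolding DeltaO_def cvar_def by (rule psubst_var[OF rhom_const])

lemma Ev2_Gv: "Ev n [A, B] (cvar (Gv i j)) = (if i < n \<and> j < n then (\<Sum>k<n. A i k * B k j) else 0)"
proof -
  have "Ev n [A, B] (cvar (Gv i j)) = (\<Sum>k<n. Ev n [A] (cvar (Gv i k)) * Ev n [B] (cvar (Gv k j)))"
    using Ev_append[of n "[A]" "[B]"] by (simp add: DeltaO_cvar ptens_sum ptens_LR)
  then show ?thesis by (cases "i < n \<and> j < n") (auto simp: Ev1_Gv)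
qed

lemma Ev2_Gbv: "Ev n [A, B] (cvar (Gbv i j)) = (if i < n \<and> j < n then (\<Sum>k<n. B i k * A k j) else 0)"
proof -
  have "Ev n [A, B] (cvar (Gbv i j)) = (\<Sum>k<n. Ev n [A] (cvar (Gbv k j)) * Ev n [B] (cvar (Gbv i k)))"
    using Ev_append[of n "[A]" "[B]"] by (simp add: DeltaO_cvar ptens_sum ptens_LR)
  then show ?thesis by (cases "i < n \<and> j < n") (auto simp: Ev1_Gbv mult.commute)
qed

lemma Ev_mult1: "Ev n [A] (f * g) = Ev n [A] f * Ev n [] g + Ev n [] f * Ev n [A] g"
proof -
  have "Pow {..<length [A]} = {{}, {0}}" by (auto simp: lessThan_Suc)
  then show ?thesis by (simp add: Ev_mult lessThan_Suc add.commute)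
qed

lemma Ev_mult2: "Ev n [A, B] (f * g) = Ev n [] f * Ev n [A, B] g + Ev n [A] f * Ev n [B] g + Ev n [B] f * Ev n [A] g + Ev n [A, B] f * Ev n [] g"
proof -
  have l: "{..<length [A, B]} = {0, 1}" by auto
  have P: "Pow {0::nat, 1} = {{}, {0}, {1}, {0, 1}}" by (auto simp: Pow_insert)
  have d: "{0::nat, Suc 0} - {0} = {Suc 0}" "{0::nat, Suc 0} - {Suc 0} = {0}" "{0::nat, Suc 0} - {0, Suc 0} = {}" by auto
  have n: "nths [A, B] {0::nat, Suc 0} = [A, B]" "nths [A, B] {Suc 0} = [B]" "nths [A, B] {0} = [A]"
    by (simp_all add: nths_Cons)
  show ?thesis unfolding Ev_mult l P
    by (simp add: d n algebra_simps)
qed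


section \<open>The ideal of O(Aut h) is killed\<close>

lemma stdL_set: "(c, A) \<in> set (stdL As) \<Longrightarrow> (\<exists>p. c = Xv p) \<and> A \<in> set As"
proof -
  assume h: "(c, A) \<in> set (stdL As)"
  then have "c \<in> set (map Xv [0..<length As])" "A \<in> set As"
    unfolding stdL_def by (auto dest: set_zip_leftD set_zip_rightD)
  then show ?thesis by auto
qed

lemma stdL_cc: "(c, A) \<in> set (stdL As) \<Longrightarrow> c * c \<in> Jset"
  using stdL_set[of c A As] XX_J by auto

lemma evq_Orel:
  assumes s: "s \<in> O_rel n C" and d: "\<And>A. A \<in> set As \<Longrightarrow> derivC n C A"
  shows "evq n (stdL As) s \<in> Jset"
proof -
  let ?L = "stdL As"
  have hL: "\<And>c A. (c, A) \<in> set ?L \<Longrightarrow> derivC n C A \<and> c * c \<in> Jset"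
    using stdL_set stdL_cc d by blast
  have hL2: "\<And>c A. (c, A) \<in> set ?L \<Longrightarrow> c * c \<in> Jset" using stdL_cc by blast
  note ev = rhom_diff[OF rhom_evq] rhom_sum[OF rhom_evq] rhom_mult[OF rhom_evq] evq_cvar evq_cconst
  from s consider
    (a) i j k where "i < n" "j < n" "k < n" "s = (\<Sum>l<n. \<Sum>m<n. cconst (C k l m) * cvar (Gv l i) * cvar (Gv m j))
        - (\<Sum>r<n. cvar (Gv k r) * cconst (C r i j))"
  | (b) i j where "i < n" "j < n" "s = (\<Sum>k<n. cvar (Gv i k) * cvar (Gbv k j)) - cconst (if i = j then 1 else 0)"
  | (c) i j where "i < n" "j < n" "s = (\<Sum>k<n. cvar (Gbv i k) * cvar (Gv k j)) - cconst (if i = j then 1 else 0)"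
    unfolding O_rel_def by blast
  then show ?thesis
  proof cases
    case a
    have "evq n ?L s = (\<Sum>l<n. \<Sum>m<n. Kc (C k l m) * sig n ?L (Gv l i) * sig n ?L (Gv m j)) - (\<Sum>r<n. sig n ?L (Gv k r) * Kc (C r i j))"
      by (simp add: a(4) ev)
    also have "\<dots> = LR n C (Mq n ?L) k i j"
      unfolding LR_def using a(1-3) by (intro arg_cong2[where f=minus] sum.cong refl) (auto simp del: Mq.simps)
    finally show ?thesis using Mq_LR[OF hL] a(1-3) by simp
  next
    case b
    have "evq n ?L s = (\<Sum>k<n. sig n ?L (Gv i k) * sig n ?L (Gbv k j)) - Kc (if i = j then 1 else 0)"
      by (simp add: b(3) ev)
    also have "\<dots> = mmul n (Mq n ?L) (Nq n ?L) i j - mid i j"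
      unfolding mmul_def using b(1,2) by (intro arg_cong2[where f=minus] sum.cong refl) (auto simp: mid_def simp del: Mq.simps Nq.simps)
    finally show ?thesis using MN_J[OF hL2] b(1,2) by simp
  next
    case c
    have "evq n ?L s = (\<Sum>k<n. sig n ?L (Gbv i k) * sig n ?L (Gv k j)) - Kc (if i = j then 1 else 0)"
      by (simp add: c(3) ev)
    also have "\<dots> = mmul n (Nq n ?L) (Mq n ?L) i j - mid i j"
      unfolding mmul_def using c(1,2) by (intro arg_cong2[where f=minus] sum.cong refl) (auto simp: mid_def simp del: Mq.simps Nq.simps)
    finally show ?thesis using MN_J[OF hL2] c(1,2) by simp
  qed
qed

lemma evq_Oideal:
  assumes f: "f \<in> O_ideal n C" and d: "\<And>A. A \<in> set As \<Longrightarrow> derivC n C A"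
  shows "evq n (stdL As) f \<in> Jset"
  using f unfolding O_ideal_def
proof (induction rule: cideal.induct)
  case zero then show ?case by (simp add: rhom_zero[OF rhom_evq])
next
  case (gen s a) then show ?case by (simp add: rhom_mult[OF rhom_evq] J_multL evq_Orel d)
next
  case (add f g) then show ?case by (simp add: rhom_add[OF rhom_evq] J_add)
qed

lemma EP_Oideal:
  assumes RL: "right_leibniz n C" and f: "f \<in> O_ideal n C"
  shows "EP n C u f = 0"
proof -
  have "Ev n (map (rho n C) w) f = 0" for w
    using evq_Oideal[OF f, of "map (rho n C) w"] RL_deriv[OF RL] by (auto simp: Ev_def Jset_def)
  then show ?thesis by (simp add: EP_def)
qed

lemma rhom_ct: "rhom (\<lambda>F::'k::field tp. Poly_Mapping.lookup F 0)"
proof -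
  have "Poly_Mapping.lookup (F * G) 0 = Poly_Mapping.lookup F 0 * Poly_Mapping.lookup G 0" for F G :: "'k tp"
    using coef_mult[of "{}" F G] by (simp add: sqf_0)
  then show ?thesis by (simp add: rhom_def lookup_add)
qed

lemma Ev_eps:
  assumes f: "f \<in> coord_carrier n"
  shows "Ev n [] f = epsO f"
proof -
  have "Ev n [] f = psubst ((\<lambda>F. Poly_Mapping.lookup F 0) \<circ> Kc) ((\<lambda>F. Poly_Mapping.lookup F 0) \<circ> sig n []) f"
    unfolding Ev_0 evq_def by (rule psubst_comp[OF rhom_ct rhom_Kc])
  also have "\<dots> = psubst id epsO_var f"
  proof -
    have "((\<lambda>F. Poly_Mapping.lookup F 0) \<circ> Kc) = (id :: 'a \<Rightarrow> 'a)" by (simp add: fun_eq_iff Kc_def)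
    moreover have "psubst id ((\<lambda>F. Poly_Mapping.lookup F 0) \<circ> sig n []) f = psubst id epsO_var f"
    proof (rule psubst_cong)
      fix m x assume "m \<in> Poly_Mapping.keys f" "x \<in> Poly_Mapping.keys m"
      then have "gidx_ok n x" using f by (auto simp: coord_carrier_def)
      then show "((\<lambda>F. Poly_Mapping.lookup F 0) \<circ> sig n []) x = epsO_var x"
        by (cases x) (auto simp: mid_def)
    qed
    ultimately show ?thesis by simp
  qed
  finally show ?thesis by (simp add: epsO_def)
qed


section \<open>The ideal of U is killed\<close>

lemma EP_tlin: "EP n C (tlin n v) h = (\<Sum>i<n. v i * Ev n [rho n C i] h)"
  by (simp add: tlin_def EP_sum EP_single)

lemma EP_sab: "EP n C (tword [a, b] - tword [b, a] - tlin n (\<lambda>i. C i a b)) h =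
   Ev n [rho n C a, rho n C b] h - Ev n [rho n C b, rho n C a] h - (\<Sum>i<n. C i a b * Ev n [rho n C i] h)"
  by (simp add: EP_diff EP_tword EP_tlin)

definition prim :: "nat \<Rightarrow> (nat \<Rightarrow> nat \<Rightarrow> nat \<Rightarrow> 'k::field) \<Rightarrow> 'k tens \<Rightarrow> bool" where
  "prim n C s \<longleftrightarrow> (\<forall>f g. EP n C s (f * g) = EP n C s f * Ev n [] g + Ev n [] f * EP n C s g) \<and> EP n C s 1 = 0
     \<and> (\<forall>x. EP n C s (cvar x) = 0)"

lemma prim_kill:
  assumes p: "prim n C s"
  shows "EP n C s h = 0"
proof -
  let ?R = "{h. EP n C s h = 0}"
  have z: "EP n C s 0 = 0" by (simp add: EP_def Ev_def rhom_zero[OF rhom_evq])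
  have sr: "subring ?R"
    unfolding subring_def using p z by (auto simp: prim_def EP_fadd)
  have c: "EP n C s (cconst c) = 0" for c
    using EP_csmult[of n C s c 1] p by (simp add: csmult_eq prim_def)
  have "psubst (\<lambda>c. Poly_Mapping.single 0 c) (\<lambda>x. Poly_Mapping.single (Poly_Mapping.single x 1) 1) h \<in> ?R"
  proof (rule psubst_subring[OF sr])
    fix c show "Poly_Mapping.single 0 c \<in> ?R" using c[of c] by (simp add: cconst_def)
  next
    fix m x show "Poly_Mapping.single (Poly_Mapping.single x 1) 1 \<in> ?R" using p unfolding prim_def cvar_def by simp
  qed
  then show ?thesis unfolding psubst_self by simp
qed

lemma prim_sab:
  assumes RL: "right_leibniz n C" and a: "a < n" and b: "b < n"
  shows "prim n C (tword [a, b] - tword [b, a] - tlin n (\<lambda>i. C i a b))"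
proof -
  let ?s = "tword [a, b] - tword [b, a] - tlin n (\<lambda>i. C i a b)"
  let ?r = "rho n C"
  have m: "EP n C ?s (f * g) = EP n C ?s f * Ev n [] g + Ev n [] f * EP n C ?s g" for f g
    unfolding EP_sab Ev_mult1 Ev_mult2
    by (simp add: algebra_simps sum.distrib sum_distrib_left sum_subtractf)
  have o: "EP n C ?s 1 = 0" unfolding EP_sab by (simp add: Ev_one)
  have G: "EP n C ?s (cvar (Gv i j)) = 0" for i j
  proof (cases "i < n \<and> j < n")
    case True
    have 1: "(\<Sum>k<n. ?r a i k * ?r b k j) = (\<Sum>s<n. C s j b * C i s a)"
      using True a b by (intro sum.cong refl) (auto simp: rho_def mult.commute)
    have 2: "(\<Sum>k<n. ?r b i k * ?r a k j) = (\<Sum>s<n. C s j a * C i s b)"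
      using True a b by (intro sum.cong refl) (auto simp: rho_def mult.commute)
    have 3: "(\<Sum>c<n. C c a b * ?r c i j) = - (\<Sum>s<n. C s a b * C i j s)"
      using True by (simp add: rho_def sum_negf[symmetric] mult.commute)
    show ?thesis using True RLid[OF RL _ _ a b, of i j]
      by (simp add: EP_sab Ev2_Gv Ev1_Gv 1 2 3)
  next
    case False then show ?thesis by (auto simp: EP_sab Ev2_Gv Ev1_Gv)
  qed
  have Gb: "EP n C ?s (cvar (Gbv i j)) = 0" for i j
  proof (cases "i < n \<and> j < n")
    case True
    have 1: "(\<Sum>k<n. ?r b i k * ?r a k j) = (\<Sum>s<n. C s j a * C i s b)"
      using True a b by (intro sum.cong refl) (auto simp: rho_def mult.commute)
    have 2: "(\<Sum>k<n. ?r a i k * ?r b k j) = (\<Sum>s<n. C s j b * C i s a)"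
      using True a b by (intro sum.cong refl) (auto simp: rho_def mult.commute)
    have 3: "(\<Sum>c<n. C c a b * ?r c i j) = - (\<Sum>s<n. C s a b * C i j s)"
      using True by (simp add: rho_def sum_negf[symmetric] mult.commute)
    show ?thesis using True RLid[OF RL _ _ a b, of i j]
      by (simp add: EP_sab Ev2_Gbv Ev1_Gbv 1 2 3 sum_negf)
  next
    case False then show ?thesis by (auto simp: EP_sab Ev2_Gbv Ev1_Gbv)
  qed
  have "EP n C ?s (cvar x) = 0" for x using G Gb by (cases x) auto
  then show ?thesis using m o by (simp add: prim_def)
qed

lemma prim_lin:
  assumes RL: "right_leibniz n C" and v: "v \<in> leib_ideal n C"
  shows "prim n C (tlin n v)"
proof -
  have m: "EP n C (tlin n v) (f * g) = EP n C (tlin n v) f * Ev n [] g + Ev n [] f * EP n C (tlin n v) g" for f g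
    unfolding EP_tlin Ev_mult1 by (simp add: algebra_simps sum.distrib sum_distrib_left sum_distrib_right)
  have o: "EP n C (tlin n v) 1 = 0" unfolding EP_tlin by (simp add: Ev_one)
  have z: "(\<Sum>c<n. v c * C i j c) = 0" if "i < n" "j < n" for i j
    by (rule leib_sum_zero[OF RL v that])
  have "EP n C (tlin n v) (cvar x) = 0" for x
  proof (cases x)
    case (Gv i j)
    show ?thesis
    proof (cases "i < n \<and> j < n")
      case True
      have "(\<Sum>c<n. v c * (if i < n \<and> j < n then rho n C c i j else 0)) = - (\<Sum>c<n. v c * C i j c)"
        using True by (simp add: rho_def sum_negf[symmetric])
      then show ?thesis using z True Gv by (simp add: EP_tlin Ev1_Gv)
    qed (auto simp: EP_tlin Ev1_Gv Gv)
  next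
    case (Gbv i j)
    show ?thesis
    proof (cases "i < n \<and> j < n")
      case True
      have "(\<Sum>c<n. v c * (if i < n \<and> j < n then - rho n C c i j else 0)) = (\<Sum>c<n. v c * C i j c)"
        using True by (intro sum.cong refl) (simp add: rho_def)
      then show ?thesis using z True Gbv by (simp add: EP_tlin Ev1_Gbv)
    qed (auto simp: EP_tlin Ev1_Gbv Gbv)
  qed
  then show ?thesis using m o by (simp add: prim_def)
qed

lemma U_rel_kill:
  assumes RL: "right_leibniz n C" and s: "s \<in> U_rel n C"
  shows "EP n C s h = 0"
  using s prim_sab[OF RL] prim_lin[OF RL] prim_kill unfolding U_rel_def by blast

lemma EP_Uideal:
  assumes RL: "right_leibniz n C" and u: "u \<in> U_ideal n C"
  shows "EP n C u f = 0"
  using u unfolding U_ideal_def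
proof (induction arbitrary: f rule: tideal.induct)
  case zero then show ?case by simp
next
  case (gen s a b)
  have "EP n C (tmul a s) g = 0" for g
    by (simp add: EP_tmul pair_tensor_def U_rel_kill[OF RL gen(1)])
  then show ?case by (simp add: EP_tmul pair_tensor_def)
next
  case (add u v) then show ?case by (simp add: EP_add)
qed

section \<open>Existence\<close>

lemma EP_hopf:
  assumes RL: "right_leibniz n C"
  shows "hopf_pairing n C (EP n C)"
  unfolding hopf_pairing_def
  by (simp add: EP_add EP_tsmult EP_fadd EP_csmult EP_Uideal[OF RL] EP_Oideal[OF RL]
      EP_fmult EP_one EP_tmul tone_def EP_tword Ev_eps)

lemma EP_norm: "pairing_normalized n C (EP n C)"
  unfolding pairing_normalized_def by (simp add: EP_tword Ev1_Gv rho_def)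


lemma subring_cc: "subring (coord_carrier n :: 'k::field coord set)"
  unfolding subring_def
proof (intro conjI ballI)
  show "0 \<in> (coord_carrier n :: 'k coord set)" by (simp add: coord_carrier_def)
  show "1 \<in> (coord_carrier n :: 'k coord set)" by (simp add: coord_carrier_def)
  fix x y :: "'k coord" assume x: "x \<in> coord_carrier n" and y: "y \<in> coord_carrier n"
  show "x + y \<in> coord_carrier n" using x y keys_add[of x y] by (auto simp: coord_carrier_def)
  have "\<forall>z\<in>Poly_Mapping.keys m. gidx_ok n z" if mk: "m \<in> Poly_Mapping.keys (x * y)" for m
  proof -
    obtain a b where "m = a + b" "a \<in> Poly_Mapping.keys x" "b \<in> Poly_Mapping.keys y"
      using keys_mult[of x y] mk by blast
    then show ?thesis using x y keys_add[of a b] by (auto simp: coord_carrier_def)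
  qed
  then show "x * y \<in> coord_carrier n" by (auto simp: coord_carrier_def)
qed

lemma cc_add: "f \<in> coord_carrier n \<Longrightarrow> g \<in> coord_carrier n \<Longrightarrow> f + g \<in> coord_carrier n"
  using subring_cc unfolding subring_def by blast
lemma cc_mult: "f \<in> coord_carrier n \<Longrightarrow> g \<in> coord_carrier n \<Longrightarrow> f * g \<in> coord_carrier n"
  using subring_cc unfolding subring_def by blast
lemma cc_one: "1 \<in> coord_carrier n" using subring_cc unfolding subring_def by blast
lemma cc_cconst: "cconst c \<in> coord_carrier n" by (simp add: coord_carrier_def cconst_def)
lemma cc_cvar: "gidx_ok n x \<Longrightarrow> cvar x \<in> coord_carrier n" by (simp add: coord_carrier_def cvar_def)
lemma cc_uminus: "f \<in> coord_carrier n \<Longrightarrow> - f \<in> coord_carrier n" by (simp add: coord_carrier_def)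
lemma cc_diff: "f \<in> coord_carrier n \<Longrightarrow> g \<in> coord_carrier n \<Longrightarrow> f - g \<in> coord_carrier n"
  using cc_add[of f n "- g"] cc_uminus[of g n] by simp
lemma cc_sum: "(\<And>a. a \<in> A \<Longrightarrow> F a \<in> coord_carrier n) \<Longrightarrow> sum F A \<in> coord_carrier n"
  by (rule subring_sum[OF subring_cc])
lemma cc_csmult: "f \<in> coord_carrier n \<Longrightarrow> csmult c f \<in> coord_carrier n"
  by (simp add: csmult_eq cc_mult cc_cconst)

lemma poly_induct_cc[consumes 1, case_names const var add mult]:
  assumes f: "f \<in> coord_carrier n"
    and c: "\<And>c. Q (cconst c)" and v: "\<And>x. gidx_ok n x \<Longrightarrow> Q (cvar x)"
    and a: "\<And>f g. f \<in> coord_carrier n \<Longrightarrow> g \<in> coord_carrier n \<Longrightarrow> Q f \<Longrightarrow> Q g \<Longrightarrow> Q (f + g)"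
    and m: "\<And>f g. f \<in> coord_carrier n \<Longrightarrow> g \<in> coord_carrier n \<Longrightarrow> Q f \<Longrightarrow> Q g \<Longrightarrow> Q (f * g)"
  shows "Q f"
proof -
  let ?R = "{g \<in> coord_carrier n. Q g}"
  have sr: "subring ?R"
    unfolding subring_def using c[of 0] c[of 1] a m cc_add cc_mult
    by (auto simp: cconst_def cc_one intro: subring_cc[unfolded subring_def, THEN conjunct1])
  have "psubst (\<lambda>c. Poly_Mapping.single 0 c) (\<lambda>x. Poly_Mapping.single (Poly_Mapping.single x 1) 1) f \<in> ?R"
  proof (rule psubst_subring[OF sr])
    fix c show "Poly_Mapping.single 0 c \<in> ?R" using c[of c] cc_cconst[of c n] by (simp add: cconst_def)
  next
    fix m x assume "m \<in> Poly_Mapping.keys f" "x \<in> Poly_Mapping.keys m"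
    then have "gidx_ok n x" using f by (auto simp: coord_carrier_def)
    then show "Poly_Mapping.single (Poly_Mapping.single x 1) 1 \<in> ?R"
      using v[of x] cc_cvar[of n x] unfolding cvar_def by simp
  qed
  then show ?thesis unfolding psubst_self by simp
qed

definition c2ok :: "nat \<Rightarrow> 'k::field coord2 \<Rightarrow> bool" where
  "c2ok n F \<longleftrightarrow> (\<forall>m\<in>Poly_Mapping.keys F. (\<forall>x\<in>Poly_Mapping.keys (fst m). gidx_ok n x) \<and> (\<forall>x\<in>Poly_Mapping.keys (snd m). gidx_ok n x))"

lemma subring_c2ok: "subring {F :: 'k::field coord2. c2ok n F}"
  unfolding subring_def
proof (intro conjI ballI)
  show "0 \<in> {F :: 'k coord2. c2ok n F}" by (simp add: c2ok_def)
  show "1 \<in> {F :: 'k coord2. c2ok n F}" by (simp add: c2ok_def)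
  fix x y :: "'k coord2" assume x: "x \<in> {F. c2ok n F}" and y: "y \<in> {F. c2ok n F}"
  show "x + y \<in> {F. c2ok n F}" using x y keys_add[of x y] by (auto simp: c2ok_def)
  have "(\<forall>z\<in>Poly_Mapping.keys (fst m). gidx_ok n z) \<and> (\<forall>z\<in>Poly_Mapping.keys (snd m). gidx_ok n z)"
    if mk: "m \<in> Poly_Mapping.keys (x * y)" for m
  proof -
    obtain a b where "m = a + b" "a \<in> Poly_Mapping.keys x" "b \<in> Poly_Mapping.keys y"
      using keys_mult[of x y] mk by blast
    then show ?thesis using x y keys_add[of "fst a" "fst b"] keys_add[of "snd a" "snd b"] by (auto simp: c2ok_def)
  qed
  then show "x * y \<in> {F. c2ok n F}" by (auto simp: c2ok_def)
qed

lemma DeltaO_var_c2ok: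
  assumes ok: "gidx_ok n x"
  shows "c2ok n (DeltaO_var n x :: 'k::field coord2)"
proof -
  have t: "cvarL y * cvarR z \<in> {F :: 'k coord2. c2ok n F}" if "gidx_ok n y" "gidx_ok n z" for y z
    using that by (simp add: cvarLR c2ok_def)
  have s: "(\<Sum>k<n. cvarL (y k) * cvarR (z k)) \<in> {F :: 'k coord2. c2ok n F}"
    if "\<And>k. k < n \<Longrightarrow> gidx_ok n (y k) \<and> gidx_ok n (z k)" for y z
    by (rule subring_sum[OF subring_c2ok]) (use that t in auto)
  show ?thesis
  proof (cases x)
    case (Gv i j) then show ?thesis using ok s[of "\<lambda>k. Gv i k" "\<lambda>k. Gv k j"] by simp
  next
    case (Gbv i j) then show ?thesis using ok s[of "\<lambda>k. Gbv k j" "\<lambda>k. Gbv i k"] by simp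
  qed
qed

lemma DeltaO_c2ok:
  fixes f :: "'k::field coord"
  assumes f: "f \<in> coord_carrier n"
  shows "c2ok n (DeltaO n f)"
proof -
  have "DeltaO n f \<in> {F. c2ok n F}"
    unfolding DeltaO_def
  proof (rule psubst_subring[OF subring_c2ok])
    fix c show "Poly_Mapping.single 0 c \<in> {F :: 'k coord2. c2ok n F}" by (simp add: c2ok_def)
  next
    fix m x assume "m \<in> Poly_Mapping.keys f" "x \<in> Poly_Mapping.keys m"
    then have ok: "gidx_ok n x" using f by (auto simp: coord_carrier_def)
    then show "DeltaO_var n x \<in> {F. c2ok n F}" by (simp add: DeltaO_var_c2ok)
  qed
  then show ?thesis by simp
qed

lemma mono_cc: "(\<forall>x\<in>Poly_Mapping.keys m. gidx_ok n x) \<Longrightarrow> Poly_Mapping.single m 1 \<in> coord_carrier n"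
  by (simp add: coord_carrier_def)

lemma tc_tword: "set w \<subseteq> {..<n} \<Longrightarrow> tword w \<in> tens_carrier n"
  by (simp add: tens_carrier_def tword_def)

lemma tc_add: "u \<in> tens_carrier n \<Longrightarrow> v \<in> tens_carrier n \<Longrightarrow> u + v \<in> tens_carrier n"
  using keys_add[of u v] by (auto simp: tens_carrier_def)

lemma tc_zero: "0 \<in> tens_carrier n" by (simp add: tens_carrier_def)

lemma tc_tsmult: "u \<in> tens_carrier n \<Longrightarrow> tsmult c u \<in> tens_carrier n"
  using keys_tsmult[of c u] by (auto simp: tens_carrier_def)

lemma tc_sum: "(\<And>a. a \<in> A \<Longrightarrow> F a \<in> tens_carrier n) \<Longrightarrow> sum F A \<in> tens_carrier n"
  by (induction A rule: infinite_finite_induct) (auto simp: tc_add tc_zero)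

lemma tmul_tword: "tmul (tword a) (tword b) = tword (a @ b)"
  by (simp add: tmul_def tword_def)

lemma tens_decomp:
  fixes u :: "'k::field tens"
  shows "u = (\<Sum>w\<in>Poly_Mapping.keys u. tsmult (Poly_Mapping.lookup u w) (tword w))"
proof -
  have "tsmult c (tword w) = Poly_Mapping.single w c" for c :: 'k and w
    by (simp add: tsmult_def tword_def)
  then show ?thesis by (simp add: poly_sum_single)
qed

lemma epsO_cvar: "epsO (cvar x) = epsO_var x"
  unfolding epsO_def cvar_def by (rule psubst_var[OF rhom_id])

lemma epsU_tword1: "epsU (tword [k]) = 0" by (simp add: epsU_def tword_def lookup_single when_def)

section \<open>Uniqueness\<close>

lemma sum_delta_r: "j < n \<Longrightarrow> (\<Sum>l<(n::nat). f l * (if l = j then 1 else 0)) = (f j :: 'a::comm_ring_1)"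
proof -
  assume j: "j < n"
  have "(\<Sum>l<n. f l * (if l = j then 1 else 0)) = (\<Sum>l<n. if l = j then f l else 0)" by (intro sum.cong) auto
  then show ?thesis using j by simp
qed

lemma sum_delta_l: "i < n \<Longrightarrow> (\<Sum>l<(n::nat). (if i = l then 1 else 0) * f l) = (f i :: 'a::comm_ring_1)"
proof -
  assume i: "i < n"
  have "(\<Sum>l<n. (if i = l then 1 else 0) * f l) = (\<Sum>l<n. if i = l then f l else 0)" by (intro sum.cong) auto
  then show ?thesis using i by simp
qed

context
  fixes n :: nat and C :: "nat \<Rightarrow> nat \<Rightarrow> nat \<Rightarrow> 'k::field" and P :: "'k tens \<Rightarrow> 'k coord \<Rightarrow> 'k"
  assumes H: "hopf_pairing n C P" and N: "pairing_normalized n C P"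
begin

lemma H1: "u \<in> tens_carrier n \<Longrightarrow> v \<in> tens_carrier n \<Longrightarrow> f \<in> coord_carrier n \<Longrightarrow> P (u + v) f = P u f + P v f"
  using H by (simp add: hopf_pairing_def)
lemma H2: "u \<in> tens_carrier n \<Longrightarrow> f \<in> coord_carrier n \<Longrightarrow> P (tsmult c u) f = c * P u f"
  using H by (simp add: hopf_pairing_def)
lemma H3: "u \<in> tens_carrier n \<Longrightarrow> f \<in> coord_carrier n \<Longrightarrow> g \<in> coord_carrier n \<Longrightarrow> P u (f + g) = P u f + P u g"
  using H by (simp add: hopf_pairing_def)
lemma H4: "u \<in> tens_carrier n \<Longrightarrow> f \<in> coord_carrier n \<Longrightarrow> P u (csmult c f) = c * P u f"
  using H by (simp add: hopf_pairing_def)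
lemma H6: "u \<in> tens_carrier n \<Longrightarrow> f \<in> O_ideal n C \<Longrightarrow> P u f = 0"
  using H by (simp add: hopf_pairing_def)
lemma H7: "u \<in> tens_carrier n \<Longrightarrow> f \<in> coord_carrier n \<Longrightarrow> g \<in> coord_carrier n \<Longrightarrow> pair_DeltaU P u f g = P u (f * g)"
  using H by (simp add: hopf_pairing_def)
lemma H8: "u \<in> tens_carrier n \<Longrightarrow> P u 1 = epsU u"
  using H by (simp add: hopf_pairing_def)
lemma H9: "u \<in> tens_carrier n \<Longrightarrow> v \<in> tens_carrier n \<Longrightarrow> f \<in> coord_carrier n \<Longrightarrow> pair_tensor P u v (DeltaO n f) = P (tmul u v) f"
  using H by (simp add: hopf_pairing_def)
lemma H10: "f \<in> coord_carrier n \<Longrightarrow> P tone f = epsO f"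
  using H by (simp add: hopf_pairing_def)

lemma Hdiff: "u \<in> tens_carrier n \<Longrightarrow> f \<in> coord_carrier n \<Longrightarrow> g \<in> coord_carrier n \<Longrightarrow> P u (f - g) = P u f - P u g"
  using H3[of u "f - g" g] cc_diff[of f n g] by simp

lemma Hzero: "u \<in> tens_carrier n \<Longrightarrow> P u 0 = 0"
proof -
  assume u: "u \<in> tens_carrier n"
  have z: "0 \<in> coord_carrier n" using subring_cc[of n] unfolding subring_def by blast
  have "P u 0 = P u 0 + P u 0" using H3[OF u z z] by simp
  then have "P u 0 - P u 0 = (P u 0 + P u 0) - P u 0" by (rule arg_cong[where f="\<lambda>x. x - P u 0"])
  then show ?thesis by simp
qed

lemma Hfsum: "u \<in> tens_carrier n \<Longrightarrow> (\<And>a. a \<in> A \<Longrightarrow> F a \<in> coord_carrier n) \<Longrightarrow> P u (sum F A) = (\<Sum>a\<in>A. P u (F a))"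
proof (induction A rule: infinite_finite_induct)
  case (infinite A)
  then show ?case by (simp add: Hzero)
next
  case empty
  then show ?case by (simp add: Hzero)
next
  case (insert x F)
  then show ?case by (simp add: H3 cc_sum)
qed

lemma Hcconst: "u \<in> tens_carrier n \<Longrightarrow> P u (cconst c) = c * epsU u"
  using H4[of u 1 c] H8[of u] by (simp add: csmult_eq cc_one)

lemma Hword1_mult:
  assumes k: "k < n" and f: "f \<in> coord_carrier n" and g: "g \<in> coord_carrier n"
  shows "P (tword [k]) (f * g) = P (tword [k]) f * epsO g + epsO f * P (tword [k]) g"
proof -
  have t: "tword [k] \<in> tens_carrier n" using k by (simp add: tc_tword)
  have "Pow {..<length [k]} = {{}, {0}}" by (auto simp: lessThan_Suc)
  then have "pair_DeltaU P (tword [k]) f g = P (tword [k]) f * P tone g + P tone f * P (tword [k]) g"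
    by (simp add: pair_DeltaU_def tword_def tone_def lessThan_Suc add.commute)
  then show ?thesis using H7[OF t f g] H10[OF f] H10[OF g] by simp
qed

lemma Hgbar:
  assumes k: "k < n" and i: "i < n" and j: "j < n"
  shows "P (tword [k]) (cvar (Gbv i j)) = C i j k"
proof -
  have t: "tword [k] \<in> tens_carrier n" using k by (simp add: tc_tword)
  let ?s = "(\<Sum>l<n. cvar (Gv i l) * cvar (Gbv l j)) - cconst (if i = j then 1 else (0::'k))"
  have "?s \<in> O_rel n C" using i j unfolding O_rel_def by blast
  then have "1 * ?s \<in> O_ideal n C" unfolding O_ideal_def by (rule cideal.gen) (rule cc_one)
  then have z: "P (tword [k]) ?s = 0" using H6[OF t] by simp
  have cv: "\<And>l. l < n \<Longrightarrow> cvar (Gv i l) * cvar (Gbv l j) \<in> coord_carrier n"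
    using i j by (intro cc_mult cc_cvar) auto
  have A: "P (tword [k]) ?s = P (tword [k]) (\<Sum>l<n. cvar (Gv i l) * cvar (Gbv l j)) - P (tword [k]) (cconst (if i = j then 1 else 0))"
    by (rule Hdiff[OF t], rule cc_sum, simp add: cv, rule cc_cconst)
  have B: "P (tword [k]) (\<Sum>l<n. cvar (Gv i l) * cvar (Gbv l j)) = (\<Sum>l<n. P (tword [k]) (cvar (Gv i l) * cvar (Gbv l j)))"
    by (rule Hfsum[OF t]) (simp add: cv)
  have Cc: "P (tword [k]) (cconst (if i = j then 1 else 0)) = 0"
    by (simp add: Hcconst[OF t] epsU_tword1)
  have D: "(\<Sum>l<n. P (tword [k]) (cvar (Gv i l) * cvar (Gbv l j))) =
      (\<Sum>l<n. P (tword [k]) (cvar (Gv i l)) * (if l = j then 1 else 0) + (if i = l then 1 else 0) * P (tword [k]) (cvar (Gbv l j)))"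
  proof (intro sum.cong refl)
    fix l assume "l \<in> {..<n}"
    then have l: "l < n" by simp
    show "P (tword [k]) (cvar (Gv i l) * cvar (Gbv l j)) = P (tword [k]) (cvar (Gv i l)) * (if l = j then 1 else 0) + (if i = l then 1 else 0) * P (tword [k]) (cvar (Gbv l j))"
      using i j l by (simp add: Hword1_mult[OF k] cc_cvar epsO_cvar)
  qed
  have E: "(\<Sum>l<n. P (tword [k]) (cvar (Gv i l)) * (if l = j then 1 else 0) + (if i = l then 1 else 0) * P (tword [k]) (cvar (Gbv l j)))
      = P (tword [k]) (cvar (Gv i j)) + P (tword [k]) (cvar (Gbv i j))"
    by (simp only: sum.distrib sum_delta_r[OF j] sum_delta_l[OF i])
  have F: "P (tword [k]) (cvar (Gv i j)) = - C i j k" using N i j k by (simp add: pairing_normalized_def)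
  show ?thesis using z A B Cc D E F by simp
qed

end

lemma uniq_word1:
  assumes H: "hopf_pairing n C P" and N: "pairing_normalized n C P"
    and H': "hopf_pairing n C P'" and N': "pairing_normalized n C P'"
    and k: "k < n" and f: "f \<in> coord_carrier n"
  shows "P (tword [k]) f = P' (tword [k]) f"
  using f
proof (induction rule: poly_induct_cc)
  case (const c)
  have t: "tword [k] \<in> tens_carrier n" using k by (simp add: tc_tword)
  show ?case using Hcconst[OF H N t] Hcconst[OF H' N' t] by simp
next
  case (var x)
  show ?case
  proof (cases x)
    case (Gv i j)
    with var have ij: "i < n" "j < n" by auto
    have "P (tword [k]) (cvar (Gv i j)) = - C i j k" "P' (tword [k]) (cvar (Gv i j)) = - C i j k"
      using N N' ij k unfolding pairing_normalized_def by blast+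
    then show ?thesis using Gv by simp
  next
    case (Gbv i j)
    with var have ij: "i < n" "j < n" by auto
    show ?thesis using Hgbar[OF H N k ij] Hgbar[OF H' N' k ij] Gbv by simp
  qed
next
  case (add f g)
  have t: "tword [k] \<in> tens_carrier n" using k by (simp add: tc_tword)
  show ?case using add H3[OF H N t] H3[OF H' N' t] by simp
next
  case (mult f g)
  show ?case using mult Hword1_mult[OF H N k] Hword1_mult[OF H' N' k] by simp
qed

lemma uniq_word:
  assumes H: "hopf_pairing n C P" and N: "pairing_normalized n C P"
    and H': "hopf_pairing n C P'" and N': "pairing_normalized n C P'"
    and w: "set w \<subseteq> {..<n}"
  shows "f \<in> coord_carrier n \<Longrightarrow> P (tword w) f = P' (tword w) f"
  using w
proof (induction w arbitrary: f)
  case Nil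
  then show ?case using H10[OF H N] H10[OF H' N'] by (simp add: tone_def)
next
  case (Cons k w)
  have k: "k < n" and w: "set w \<subseteq> {..<n}" using Cons.prems by auto
  have t1: "tword [k] \<in> tens_carrier n" using k by (simp add: tc_tword)
  have t2: "tword w \<in> tens_carrier n" using w by (simp add: tc_tword)
  have e: "tword (k # w) = tmul (tword [k]) (tword w)" by (simp add: tmul_tword)
  have mc: "Poly_Mapping.single (fst m) 1 \<in> coord_carrier n" "Poly_Mapping.single (snd m) 1 \<in> coord_carrier n"
    if "m \<in> Poly_Mapping.keys (DeltaO n f)" for m
    using DeltaO_c2ok[OF Cons.prems(1)] that by (auto simp: c2ok_def intro!: mono_cc)
  have "P (tword (k # w)) f = pair_tensor P (tword [k]) (tword w) (DeltaO n f)"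
    unfolding e by (rule H9[OF H N t1 t2 Cons.prems(1), symmetric])
  also have "\<dots> = pair_tensor P' (tword [k]) (tword w) (DeltaO n f)"
    unfolding pair_tensor_def
    by (intro sum.cong refl) (simp add: mc uniq_word1[OF H N H' N' k] Cons.IH[OF _ w])
  also have "\<dots> = P' (tword (k # w)) f"
    unfolding e by (rule H9[OF H' N' t1 t2 Cons.prems(1)])
  finally show ?case .
qed

lemma uniq:
  assumes H: "hopf_pairing n C P" and N: "pairing_normalized n C P"
    and H': "hopf_pairing n C P'" and N': "pairing_normalized n C P'"
    and u: "u \<in> tens_carrier n" and f: "f \<in> coord_carrier n"
  shows "P u f = P' u f"
proof -
  have tw: "\<And>w. w \<in> Poly_Mapping.keys u \<Longrightarrow> tsmult (Poly_Mapping.lookup u w) (tword w) \<in> tens_carrier n"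
    by (rule tc_tsmult, rule tc_tword) (use u in \<open>auto simp: tens_carrier_def\<close>)
  have sumP: "Q (\<Sum>w\<in>A. tsmult (Poly_Mapping.lookup u w) (tword w)) f = (\<Sum>w\<in>A. Q (tsmult (Poly_Mapping.lookup u w) (tword w)) f)"
    if Q1: "hopf_pairing n C Q" and Q2: "pairing_normalized n C Q" and A: "A \<subseteq> Poly_Mapping.keys u" for Q A
  proof -
    have "finite A" using A by (rule finite_subset) simp
    then show ?thesis using A
    proof (induction A rule: finite_induct)
      case empty
      note e = H1[OF Q1 Q2 tc_zero tc_zero f, unfolded add_0_left]
      have "Q 0 f - Q 0 f = (Q 0 f + Q 0 f) - Q 0 f" by (rule arg_cong[where f="\<lambda>x. x - Q 0 f", OF e])
      then show ?case by simp
    next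
      case (insert x F)
      have x: "tsmult (Poly_Mapping.lookup u x) (tword x) \<in> tens_carrier n" using insert.prems tw by blast
      have F: "(\<Sum>w\<in>F. tsmult (Poly_Mapping.lookup u w) (tword w)) \<in> tens_carrier n"
        by (rule tc_sum) (use insert.prems tw in blast)
      have "Q (\<Sum>w\<in>insert x F. tsmult (Poly_Mapping.lookup u w) (tword w)) f
          = Q (tsmult (Poly_Mapping.lookup u x) (tword x) + (\<Sum>w\<in>F. tsmult (Poly_Mapping.lookup u w) (tword w))) f"
        using insert.hyps by simp
      also have "\<dots> = Q (tsmult (Poly_Mapping.lookup u x) (tword x)) f + Q (\<Sum>w\<in>F. tsmult (Poly_Mapping.lookup u w) (tword w)) f"
        by (rule H1[OF Q1 Q2 x F f])
      finally show ?case using insert by simp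
    qed
  qed
  have "P u f = P (\<Sum>w\<in>Poly_Mapping.keys u. tsmult (Poly_Mapping.lookup u w) (tword w)) f"
    by (rule arg_cong[where f="\<lambda>x. P x f", OF tens_decomp])
  also have "\<dots> = (\<Sum>w\<in>Poly_Mapping.keys u. P (tsmult (Poly_Mapping.lookup u w) (tword w)) f)"
    by (rule sumP[OF H N order_refl])
  also have "\<dots> = (\<Sum>w\<in>Poly_Mapping.keys u. P' (tsmult (Poly_Mapping.lookup u w) (tword w)) f)"
  proof (intro sum.cong refl)
    fix w assume w: "w \<in> Poly_Mapping.keys u"
    then have sw: "set w \<subseteq> {..<n}" using u by (auto simp: tens_carrier_def)
    show "P (tsmult (Poly_Mapping.lookup u w) (tword w)) f = P' (tsmult (Poly_Mapping.lookup u w) (tword w)) f"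
      using H2[OF H N tc_tword[OF sw] f] H2[OF H' N' tc_tword[OF sw] f] uniq_word[OF H N H' N' sw f] by simp
  qed
  also have "\<dots> = P' (\<Sum>w\<in>Poly_Mapping.keys u. tsmult (Poly_Mapping.lookup u w) (tword w)) f"
    by (rule sumP[OF H' N' order_refl, symmetric])
  also have "\<dots> = P' u f"
    by (rule arg_cong[where f="\<lambda>x. P' x f", OF tens_decomp[symmetric]])
  finally show ?thesis .
qed


lemma deriv_kill:
  fixes D :: "'k::field coord \<Rightarrow> 'k"
  assumes add: "\<And>f g. D (f + g) = D f + D g"
    and mult: "\<And>f g. D (f * g) = D f * e g + e f * D g"
    and c: "\<And>c. D (cconst c) = 0" and v: "\<And>x. D (cvar x) = 0"
  shows "D h = 0"
proof -
  let ?R = "{h. D h = 0}"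
  have z: "D 0 = 0" using c[of 0] by (simp add: cconst_def)
  have o: "D 1 = 0" using c[of 1] by (simp add: cconst_def)
  have sr: "subring ?R" unfolding subring_def using z o by (auto simp: add mult)
  have "psubst (\<lambda>c. Poly_Mapping.single 0 c) (\<lambda>x. Poly_Mapping.single (Poly_Mapping.single x 1) 1) h \<in> ?R"
  proof (rule psubst_subring[OF sr])
    fix c show "Poly_Mapping.single 0 c \<in> ?R" using c[of c] by (simp add: cconst_def)
  next
    fix m x show "Poly_Mapping.single (Poly_Mapping.single x 1) 1 \<in> ?R" using v[of x] unfolding cvar_def by simp
  qed
  then show ?thesis unfolding psubst_self by simp
qed

definition rhov :: "nat \<Rightarrow> (nat \<Rightarrow> nat \<Rightarrow> nat \<Rightarrow> 'k::field) \<Rightarrow> (nat \<Rightarrow> 'k) \<Rightarrow> nat \<Rightarrow> nat \<Rightarrow> 'k" where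
  "rhov n C v = (\<lambda>i j. \<Sum>l<n. v l * rho n C l i j)"

lemma Ev1_lin: "Ev n [rhov n C v] h = (\<Sum>l<n. v l * Ev n [rho n C l] h)"
proof -
  let ?D = "\<lambda>h. Ev n [rhov n C v] h - (\<Sum>l<n. v l * Ev n [rho n C l] h)"
  have "?D h = 0"
  proof (rule deriv_kill[where e="Ev n []"])
    show "?D (f + g) = ?D f + ?D g" for f g by (simp add: Ev_add algebra_simps sum.distrib)
    show "?D (f * g) = ?D f * Ev n [] g + Ev n [] f * ?D g" for f g
      by (simp add: Ev_mult1 algebra_simps sum.distrib sum_distrib_left sum_distrib_right sum_subtractf)
    show "?D (cconst c) = 0" for c
      by (simp add: cconst_def[symmetric] Ev_cconst_mult[where f=1, simplified] Ev_one)
    show "?D (cvar x) = 0" for x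
      by (cases x) (auto simp: Ev1_Gv Ev1_Gbv rhov_def sum_negf)
  qed
  then show ?thesis by simp
qed

lemma EP_tlin1: "EP n C (tlin n v) h = Ev n [rhov n C v] h"
  by (simp add: EP_tlin Ev1_lin)

lemma pair_tensor_ptens: "pair_tensor P u v F = ptens (P u) (P v) F"
  by (simp add: pair_tensor_def ptens_def)

lemma EP_tlist:
  "EP n C (tlist_prod (map (tlin n) vs)) h = Ev n (map (rhov n C) vs) h"
proof (induction vs arbitrary: h)
  case Nil
  then show ?case by (simp add: tlist_prod_def tone_def EP_tword)
next
  case (Cons v vs)
  have "EP n C (tlist_prod (map (tlin n) (v # vs))) h = EP n C (tmul (tlin n v) (tlist_prod (map (tlin n) vs))) h"
    by (simp add: tlist_prod_def)
  also have "\<dots> = ptens (Ev n [rhov n C v]) (Ev n (map (rhov n C) vs)) (DeltaO n h)"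
    by (simp add: EP_tmul pair_tensor_ptens EP_tlin1 Cons.IH ptens_def)
  also have "\<dots> = Ev n ([rhov n C v] @ map (rhov n C) vs) h"
    by (rule Ev_append[symmetric])
  finally show ?case by simp
qed


section \<open>Conjugation\<close>

definition meq :: "nat \<Rightarrow> (nat \<Rightarrow> nat \<Rightarrow> 'a) \<Rightarrow> (nat \<Rightarrow> nat \<Rightarrow> 'a) \<Rightarrow> bool" where
  "meq n X Y \<longleftrightarrow> (\<forall>i<n. \<forall>j<n. X i j = Y i j)"

lemma meq_refl: "meq n X X" by (simp add: meq_def)
lemma meq_sym: "meq n X Y \<Longrightarrow> meq n Y X" by (simp add: meq_def)
lemma meq_trans: "meq n X Y \<Longrightarrow> meq n Y Z \<Longrightarrow> meq n X Z" by (simp add: meq_def)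
lemma meq_eq: "X = Y \<Longrightarrow> meq n X Y" by (simp add: meq_def)
lemma meq_mmul: "meq n X X' \<Longrightarrow> meq n Y Y' \<Longrightarrow> meq n (mmul n X Y) (mmul n X' Y')"
  unfolding meq_def by (auto intro!: mmul_cong)
lemma meq_mid_left: "meq n (mmul n mid X) X" by (simp add: meq_def mmul_mid_left)
lemma meq_mid_right: "meq n (mmul n X mid) X" by (simp add: meq_def mmul_mid_right)

definition Qt :: "(nat \<Rightarrow> nat \<Rightarrow> 'k::field) \<Rightarrow> nat \<Rightarrow> nat \<Rightarrow> 'k tp" where
  "Qt Q = (\<lambda>i j. Kc (Q i j))"

definition conjT :: "nat \<Rightarrow> (nat \<Rightarrow> nat \<Rightarrow> 'k::field) \<Rightarrow> (nat \<Rightarrow> nat \<Rightarrow> 'k) \<Rightarrow> (nat \<Rightarrow> nat \<Rightarrow> 'k tp) \<Rightarrow> nat \<Rightarrow> nat \<Rightarrow> 'k tp" where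
  "conjT n Q Qi X = mmul n (mmul n (Qt Qi) X) (Qt Q)"

definition conjm :: "nat \<Rightarrow> (nat \<Rightarrow> nat \<Rightarrow> 'k::field) \<Rightarrow> (nat \<Rightarrow> nat \<Rightarrow> 'k) \<Rightarrow> (nat \<Rightarrow> nat \<Rightarrow> 'k) \<Rightarrow> nat \<Rightarrow> nat \<Rightarrow> 'k" where
  "conjm n Q Qi A = (\<lambda>i j. if i < n \<and> j < n then \<Sum>a<n. \<Sum>c<n. Qi i a * A a c * Q c j else 0)"

context
  fixes n :: nat and Q Qi :: "nat \<Rightarrow> nat \<Rightarrow> 'k::field"
  assumes inv: "inverse_mats n Q Qi"
begin

lemma QQi: "meq n (mmul n (Qt Q) (Qt Qi)) mid"
  using inv unfolding meq_def inverse_mats_def mmul_def Qt_def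
  by (auto simp: Kc_mult[symmetric] Kc_sum[symmetric] mid_def)

lemma QiQ: "meq n (mmul n (Qt Qi) (Qt Q)) mid"
  using inv unfolding meq_def inverse_mats_def mmul_def Qt_def
  by (auto simp: Kc_mult[symmetric] Kc_sum[symmetric] mid_def)

lemma conj_mult: "meq n (mmul n (conjT n Q Qi X) (conjT n Q Qi Y)) (conjT n Q Qi (mmul n X Y))"
proof -
  have "mmul n (conjT n Q Qi X) (conjT n Q Qi Y) = mmul n (mmul n (Qt Qi) X) (mmul n (mmul n (Qt Q) (Qt Qi)) (mmul n Y (Qt Q)))"
    unfolding conjT_def by (simp only: mmul_assoc)
  moreover have "meq n (mmul n (mmul n (Qt Qi) X) (mmul n (mmul n (Qt Q) (Qt Qi)) (mmul n Y (Qt Q))))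
      (mmul n (mmul n (Qt Qi) X) (mmul n mid (mmul n Y (Qt Q))))"
    by (intro meq_mmul meq_refl QQi)
  moreover have "meq n (mmul n (mmul n (Qt Qi) X) (mmul n mid (mmul n Y (Qt Q)))) (mmul n (mmul n (Qt Qi) X) (mmul n Y (Qt Q)))"
    by (intro meq_mmul meq_refl meq_mid_left)
  moreover have "mmul n (mmul n (Qt Qi) X) (mmul n Y (Qt Q)) = conjT n Q Qi (mmul n X Y)"
    unfolding conjT_def by (simp only: mmul_assoc)
  ultimately show ?thesis by (metis meq_trans)
qed

lemma conj_mid: "meq n (conjT n Q Qi mid) mid"
proof -
  have "meq n (conjT n Q Qi mid) (mmul n (Qt Qi) (Qt Q))"
    unfolding conjT_def by (intro meq_mmul meq_refl meq_mid_right)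
  then show ?thesis using QiQ meq_trans by blast
qed

lemma conjT_lin: "conjT n Q Qi (\<lambda>i j. X i j + c * Y i j) i j = conjT n Q Qi X i j + c * conjT n Q Qi Y i j"
  unfolding conjT_def mmul_def
  by (simp add: distrib_left distrib_right sum.distrib sum_distrib_left sum_distrib_right mult_ac)

lemma conjT_lin2: "conjT n Q Qi (\<lambda>i j. X i j - c * Y i j) i j = conjT n Q Qi X i j - c * conjT n Q Qi Y i j"
  unfolding conjT_def mmul_def
  by (simp add: left_diff_distrib right_diff_distrib sum_subtractf sum_distrib_left sum_distrib_right mult_ac)

lemma Kc_conjm: "i < n \<Longrightarrow> j < n \<Longrightarrow> Kc (conjm n Q Qi A i j) = conjT n Q Qi (\<lambda>i j. Kc (A i j)) i j"
proof -
  assume ij: "i < n" "j < n"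
  have "conjT n Q Qi (\<lambda>i j. Kc (A i j)) i j = (\<Sum>c<n. \<Sum>a<n. Kc (Qi i a * A a c * Q c j))"
    unfolding conjT_def mmul_def Qt_def by (simp add: sum_distrib_right Kc_mult)
  also have "\<dots> = (\<Sum>a<n. \<Sum>c<n. Kc (Qi i a * A a c * Q c j))" by (rule sum.swap)
  finally show ?thesis using ij by (simp add: conjm_def Kc_sum)
qed

lemma Lf_conj: "meq n (Lf c (conjm n Q Qi A)) (conjT n Q Qi (Lf c A))"
proof -
  have "conjT n Q Qi (Lf c A) i j = conjT n Q Qi mid i j + c * Kc (conjm n Q Qi A i j)" if "i < n" "j < n" for i j
    unfolding Lf_def conjT_lin using that by (simp add: Kc_conjm)
  then show ?thesis using conj_mid unfolding meq_def Lf_def by simp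
qed

lemma Lg_conj: "meq n (Lg c (conjm n Q Qi A)) (conjT n Q Qi (Lg c A))"
proof -
  have "conjT n Q Qi (Lg c A) i j = conjT n Q Qi mid i j - c * Kc (conjm n Q Qi A i j)" if "i < n" "j < n" for i j
    unfolding Lg_def conjT_lin2 using that by (simp add: Kc_conjm)
  then show ?thesis using conj_mid unfolding meq_def Lg_def by simp
qed

lemma Mq_conj: "meq n (Mq n (map (\<lambda>(c, A). (c, conjm n Q Qi A)) L)) (conjT n Q Qi (Mq n L))"
proof (induction L)
  case Nil then show ?case using conj_mid by (simp add: meq_sym)
next
  case (Cons x L)
  obtain c A where x: "x = (c, A)" by (cases x)
  have "meq n (mmul n (Lf c (conjm n Q Qi A)) (Mq n (map (\<lambda>(c, A). (c, conjm n Q Qi A)) L)))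
      (mmul n (conjT n Q Qi (Lf c A)) (conjT n Q Qi (Mq n L)))"
    by (intro meq_mmul Lf_conj Cons.IH)
  then have "meq n (mmul n (Lf c (conjm n Q Qi A)) (Mq n (map (\<lambda>(c, A). (c, conjm n Q Qi A)) L)))
      (conjT n Q Qi (mmul n (Lf c A) (Mq n L)))"
    using conj_mult meq_trans by blast
  then show ?case by (simp add: x)
qed

lemma Nq_conj: "meq n (Nq n (map (\<lambda>(c, A). (c, conjm n Q Qi A)) L)) (conjT n Q Qi (Nq n L))"
proof (induction L)
  case Nil then show ?case using conj_mid by (simp add: meq_sym)
next
  case (Cons x L)
  obtain c A where x: "x = (c, A)" by (cases x)
  have "meq n (mmul n (Nq n (map (\<lambda>(c, A). (c, conjm n Q Qi A)) L)) (Lg c (conjm n Q Qi A)))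
      (mmul n (conjT n Q Qi (Nq n L)) (conjT n Q Qi (Lg c A)))"
    by (intro meq_mmul Lg_conj Cons.IH)
  then have "meq n (mmul n (Nq n (map (\<lambda>(c, A). (c, conjm n Q Qi A)) L)) (Lg c (conjm n Q Qi A)))
      (conjT n Q Qi (mmul n (Nq n L) (Lg c A)))"
    using conj_mult meq_trans by blast
  then show ?case by (simp add: x)
qed

lemma conjT_expand: "conjT n Q Qi X i j = (\<Sum>a<n. \<Sum>c<n. Kc (Qi i a * Q c j) * X a c)"
proof -
  have "conjT n Q Qi X i j = (\<Sum>c<n. \<Sum>a<n. Kc (Qi i a * Q c j) * X a c)"
    unfolding conjT_def mmul_def Qt_def sum_distrib_right by (intro sum.cong refl) (simp add: Kc_mult mult_ac)
  also have "\<dots> = (\<Sum>a<n. \<Sum>c<n. Kc (Qi i a * Q c j) * X a c)" by (rule sum.swap)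
  finally show ?thesis .
qed

lemma evq_conj:
  assumes f: "f \<in> coord_carrier n"
  shows "evq n L (coord_change n Q Qi f) = evq n (map (\<lambda>(c, A). (c, conjm n Q Qi A)) L) f"
proof -
  let ?L' = "map (\<lambda>(c, A). (c, conjm n Q Qi A)) L"
  have rc: "rhom (cconst :: 'k \<Rightarrow> 'k coord)" unfolding cconst_def[abs_def] by (rule rhom_const)
  have "evq n L (coord_change n Q Qi f) = psubst (evq n L \<circ> cconst) (evq n L \<circ> coord_change_var n Q Qi) f"
    unfolding coord_change_def by (rule psubst_comp[OF rhom_evq rc])
  also have "\<dots> = psubst Kc (sig n ?L') f"
  proof -
    have "evq n L \<circ> cconst = Kc" by (simp add: fun_eq_iff evq_cconst)
    moreover have "psubst Kc (evq n L \<circ> coord_change_var n Q Qi) f = psubst Kc (sig n ?L') f"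
    proof (rule psubst_cong)
      fix m x assume "m \<in> Poly_Mapping.keys f" "x \<in> Poly_Mapping.keys m"
      then have ok: "gidx_ok n x" using f by (auto simp: coord_carrier_def)
      note ev = rhom_sum[OF rhom_evq] rhom_mult[OF rhom_evq] evq_cvar evq_cconst
      show "(evq n L \<circ> coord_change_var n Q Qi) x = sig n ?L' x"
      proof (cases x)
        case (Gv i j)
        have "(evq n L \<circ> coord_change_var n Q Qi) x = (\<Sum>a<n. \<Sum>c<n. Kc (Qi i a * Q c j) * sig n L (Gv a c))"
          by (simp add: Gv ev)
        also have "\<dots> = conjT n Q Qi (Mq n L) i j"
          unfolding conjT_expand by (intro sum.cong refl) (auto simp del: Mq.simps)
        also have "\<dots> = Mq n ?L' i j" using Mq_conj ok Gv unfolding meq_def by simp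
        finally show ?thesis using ok Gv by (simp del: Mq.simps)
      next
        case (Gbv i j)
        have "(evq n L \<circ> coord_change_var n Q Qi) x = (\<Sum>a<n. \<Sum>c<n. Kc (Qi i a * Q c j) * sig n L (Gbv a c))"
          by (simp add: Gbv ev)
        also have "\<dots> = conjT n Q Qi (Nq n L) i j"
          unfolding conjT_expand by (intro sum.cong refl) (auto simp del: Nq.simps)
        also have "\<dots> = Nq n ?L' i j" using Nq_conj ok Gbv unfolding meq_def by simp
        finally show ?thesis using ok Gbv by (simp del: Nq.simps)
      qed
    qed
    ultimately show ?thesis by simp
  qed
  finally show ?thesis by (simp add: evq_def)
qed

lemma Ev_conj:
  assumes f: "f \<in> coord_carrier n"
  shows "Ev n As (coord_change n Q Qi f) = Ev n (map (conjm n Q Qi) As) f"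
proof -
  have "map (\<lambda>(c, A). (c, conjm n Q Qi A)) (stdL As) = stdL (map (conjm n Q Qi) As)"
    by (simp add: stdL_def zip_map2)
  then show ?thesis by (simp add: Ev_def evq_conj[OF f])
qed

end


definition Tm :: "nat \<Rightarrow> (nat \<Rightarrow> nat \<Rightarrow> 'k::field) \<Rightarrow> (nat \<Rightarrow> 'k) \<Rightarrow> nat \<Rightarrow> 'k" where
  "Tm n Q x = (\<lambda>i. if i < n then \<Sum>j<n. Q i j * x j else 0)"

lemma sum_swap_cong: "(\<Sum>a\<in>A. \<Sum>b\<in>B. \<Sum>c\<in>C. \<Sum>d\<in>D. f a b c d) = (\<Sum>a\<in>A. \<Sum>c\<in>C. \<Sum>b\<in>B. \<Sum>d\<in>D. f a b c d)"
  by (rule sum.cong[OF refl], rule sum.swap)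

lemma bil:
  fixes Q :: "nat \<Rightarrow> nat \<Rightarrow> 'k::field" and C :: "nat \<Rightarrow> nat \<Rightarrow> nat \<Rightarrow> 'k" and x y :: "nat \<Rightarrow> 'k"
  shows "(\<Sum>c<n. \<Sum>l<n. (\<Sum>a<n. Q c a * x a) * (\<Sum>b<n. Q l b * y b) * C i c l)
   = (\<Sum>a<n. \<Sum>b<n. x a * y b * (\<Sum>c<n. \<Sum>l<n. C i c l * Q c a * Q l b))"
  (is "?L = ?R")
proof -
  have e: "(\<Sum>a<n. Q c a * x a) * (\<Sum>b<n. Q l b * y b) * C i c l = (\<Sum>a<n. \<Sum>b<n. x a * y b * (C i c l * Q c a * Q l b))" for c l
  proof -
    have g: "(\<Sum>a<n. F a) * (\<Sum>b<n. G b) * K = (\<Sum>a<n. \<Sum>b<n. F a * G b * K)" for F G :: "nat \<Rightarrow> 'k" and K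
      by (simp add: sum_distrib_right sum_distrib_left mult.assoc) (rule sum.swap)
    show ?thesis unfolding g by (intro sum.cong refl) (simp add: mult_ac)
  qed
  have "?L = (\<Sum>c<n. \<Sum>l<n. \<Sum>a<n. \<Sum>b<n. x a * y b * (C i c l * Q c a * Q l b))"
    by (simp only: e)
  also have "\<dots> = (\<Sum>c<n. \<Sum>a<n. \<Sum>l<n. \<Sum>b<n. x a * y b * (C i c l * Q c a * Q l b))"
    by (rule sum_swap_cong)
  also have "\<dots> = (\<Sum>a<n. \<Sum>c<n. \<Sum>l<n. \<Sum>b<n. x a * y b * (C i c l * Q c a * Q l b))"
    by (rule sum.swap)
  also have "\<dots> = (\<Sum>a<n. \<Sum>c<n. \<Sum>b<n. \<Sum>l<n. x a * y b * (C i c l * Q c a * Q l b))"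
    by (rule sum.cong[OF refl], rule sum.cong[OF refl], rule sum.swap)
  also have "\<dots> = (\<Sum>a<n. \<Sum>b<n. \<Sum>c<n. \<Sum>l<n. x a * y b * (C i c l * Q c a * Q l b))"
    by (rule sum.cong[OF refl], rule sum.swap)
  also have "\<dots> = ?R"
    by (simp add: sum_distrib_left)
  finally show ?thesis .
qed

context
  fixes n :: nat and Q Qi :: "nat \<Rightarrow> nat \<Rightarrow> 'k::field" and C :: "nat \<Rightarrow> nat \<Rightarrow> nat \<Rightarrow> 'k"
  assumes inv: "inverse_mats n Q Qi"
begin

lemma inv1: "i < n \<Longrightarrow> j < n \<Longrightarrow> (\<Sum>k<n. Q i k * Qi k j) = (if i = j then 1 else 0)"
  using inv by (simp add: inverse_mats_def)
lemma inv2: "i < n \<Longrightarrow> j < n \<Longrightarrow> (\<Sum>k<n. Qi i k * Q k j) = (if i = j then 1 else 0)"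
  using inv by (simp add: inverse_mats_def)

lemma T_brk: "Tm n Q (brk n (basis_change_C n Q Qi C) x y) = brk n C (Tm n Q x) (Tm n Q y)"
proof
  fix i
  show "Tm n Q (brk n (basis_change_C n Q Qi C) x y) i = brk n C (Tm n Q x) (Tm n Q y) i"
  proof (cases "i < n")
    case False then show ?thesis by (simp add: Tm_def brk_def)
  next
    case True
    define D where "D p a b = (\<Sum>c<n. \<Sum>l<n. C p c l * Q c a * Q l b)" for p a b
    have C': "basis_change_C n Q Qi C j a b = (\<Sum>p<n. Qi j p * D p a b)" for j a b
      unfolding basis_change_C_def D_def by (simp add: sum_distrib_left mult_ac)
    have "Tm n Q (brk n (basis_change_C n Q Qi C) x y) i
        = (\<Sum>j<n. Q i j * (\<Sum>a<n. \<Sum>b<n. x a * y b * (\<Sum>p<n. Qi j p * D p a b)))"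
      using True by (simp add: Tm_def brk_def C')
    also have "\<dots> = (\<Sum>j<n. \<Sum>a<n. \<Sum>b<n. \<Sum>p<n. x a * y b * D p a b * (Q i j * Qi j p))"
      by (simp add: sum_distrib_left mult_ac)
    also have "\<dots> = (\<Sum>a<n. \<Sum>b<n. \<Sum>p<n. \<Sum>j<n. x a * y b * D p a b * (Q i j * Qi j p))"
    proof -
      have "(\<Sum>j<n. \<Sum>a<n. \<Sum>b<n. \<Sum>p<n. x a * y b * D p a b * (Q i j * Qi j p))
          = (\<Sum>a<n. \<Sum>j<n. \<Sum>b<n. \<Sum>p<n. x a * y b * D p a b * (Q i j * Qi j p))" by (rule sum.swap)
      also have "\<dots> = (\<Sum>a<n. \<Sum>b<n. \<Sum>j<n. \<Sum>p<n. x a * y b * D p a b * (Q i j * Qi j p))"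
        by (rule sum.cong[OF refl], rule sum.swap)
      also have "\<dots> = (\<Sum>a<n. \<Sum>b<n. \<Sum>p<n. \<Sum>j<n. x a * y b * D p a b * (Q i j * Qi j p))"
        by (rule sum.cong[OF refl], rule sum.cong[OF refl], rule sum.swap)
      finally show ?thesis .
    qed
    also have "\<dots> = (\<Sum>a<n. \<Sum>b<n. \<Sum>p<n. x a * y b * D p a b * (if i = p then 1 else 0))"
      using True by (intro sum.cong refl) (simp add: sum_distrib_left[symmetric] inv1)
    also have "\<dots> = (\<Sum>a<n. \<Sum>b<n. x a * y b * D i a b)"
      using True by (intro sum.cong refl) (simp add: mult.commute[of _ "if _ then _ else _"] sum_delta_l)
    also have "\<dots> = brk n C (Tm n Q x) (Tm n Q y) i"
    proof -
      have "brk n C (Tm n Q x) (Tm n Q y) i = (\<Sum>c<n. \<Sum>l<n. (\<Sum>a<n. Q c a * x a) * (\<Sum>b<n. Q l b * y b) * C i c l)"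
        using True by (simp add: brk_def Tm_def)
      then show ?thesis by (simp add: bil D_def)
    qed
    finally show ?thesis .
  qed
qed

lemma T_inv: "i < n \<Longrightarrow> (\<Sum>k<n. Qi i k * Tm n Q v k) = v i"
proof -
  assume i: "i < n"
  have "(\<Sum>k<n. Qi i k * Tm n Q v k) = (\<Sum>k<n. \<Sum>j<n. Qi i k * Q k j * v j)"
    by (simp add: Tm_def sum_distrib_left mult.assoc)
  also have "\<dots> = (\<Sum>j<n. \<Sum>k<n. Qi i k * Q k j * v j)" by (rule sum.swap)
  also have "\<dots> = (\<Sum>j<n. (if i = j then 1 else 0) * v j)"
    using i by (intro sum.cong refl) (simp add: sum_distrib_right[symmetric] inv2)
  also have "\<dots> = v i" using i by (rule sum_delta_l)
  finally show ?thesis .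
qed

lemma T_add: "Tm n Q (\<lambda>i. v i + w i) = (\<lambda>i. Tm n Q v i + Tm n Q w i)"
  by (simp add: Tm_def fun_eq_iff distrib_left sum.distrib)

lemma RL_change:
  assumes RL: "right_leibniz n C"
  shows "right_leibniz n (basis_change_C n Q Qi C)"
  unfolding right_leibniz_def
proof (intro allI)
  fix x y z i
  let ?C' = "basis_change_C n Q Qi C"
  let ?b = "brk n ?C'"
  show "?b (?b x y) z i = ?b (?b x z) y i + ?b x (?b y z) i"
  proof (cases "i < n")
    case False then show ?thesis by (simp add: brk_def)
  next
    case True
    have "Tm n Q (?b (?b x y) z) = Tm n Q (\<lambda>i. ?b (?b x z) y i + ?b x (?b y z) i)"
      unfolding T_add T_brk
      using RL unfolding right_leibniz_def fun_eq_iff by blast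
    then have "(\<Sum>k<n. Qi i k * Tm n Q (?b (?b x y) z) k) = (\<Sum>k<n. Qi i k * Tm n Q (\<lambda>i. ?b (?b x z) y i + ?b x (?b y z) i) k)"
      by simp
    then show ?thesis using True by (simp only: T_inv)
  qed
qed

end


lemma rho_change:
  assumes k: "k < n"
  shows "rho n (basis_change_C n Q Qi C) k = conjm n Q Qi (rhov n C (\<lambda>l. Q l k))"
proof (intro ext)
  fix i j
  show "rho n (basis_change_C n Q Qi C) k i j = conjm n Q Qi (rhov n C (\<lambda>l. Q l k)) i j"
  proof (cases "i < n \<and> j < n")
    case False then show ?thesis by (auto simp: rho_def conjm_def)
  next
    case True
    have inner: "Qi i a * rhov n C (\<lambda>l. Q l k) a c * Q c j = (\<Sum>l<n. - (Qi i a * C a c l * Q c j * Q l k))"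
      if "a < n" "c < n" for a c
    proof -
      have "rhov n C (\<lambda>l. Q l k) a c = (\<Sum>l<n. - (Q l k * C a c l))"
        unfolding rhov_def using that by (intro sum.cong refl) (simp add: rho_def)
      then show ?thesis by (simp add: sum_distrib_left sum_distrib_right mult_ac)
    qed
    have "conjm n Q Qi (rhov n C (\<lambda>l. Q l k)) i j = (\<Sum>a<n. \<Sum>c<n. \<Sum>l<n. - (Qi i a * C a c l * Q c j * Q l k))"
      unfolding conjm_def using True by (simp add: inner)
    also have "\<dots> = rho n (basis_change_C n Q Qi C) k i j"
      using True k by (simp add: rho_def basis_change_C_def sum_negf)
    finally show ?thesis by simp
  qed
qed

lemma tc_single: "set w \<subseteq> {..<n} \<Longrightarrow> Poly_Mapping.single w c \<in> tens_carrier n"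
  by (simp add: tens_carrier_def)

lemma tc_tmul: "u \<in> tens_carrier n \<Longrightarrow> v \<in> tens_carrier n \<Longrightarrow> tmul u v \<in> tens_carrier n"
  unfolding tmul_def
  by (intro tc_sum tc_single) (auto simp: tens_carrier_def)

lemma tc_tlin: "tlin n v \<in> tens_carrier n"
  unfolding tlin_def by (intro tc_sum tc_single) auto

lemma tc_tlist: "(\<And>x. x \<in> set xs \<Longrightarrow> x \<in> tens_carrier n) \<Longrightarrow> tlist_prod xs \<in> tens_carrier n"
  by (induction xs) (auto simp: tlist_prod_def tone_def tc_tword tc_tmul)

lemma tc_change: "tens_change n Q u \<in> tens_carrier n"
  unfolding tens_change_def
  by (intro tc_sum tc_tsmult tc_tlist) (auto simp: tc_tlin)

lemma cc_change:
  assumes f: "f \<in> coord_carrier n"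
  shows "coord_change n Q Qi f \<in> coord_carrier n"
  unfolding coord_change_def
proof (rule psubst_subring[OF subring_cc])
  fix c show "cconst c \<in> coord_carrier n" by (rule cc_cconst)
next
  fix m x
  show "coord_change_var n Q Qi x \<in> coord_carrier n"
    by (cases x) (auto intro!: cc_sum cc_mult cc_cconst cc_cvar)
qed

lemma EP_change:
  assumes inv: "inverse_mats n Q Qi" and u: "u \<in> tens_carrier n" and f: "f \<in> coord_carrier n"
  shows "EP n (basis_change_C n Q Qi C) u f = EP n C (tens_change n Q u) (coord_change n Q Qi f)"
proof -
  have "EP n C (tens_change n Q u) (coord_change n Q Qi f)
      = (\<Sum>w\<in>Poly_Mapping.keys u. Poly_Mapping.lookup u w *
          Ev n (map (conjm n Q Qi) (map (rhov n C) (map (\<lambda>j i. Q i j) w))) f)"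
  proof -
    have m: "tlist_prod (map (\<lambda>j. tlin n (\<lambda>i. Q i j)) w) = tlist_prod (map (tlin n) (map (\<lambda>j i. Q i j) w))" for w
      by (simp add: comp_def)
    show ?thesis
      by (simp only: tens_change_def EP_sum EP_tsmult m EP_tlist Ev_conj[OF inv f])
  qed
  also have "\<dots> = (\<Sum>w\<in>Poly_Mapping.keys u. Poly_Mapping.lookup u w * Ev n (map (rho n (basis_change_C n Q Qi C)) w) f)"
  proof (intro sum.cong refl arg_cong2[where f="(*)"] arg_cong2[where f="Ev n"])
    fix w assume "w \<in> Poly_Mapping.keys u"
    then have "set w \<subseteq> {..<n}" using u by (auto simp: tens_carrier_def)
    then show "map (conjm n Q Qi) (map (rhov n C) (map (\<lambda>j i. Q i j) w)) = map (rho n (basis_change_C n Q Qi C)) w"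
      by (auto simp: rho_change)
  qed
  finally show ?thesis by (simp add: EP_def)
qed

theorem proposition3p4:
  fixes n :: nat and C :: "nat \<Rightarrow> nat \<Rightarrow> nat \<Rightarrow> 'k::field"
  assumes "right_leibniz n C"
  shows "(\<exists>P. hopf_pairing n C P \<and> pairing_normalized n C P)
       \<and> (\<forall>P P'. hopf_pairing n C P \<and> pairing_normalized n C P
                 \<and> hopf_pairing n C P' \<and> pairing_normalized n C P' \<longrightarrow>
                 (\<forall>u\<in>tens_carrier n. \<forall>f\<in>coord_carrier n. P u f = P' u f))
       \<and> (\<forall>Q Qi P P'. inverse_mats n Q Qi \<and>
             hopf_pairing n C P \<and> pairing_normalized n C P \<and>
             hopf_pairing n (basis_change_C n Q Qi C) P' \<and>
             pairing_normalized n (basis_change_C n Q Qi C) P' \<longrightarrow>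
             (\<forall>u\<in>tens_carrier n. \<forall>f\<in>coord_carrier n.
                 P' u f = P (tens_change n Q u) (coord_change n Q Qi f)))"
proof (intro conjI allI impI ballI)
  note RL = assms
  show "\<exists>P. hopf_pairing n C P \<and> pairing_normalized n C P"
    using EP_hopf[OF RL] EP_norm by blast
next
  fix P P' :: "'k tens \<Rightarrow> 'k coord \<Rightarrow> 'k" and u :: "'k tens" and f :: "'k coord"
  assume "hopf_pairing n C P \<and> pairing_normalized n C P \<and> hopf_pairing n C P' \<and> pairing_normalized n C P'"
    "u \<in> tens_carrier n" "f \<in> coord_carrier n"
  then show "P u f = P' u f" using uniq by blast
next
  fix Q Qi :: "nat \<Rightarrow> nat \<Rightarrow> 'k" and P P' :: "'k tens \<Rightarrow> 'k coord \<Rightarrow> 'k" and u :: "'k tens" and f :: "'k coord"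
  assume h: "inverse_mats n Q Qi \<and>
             hopf_pairing n C P \<and> pairing_normalized n C P \<and>
             hopf_pairing n (basis_change_C n Q Qi C) P' \<and>
             pairing_normalized n (basis_change_C n Q Qi C) P'"
    and u: "u \<in> tens_carrier n" and f: "f \<in> coord_carrier n"
  have inv: "inverse_mats n Q Qi" using h by blast
  have RL': "right_leibniz n (basis_change_C n Q Qi C)" by (rule RL_change[OF inv assms])
  have "P' u f = EP n (basis_change_C n Q Qi C) u f"
    using h uniq[OF _ _ EP_hopf[OF RL'] EP_norm u f] by blast
  also have "\<dots> = EP n C (tens_change n Q u) (coord_change n Q Qi f)"
    by (rule EP_change[OF inv u f])
  also have "\<dots> = P (tens_change n Q u) (coord_change n Q Qi f)"
    using h uniq[OF EP_hopf[OF assms] EP_norm _ _ tc_change cc_change[OF f]] by blast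
  finally show "P' u f = P (tens_change n Q u) (coord_change n Q Qi f)" .
qed


end
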